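(* Let $\Gamma$ be a group, let $\mathcal{C},\mathcal{C}'$ be monoidal categories, and let $G:\mathcal{C}\to\mathcal{C}'$ and $H:\mathcal{C}'\to\mathcal{C}$ be monoidal equivalences together with isomorphisms of monoidal functors $\alpha: G\circ H\cong \mathrm{id}_{\mathcal{C}'}$ and $\beta: H\circ G\cong \mathrm{id}_{\mathcal{C}}$. Let $(\theta,F)$ be a factor set on $\Gamma$ with coefficients in $\mathcal{C}$, and let $\mathcal{D}=\Delta(\theta,F)$ be the associated crossed product $\Gamma$-extension of $\mathcal{C}$. Then the quadruple $(G,H,\alpha,\beta)$ induces (i) a factor set $(\theta',F')$ on $\Gamma$ with coefficients in $\mathcal{C}'$, and (ii) a $\Gamma$-equivalence $\Delta(\theta,F)\to \Delta(\theta',F')$.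
   Context: A monoidal functor is written $F=(F,\widetilde F,\widehat F)$ with natural isomorphisms $\widetilde F_{X,Y}:F(X\otimes Y)\to F(X)\otimes F(Y)$ and $\widehat F:F(I)\to I$ satisfying the usual coherence conditions. A factor set on a group $\Gamma$ with coefficients in a monoidal category $\mathcal{C}$ is a pair $(\theta,F)$ consisting of a family of monoidal autoequivalences $F^\sigma=(F^\sigma,\widetilde{F^\sigma},\widehat{F^\sigma}):\mathcal{C}\to\mathcal{C}$ ($\sigma\in\Gamma$) and a family of isomorphisms of monoidal functors $\theta^{\sigma,\tau}:F^\sigma F^\tau\to F^{\sigma\tau}$ ($\sigma,\tau\in\Gamma$) such that: (i) $F^1=\mathrm{id}_{\mathcal{C}}$; (ii) $\theta^{1,\sigma}=\mathrm{id}_{F^\sigma}=\theta^{\sigma,1}$ for all $\sigma$; (iii) $\theta^{\sigma\tau,\gamma}\circ(\theta^{\sigma,\tau}F^\gamma)=\theta^{\sigma,\tau\gamma}\circ(F^\sigma\theta^{\tau,\gamma})$ as transformations $F^\sigma F^\tau F^\gamma\to F^{\sigma\tau\gamma}$, for all $\sigma,\tau,\gamma\in\Gamma$. The crossed product $\Delta(\theta,F)$ is the category whose objects are those of $\mathcal{C}$, whose morphisms $A\to B$ are pairs $(u,\sigma)$ with $\sigma\in\Gamma$ and $u:F^\sigma(A)\to B$ a morphism of $\mathcal{C}$, with composition of $A\xrightarrow{(u,\sigma)}B\xrightarrow{(v,\tau)}C$ given by $(v\circ F^\tau(u)\circ(\theta^{\tau,\sigma}_A)^{-1},\tau\sigma)$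 (identities $(\mathrm{id}_A,1)$); it carries the stable $\Gamma$-grading $g(u,\sigma)=\sigma$ and the isomorphism $j:\mathcal{C}\to\mathrm{Ker}\,\Delta(\theta,F)$, $j(u)=(u,1)$, onto the subcategory of morphisms of grade $1$. A $\Gamma$-equivalence between $\Gamma$-graded categories is a functor compatible with the gradings (preserving the grade of every morphism) which is an equivalence of categories. *)

theory Defs
  imports "HOL-Algebra.Group"
begin

record ('o,'m) cat =
  Ob  :: "'o set"
  Arr :: "'m set"
  Dom :: "'m \<Rightarrow> 'o"
  Cod :: "'m \<Rightarrow> 'o"
  Idt :: "'o \<Rightarrow> 'm"
  Cmp :: "'m \<Rightarrow> 'm \<Rightarrow> 'm"   (* Cmp C g f = g \<circ> f *)

definition hom where
  "hom C A B = {f \<in> Arr C. Dom C f = A \<and> Cod C f = B}"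

definition category where
  "category C \<longleftrightarrow>
    (\<forall>f\<in>Arr C. Dom C f \<in> Ob C \<and> Cod C f \<in> Ob C) \<and>
    (\<forall>A\<in>Ob C. Idt C A \<in> hom C A A) \<and>
    (\<forall>f\<in>Arr C. \<forall>g\<in>Arr C. Cod C f = Dom C g \<longrightarrow>
        Cmp C g f \<in> hom C (Dom C f) (Cod C g)) \<and>
    (\<forall>f\<in>Arr C. \<forall>g\<in>Arr C. \<forall>h\<in>Arr C. Cod C f = Dom C g \<and> Cod C g = Dom C h \<longrightarrow>
        Cmp C h (Cmp C g f) = Cmp C (Cmp C h g) f) \<and>
    (\<forall>f\<in>Arr C. Cmp C (Idt C (Cod C f)) f = f \<and> Cmp C f (Idt C (Dom C f)) = f)"

definition is_iso where
  "is_iso C f \<longleftrightarrow> f \<in> Arr C \<and>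
     (\<exists>g \<in> hom C (Cod C f) (Dom C f). Cmp C g f = Idt C (Dom C f) \<and> Cmp C f g = Idt C (Cod C f))"

definition inv_arr where
  "inv_arr C f = (SOME g. g \<in> hom C (Cod C f) (Dom C f) \<and>
       Cmp C g f = Idt C (Dom C f) \<and> Cmp C f g = Idt C (Cod C f))"

record ('o,'m) moncat = "('o,'m) cat" +
  Tns  :: "'o \<Rightarrow> 'o \<Rightarrow> 'o"
  TnsA :: "'m \<Rightarrow> 'm \<Rightarrow> 'm"
  Unt  :: 'o
  Asc  :: "'o \<Rightarrow> 'o \<Rightarrow> 'o \<Rightarrow> 'm"
  LU   :: "'o \<Rightarrow> 'm"
  RU   :: "'o \<Rightarrow> 'm"

definition monoidal_category where
  "monoidal_category C \<longleftrightarrow> category C \<and> Unt C \<in> Ob C \<and>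
    (\<forall>A\<in>Ob C. \<forall>B\<in>Ob C. Tns C A B \<in> Ob C) \<and>
    (\<forall>f\<in>Arr C. \<forall>g\<in>Arr C. TnsA C f g \<in>
        hom C (Tns C (Dom C f) (Dom C g)) (Tns C (Cod C f) (Cod C g))) \<and>
    (\<forall>A\<in>Ob C. \<forall>B\<in>Ob C. TnsA C (Idt C A) (Idt C B) = Idt C (Tns C A B)) \<and>
    (\<forall>f\<in>Arr C. \<forall>g\<in>Arr C. \<forall>f'\<in>Arr C. \<forall>g'\<in>Arr C.
        Cod C f = Dom C g \<and> Cod C f' = Dom C g' \<longrightarrow>
        TnsA C (Cmp C g f) (Cmp C g' f') = Cmp C (TnsA C g g') (TnsA C f f')) \<and>
    (\<forall>A\<in>Ob C. \<forall>B\<in>Ob C. \<forall>E\<in>Ob C.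
        Asc C A B E \<in> hom C (Tns C (Tns C A B) E) (Tns C A (Tns C B E)) \<and> is_iso C (Asc C A B E)) \<and>
    (\<forall>A\<in>Ob C. LU C A \<in> hom C (Tns C (Unt C) A) A \<and> is_iso C (LU C A)) \<and>
    (\<forall>A\<in>Ob C. RU C A \<in> hom C (Tns C A (Unt C)) A \<and> is_iso C (RU C A)) \<and>
    (\<forall>f\<in>Arr C. \<forall>g\<in>Arr C. \<forall>h\<in>Arr C.
        Cmp C (Asc C (Cod C f) (Cod C g) (Cod C h)) (TnsA C (TnsA C f g) h) =
        Cmp C (TnsA C f (TnsA C g h)) (Asc C (Dom C f) (Dom C g) (Dom C h))) \<and>
    (\<forall>f\<in>Arr C. Cmp C (LU C (Cod C f)) (TnsA C (Idt C (Unt C)) f) = Cmp C f (LU C (Dom C f))) \<and>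
    (\<forall>f\<in>Arr C. Cmp C (RU C (Cod C f)) (TnsA C f (Idt C (Unt C))) = Cmp C f (RU C (Dom C f))) \<and>
    (\<forall>A\<in>Ob C. \<forall>B\<in>Ob C. \<forall>D\<in>Ob C. \<forall>E\<in>Ob C.
        Cmp C (TnsA C (Idt C A) (Asc C B D E))
          (Cmp C (Asc C A (Tns C B D) E) (TnsA C (Asc C A B D) (Idt C E))) =
        Cmp C (Asc C A B (Tns C D E)) (Asc C (Tns C A B) D E)) \<and>
    (\<forall>A\<in>Ob C. \<forall>B\<in>Ob C.
        Cmp C (TnsA C (Idt C A) (LU C B)) (Asc C A (Unt C) B) = TnsA C (RU C A) (Idt C B))"

record ('o1,'m1,'o2,'m2) fnctr =
  FO :: "'o1 \<Rightarrow> 'o2"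
  FM :: "'m1 \<Rightarrow> 'm2"

definition is_functor where
  "is_functor C D F \<longleftrightarrow> category C \<and> category D \<and>
    (\<forall>A\<in>Ob C. FO F A \<in> Ob D) \<and>
    (\<forall>f\<in>Arr C. FM F f \<in> hom D (FO F (Dom C f)) (FO F (Cod C f))) \<and>
    (\<forall>A\<in>Ob C. FM F (Idt C A) = Idt D (FO F A)) \<and>
    (\<forall>f\<in>Arr C. \<forall>g\<in>Arr C. Cod C f = Dom C g \<longrightarrow> FM F (Cmp C g f) = Cmp D (FM F g) (FM F f))"

definition fcomp where
  "fcomp F G = \<lparr>FO = FO F \<circ> FO G, FM = FM F \<circ> FM G\<rparr>"

definition fid :: "('o,'m,'o,'m) fnctr" where
  "fid = \<lparr>FO = id, FM = id\<rparr>"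

definition is_nat_trans where
  "is_nat_trans C D F G \<eta> \<longleftrightarrow> is_functor C D F \<and> is_functor C D G \<and>
    (\<forall>A\<in>Ob C. \<eta> A \<in> hom D (FO F A) (FO G A)) \<and>
    (\<forall>f\<in>Arr C. Cmp D (\<eta> (Cod C f)) (FM F f) = Cmp D (FM G f) (\<eta> (Dom C f)))"

definition is_nat_iso where
  "is_nat_iso C D F G \<eta> \<longleftrightarrow> is_nat_trans C D F G \<eta> \<and> (\<forall>A\<in>Ob C. is_iso D (\<eta> A))"

definition is_equivalence ::
  "('o1,'m1,'z1) cat_scheme \<Rightarrow> ('o2,'m2,'z2) cat_scheme \<Rightarrow> ('o1,'m1,'o2,'m2,'w) fnctr_scheme \<Rightarrow> bool"
  where
  "is_equivalence C D F \<longleftrightarrow> is_functor C D F \<and>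
    (\<exists>(K::('o2,'m2,'o1,'m1) fnctr) \<eta> \<epsilon>. is_functor D C K \<and>
       is_nat_iso C C (fcomp K F) fid \<eta> \<and> is_nat_iso D D (fcomp F K) fid \<epsilon>)"

record ('o1,'m1,'o2,'m2) monfnctr = "('o1,'m1,'o2,'m2) fnctr" +
  FT :: "'o1 \<Rightarrow> 'o1 \<Rightarrow> 'm2"
  FU :: "'m2"

definition is_monoidal_functor where
  "is_monoidal_functor C D F \<longleftrightarrow> monoidal_category C \<and> monoidal_category D \<and> is_functor C D F \<and>
    (\<forall>A\<in>Ob C. \<forall>B\<in>Ob C. FT F A B \<in> hom D (FO F (Tns C A B)) (Tns D (FO F A) (FO F B))
        \<and> is_iso D (FT F A B)) \<and>
    FU F \<in> hom D (FO F (Unt C)) (Unt D) \<and> is_iso D (FU F) \<and>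
    (\<forall>f\<in>Arr C. \<forall>g\<in>Arr C.
        Cmp D (FT F (Cod C f) (Cod C g)) (FM F (TnsA C f g)) =
        Cmp D (TnsA D (FM F f) (FM F g)) (FT F (Dom C f) (Dom C g))) \<and>
    (\<forall>A\<in>Ob C. \<forall>B\<in>Ob C. \<forall>E\<in>Ob C.
        Cmp D (Asc D (FO F A) (FO F B) (FO F E))
          (Cmp D (TnsA D (FT F A B) (Idt D (FO F E))) (FT F (Tns C A B) E)) =
        Cmp D (TnsA D (Idt D (FO F A)) (FT F B E))
          (Cmp D (FT F A (Tns C B E)) (FM F (Asc C A B E)))) \<and>
    (\<forall>A\<in>Ob C. Cmp D (LU D (FO F A)) (Cmp D (TnsA D (FU F) (Idt D (FO F A))) (FT F (Unt C) A))
        = FM F (LU C A)) \<and>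
    (\<forall>A\<in>Ob C. Cmp D (RU D (FO F A)) (Cmp D (TnsA D (Idt D (FO F A)) (FU F)) (FT F A (Unt C)))
        = FM F (RU C A))"

definition mfcomp where
  "mfcomp E F G = \<lparr>FO = FO F \<circ> FO G, FM = FM F \<circ> FM G,
     FT = (\<lambda>A B. Cmp E (FT F (FO G A) (FO G B)) (FM F (FT G A B))),
     FU = Cmp E (FU F) (FM F (FU G))\<rparr>"

definition mfid where
  "mfid C = \<lparr>FO = id, FM = id, FT = (\<lambda>A B. Idt C (Tns C A B)), FU = Idt C (Unt C)\<rparr>"

definition mf_eq where
  "mf_eq C F G \<longleftrightarrow> (\<forall>A\<in>Ob C. FO F A = FO G A) \<and> (\<forall>f\<in>Arr C. FM F f = FM G f) \<and>
     (\<forall>A\<in>Ob C. \<forall>B\<in>Ob C. FT F A B = FT G A B) \<and> FU F = FU G"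

definition is_monoidal_nat_trans where
  "is_monoidal_nat_trans C D F G \<eta> \<longleftrightarrow>
    is_monoidal_functor C D F \<and> is_monoidal_functor C D G \<and> is_nat_trans C D F G \<eta> \<and>
    (\<forall>A\<in>Ob C. \<forall>B\<in>Ob C.
        Cmp D (FT G A B) (\<eta> (Tns C A B)) = Cmp D (TnsA D (\<eta> A) (\<eta> B)) (FT F A B)) \<and>
    Cmp D (FU G) (\<eta> (Unt C)) = FU F"

definition is_monoidal_nat_iso where
  "is_monoidal_nat_iso C D F G \<eta> \<longleftrightarrow> is_monoidal_nat_trans C D F G \<eta> \<and> (\<forall>A\<in>Ob C. is_iso D (\<eta> A))"

definition is_monoidal_equivalence where
  "is_monoidal_equivalence C D F \<longleftrightarrow> is_monoidal_functor C D F \<and> is_equivalence C D F"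

definition factor_set where
  "factor_set \<Gamma> C \<theta> F \<longleftrightarrow> group \<Gamma> \<and> monoidal_category C \<and>
    (\<forall>\<sigma>\<in>carrier \<Gamma>. is_monoidal_equivalence C C (F \<sigma>)) \<and>
    (\<forall>\<sigma>\<in>carrier \<Gamma>. \<forall>\<tau>\<in>carrier \<Gamma>.
        is_monoidal_nat_iso C C (mfcomp C (F \<sigma>) (F \<tau>)) (F (\<sigma> \<otimes>\<^bsub>\<Gamma>\<^esub> \<tau>)) (\<theta> \<sigma> \<tau>)) \<and>
    mf_eq C (F \<one>\<^bsub>\<Gamma>\<^esub>) (mfid C) \<and>
    (\<forall>\<sigma>\<in>carrier \<Gamma>. \<forall>A\<in>Ob C.
        \<theta> \<one>\<^bsub>\<Gamma>\<^esub> \<sigma> A = Idt C (FO (F \<sigma>) A) \<and> \<theta> \<sigma> \<one>\<^bsub>\<Gamma>\<^esub> A = Idt C (FO (F \<sigma>) A)) \<and>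
    (\<forall>\<sigma>\<in>carrier \<Gamma>. \<forall>\<tau>\<in>carrier \<Gamma>. \<forall>\<gamma>\<in>carrier \<Gamma>. \<forall>A\<in>Ob C.
        Cmp C (\<theta> (\<sigma> \<otimes>\<^bsub>\<Gamma>\<^esub> \<tau>) \<gamma> A) (\<theta> \<sigma> \<tau> (FO (F \<gamma>) A)) =
        Cmp C (\<theta> \<sigma> (\<tau> \<otimes>\<^bsub>\<Gamma>\<^esub> \<gamma>) A) (FM (F \<sigma>) (\<theta> \<tau> \<gamma> A)))"

definition crossed_product ::
  "('g,'x) monoid_scheme \<Rightarrow> ('o,'m,'z) moncat_scheme \<Rightarrow> ('g \<Rightarrow> 'g \<Rightarrow> 'o \<Rightarrow> 'm)
   \<Rightarrow> ('g \<Rightarrow> ('o,'m,'o,'m,'w) monfnctr_scheme) \<Rightarrow> ('o, 'o \<times> 'o \<times> 'm \<times> 'g) cat" where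
  "crossed_product \<Gamma> C \<theta> F = \<lparr>
     Ob = Ob C,
     Arr = {(A, B, u, \<sigma>). A \<in> Ob C \<and> B \<in> Ob C \<and> \<sigma> \<in> carrier \<Gamma> \<and> u \<in> hom C (FO (F \<sigma>) A) B},
     Dom = (\<lambda>(A, B, u, \<sigma>). A),
     Cod = (\<lambda>(A, B, u, \<sigma>). B),
     Idt = (\<lambda>A. (A, A, Idt C A, \<one>\<^bsub>\<Gamma>\<^esub>)),
     Cmp = (\<lambda>(B', E, v, \<tau>) (A, B, u, \<sigma>).
              (A, E, Cmp C v (Cmp C (FM (F \<tau>) u) (inv_arr C (\<theta> \<tau> \<sigma> A))), \<tau> \<otimes>\<^bsub>\<Gamma>\<^esub> \<sigma>)) \<rparr>"

definition xp_grade :: "'o \<times> 'o \<times> 'm \<times> 'g \<Rightarrow> 'g" where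
  "xp_grade f = snd (snd (snd f))"

definition graded_equivalence ::
  "('o1,'m1,'z1) cat_scheme \<Rightarrow> ('m1 \<Rightarrow> 'g) \<Rightarrow> ('o2,'m2,'z2) cat_scheme \<Rightarrow> ('m2 \<Rightarrow> 'g)
   \<Rightarrow> ('o1,'m1,'o2,'m2,'w) fnctr_scheme \<Rightarrow> bool" where
  "graded_equivalence C g1 D g2 \<Phi> \<longleftrightarrow> is_equivalence C D \<Phi> \<and> (\<forall>f\<in>Arr C. g2 (FM \<Phi> f) = g1 f)"

end

theory Submission
  imports Defs
begin


lemma hom_iff: "f \<in> Defs.hom C A B \<longleftrightarrow> f \<in> Arr C \<and> Dom C f = A \<and> Cod C f = B"
  by (simp add: hom_def)

lemma cat_Dom_Ob[simp]: "category C \<Longrightarrow> f \<in> Arr C \<Longrightarrow> Dom C f \<in> Ob C"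
  unfolding category_def by blast
lemma cat_Cod_Ob[simp]: "category C \<Longrightarrow> f \<in> Arr C \<Longrightarrow> Cod C f \<in> Ob C"
  unfolding category_def by blast
lemma cat_Idt[simp]: "category C \<Longrightarrow> A \<in> Ob C \<Longrightarrow> Idt C A \<in> Arr C"
  unfolding category_def hom_def by blast
lemma cat_Idt_Dom[simp]: "category C \<Longrightarrow> A \<in> Ob C \<Longrightarrow> Dom C (Idt C A) = A"
  unfolding category_def hom_def by blast
lemma cat_Idt_Cod[simp]: "category C \<Longrightarrow> A \<in> Ob C \<Longrightarrow> Cod C (Idt C A) = A"
  unfolding category_def hom_def by blast
lemma cat_Cmp[simp]: "category C \<Longrightarrow> f \<in> Arr C \<Longrightarrow> g \<in> Arr C \<Longrightarrow> Cod C f = Dom C g \<Longrightarrow> Cmp C g f \<in> Arr C"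
  unfolding category_def hom_def by blast
lemma cat_Cmp_Dom[simp]: "category C \<Longrightarrow> f \<in> Arr C \<Longrightarrow> g \<in> Arr C \<Longrightarrow> Cod C f = Dom C g \<Longrightarrow> Dom C (Cmp C g f) = Dom C f"
  unfolding category_def hom_def by blast
lemma cat_Cmp_Cod[simp]: "category C \<Longrightarrow> f \<in> Arr C \<Longrightarrow> g \<in> Arr C \<Longrightarrow> Cod C f = Dom C g \<Longrightarrow> Cod C (Cmp C g f) = Cod C g"
  unfolding category_def hom_def by blast
lemma cat_assoc: "category C \<Longrightarrow> f \<in> Arr C \<Longrightarrow> g \<in> Arr C \<Longrightarrow> h \<in> Arr C \<Longrightarrow> Cod C f = Dom C g \<Longrightarrow> Cod C g = Dom C h \<Longrightarrow>
   Cmp C (Cmp C h g) f = Cmp C h (Cmp C g f)"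
proof -
  assume c: "category C" and *: "f \<in> Arr C" "g \<in> Arr C" "h \<in> Arr C" "Cod C f = Dom C g" "Cod C g = Dom C h"
  from c have "\<forall>f\<in>Arr C. \<forall>g\<in>Arr C. \<forall>h\<in>Arr C. Cod C f = Dom C g \<and> Cod C g = Dom C h \<longrightarrow>
        Cmp C h (Cmp C g f) = Cmp C (Cmp C h g) f" unfolding category_def by blast
  with * show ?thesis by simp
qed
lemma cat_idl[simp]: "category C \<Longrightarrow> f \<in> Arr C \<Longrightarrow> Cod C f = B \<Longrightarrow> Cmp C (Idt C B) f = f"
  unfolding category_def by blast
lemma cat_idr[simp]: "category C \<Longrightarrow> f \<in> Arr C \<Longrightarrow> Dom C f = A \<Longrightarrow> Cmp C f (Idt C A) = f"
  unfolding category_def by blast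

section \<open>Isomorphisms\<close>

lemma inv_arr_props:
  assumes "is_iso C f"
  shows "inv_arr C f \<in> Arr C" "Dom C (inv_arr C f) = Cod C f" "Cod C (inv_arr C f) = Dom C f"
    "Cmp C (inv_arr C f) f = Idt C (Dom C f)" "Cmp C f (inv_arr C f) = Idt C (Cod C f)"
proof -
  have "\<exists>g. g \<in> Defs.hom C (Cod C f) (Dom C f) \<and> Cmp C g f = Idt C (Dom C f) \<and> Cmp C f g = Idt C (Cod C f)"
    using assms unfolding is_iso_def by blast
  then have "inv_arr C f \<in> Defs.hom C (Cod C f) (Dom C f) \<and> Cmp C (inv_arr C f) f = Idt C (Dom C f) \<and> Cmp C f (inv_arr C f) = Idt C (Cod C f)"
    unfolding inv_arr_def by (rule someI_ex)
  then show "inv_arr C f \<in> Arr C" "Dom C (inv_arr C f) = Cod C f" "Cod C (inv_arr C f) = Dom C f"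
    "Cmp C (inv_arr C f) f = Idt C (Dom C f)" "Cmp C f (inv_arr C f) = Idt C (Cod C f)"
    by (auto simp: hom_def)
qed

lemma is_iso_Arr[simp]: "is_iso C f \<Longrightarrow> f \<in> Arr C" by (simp add: is_iso_def)
lemma inv_Arr[simp]: "is_iso C f \<Longrightarrow> inv_arr C f \<in> Arr C" by (rule inv_arr_props)
lemma inv_Dom[simp]: "is_iso C f \<Longrightarrow> Dom C (inv_arr C f) = Cod C f" by (rule inv_arr_props)
lemma inv_Cod[simp]: "is_iso C f \<Longrightarrow> Cod C (inv_arr C f) = Dom C f" by (rule inv_arr_props)
lemma inv_left[simp]: "is_iso C f \<Longrightarrow> Cmp C (inv_arr C f) f = Idt C (Dom C f)" by (rule inv_arr_props)
lemma inv_right[simp]: "is_iso C f \<Longrightarrow> Cmp C f (inv_arr C f) = Idt C (Cod C f)" by (rule inv_arr_props)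

lemma inv_left2[simp]: "category C \<Longrightarrow> is_iso C f \<Longrightarrow> x \<in> Arr C \<Longrightarrow> Cod C x = Dom C f \<Longrightarrow>
   Cmp C (inv_arr C f) (Cmp C f x) = x"
  by (simp add: cat_assoc[symmetric])
lemma inv_right2[simp]: "category C \<Longrightarrow> is_iso C f \<Longrightarrow> x \<in> Arr C \<Longrightarrow> Cod C x = Cod C f \<Longrightarrow>
   Cmp C f (Cmp C (inv_arr C f) x) = x"
  by (simp add: cat_assoc[symmetric])

lemma iso_intro:
  assumes "category C" "f \<in> Arr C" "g \<in> Arr C" "Dom C g = Cod C f" "Cod C g = Dom C f"
    "Cmp C g f = Idt C (Dom C f)" "Cmp C f g = Idt C (Cod C f)"
  shows "is_iso C f"
  using assms unfolding is_iso_def hom_def by auto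

lemma inv_unique:
  assumes "category C" "is_iso C f" "g \<in> Arr C" "Dom C g = Cod C f" "Cod C g = Dom C f"
    "Cmp C g f = Idt C (Dom C f)"
  shows "inv_arr C f = g"
proof -
  have "inv_arr C f = Cmp C (Cmp C g f) (inv_arr C f)" using assms by simp
  also have "\<dots> = g" using assms(1-5) by (simp add: cat_assoc)
  finally show ?thesis .
qed

lemma inv_unique':
  assumes "category C" "is_iso C f" "g \<in> Arr C" "Dom C g = Cod C f" "Cod C g = Dom C f"
    "Cmp C f g = Idt C (Cod C f)"
  shows "inv_arr C f = g"
proof -
  have "inv_arr C f = Cmp C (inv_arr C f) (Cmp C f g)" using assms by simp
  also have "\<dots> = g" using assms(1-5) by (simp add: cat_assoc[symmetric])
  finally show ?thesis .
qed

lemma iso_Idt[simp]: "category C \<Longrightarrow> A \<in> Ob C \<Longrightarrow> is_iso C (Idt C A)"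
  by (rule iso_intro[where g="Idt C A"]) auto
lemma inv_Idt[simp]: "category C \<Longrightarrow> A \<in> Ob C \<Longrightarrow> inv_arr C (Idt C A) = Idt C A"
  by (rule inv_unique) auto

lemma iso_inv[simp]: "category C \<Longrightarrow> is_iso C f \<Longrightarrow> is_iso C (inv_arr C f)"
  by (rule iso_intro[where g=f]) auto
lemma inv_inv[simp]: "category C \<Longrightarrow> is_iso C f \<Longrightarrow> inv_arr C (inv_arr C f) = f"
  by (rule inv_unique) auto

lemma iso_Cmp[simp]: "category C \<Longrightarrow> is_iso C f \<Longrightarrow> is_iso C g \<Longrightarrow> Cod C f = Dom C g \<Longrightarrow> is_iso C (Cmp C g f)"
  by (rule iso_intro[where g="Cmp C (inv_arr C f) (inv_arr C g)"]) (auto simp: cat_assoc)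

lemma inv_Cmp: "category C \<Longrightarrow> is_iso C f \<Longrightarrow> is_iso C g \<Longrightarrow> Cod C f = Dom C g \<Longrightarrow>
   inv_arr C (Cmp C g f) = Cmp C (inv_arr C f) (inv_arr C g)"
  by (rule inv_unique) (auto simp: cat_assoc)

lemma iso_cancel_right:
  assumes "category C" "is_iso C f" "x \<in> Arr C" "y \<in> Arr C" "Dom C x = Cod C f" "Dom C y = Cod C f"
   "Cmp C x f = Cmp C y f"
  shows "x = y"
proof -
  have "x = Cmp C (Cmp C x f) (inv_arr C f)" using assms(1-6) by (simp add: cat_assoc)
  also have "\<dots> = Cmp C (Cmp C y f) (inv_arr C f)" using assms by simp
  also have "\<dots> = y" using assms(1-6) by (simp add: cat_assoc)
  finally show ?thesis .
qed

lemma iso_cancel_left: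
  assumes "category C" "is_iso C f" "x \<in> Arr C" "y \<in> Arr C" "Cod C x = Dom C f" "Cod C y = Dom C f"
   "Cmp C f x = Cmp C f y"
  shows "x = y"
proof -
  have "x = Cmp C (inv_arr C f) (Cmp C f x)" using assms(1-6) by simp
  also have "\<dots> = Cmp C (inv_arr C f) (Cmp C f y)" using assms by simp
  also have "\<dots> = y" using assms(1-6) by simp
  finally show ?thesis .
qed

section \<open>Functors\<close>

lemma fun_cat1: "is_functor C D F \<Longrightarrow> category C" unfolding is_functor_def by blast
lemma fun_cat2: "is_functor C D F \<Longrightarrow> category D" unfolding is_functor_def by blast
lemma fun_Ob[simp]: "is_functor C D F \<Longrightarrow> A \<in> Ob C \<Longrightarrow> FO F A \<in> Ob D"
  unfolding is_functor_def by blast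
lemma fun_Arr[simp]: "is_functor C D F \<Longrightarrow> f \<in> Arr C \<Longrightarrow> FM F f \<in> Arr D"
  unfolding is_functor_def hom_def by blast
lemma fun_Dom[simp]: "is_functor C D F \<Longrightarrow> f \<in> Arr C \<Longrightarrow> Dom D (FM F f) = FO F (Dom C f)"
  unfolding is_functor_def hom_def by blast
lemma fun_Cod[simp]: "is_functor C D F \<Longrightarrow> f \<in> Arr C \<Longrightarrow> Cod D (FM F f) = FO F (Cod C f)"
  unfolding is_functor_def hom_def by blast
lemma fun_Idt[simp]: "is_functor C D F \<Longrightarrow> A \<in> Ob C \<Longrightarrow> FM F (Idt C A) = Idt D (FO F A)"
  unfolding is_functor_def by blast
lemma fun_Cmp: "is_functor C D F \<Longrightarrow> f \<in> Arr C \<Longrightarrow> g \<in> Arr C \<Longrightarrow> Cod C f = Dom C g \<Longrightarrow>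
   FM F (Cmp C g f) = Cmp D (FM F g) (FM F f)"
  unfolding is_functor_def by blast

lemma fun_iso[simp]: assumes F: "is_functor C D F" and f: "is_iso C f" shows "is_iso D (FM F f)"
proof -
  note c = fun_cat1[OF F] fun_cat2[OF F]
  show ?thesis
    apply (rule iso_intro[where g="FM F (inv_arr C f)"])
    using F f c by (simp_all add: fun_Cmp[OF F, symmetric])
qed
lemma fun_inv: assumes F: "is_functor C D F" and f: "is_iso C f" shows "inv_arr D (FM F f) = FM F (inv_arr C f)"
proof -
  note c = fun_cat1[OF F] fun_cat2[OF F]
  show ?thesis
    apply (rule inv_unique)
    using F f c by (simp_all add: fun_Cmp[OF F, symmetric])
qed

lemma fcomp_FO[simp]: "FO (fcomp F G) = FO F \<circ> FO G" by (simp add: fcomp_def)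
lemma fcomp_FM[simp]: "FM (fcomp F G) = FM F \<circ> FM G" by (simp add: fcomp_def)
lemma fid_FO[simp]: "FO fid = id" by (simp add: fid_def)
lemma fid_FM[simp]: "FM fid = id" by (simp add: fid_def)

lemma fcomp_functor: assumes G: "is_functor C D G" and F: "is_functor D E F" shows "is_functor C E (fcomp F G)"
  unfolding is_functor_def[of C E] using G F
  by (simp add: fun_cat1[OF G] fun_cat2[OF F] hom_def fun_Cmp[OF G] fun_Cmp[OF F])

lemma fid_functor: "category C \<Longrightarrow> is_functor C C fid"
  unfolding is_functor_def by (auto simp: hom_def)

section \<open>Natural transformations\<close>

lemma nt_functor1: "is_nat_trans C D F G \<eta> \<Longrightarrow> is_functor C D F" unfolding is_nat_trans_def by blast
lemma nt_functor2: "is_nat_trans C D F G \<eta> \<Longrightarrow> is_functor C D G" unfolding is_nat_trans_def by blast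
lemma nt_Arr[simp]: "is_nat_trans C D F G \<eta> \<Longrightarrow> A \<in> Ob C \<Longrightarrow> \<eta> A \<in> Arr D"
  unfolding is_nat_trans_def hom_def by blast
lemma nt_Dom[simp]: "is_nat_trans C D F G \<eta> \<Longrightarrow> A \<in> Ob C \<Longrightarrow> Dom D (\<eta> A) = FO F A"
  unfolding is_nat_trans_def hom_def by blast
lemma nt_Cod[simp]: "is_nat_trans C D F G \<eta> \<Longrightarrow> A \<in> Ob C \<Longrightarrow> Cod D (\<eta> A) = FO G A"
  unfolding is_nat_trans_def hom_def by blast
lemma nt_nat: "is_nat_trans C D F G \<eta> \<Longrightarrow> f \<in> Arr C \<Longrightarrow>
   Cmp D (\<eta> (Cod C f)) (FM F f) = Cmp D (FM G f) (\<eta> (Dom C f))"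
  unfolding is_nat_trans_def by blast

lemma ni_nt: "is_nat_iso C D F G \<eta> \<Longrightarrow> is_nat_trans C D F G \<eta>" unfolding is_nat_iso_def by blast
lemma ni_iso[simp]: "is_nat_iso C D F G \<eta> \<Longrightarrow> A \<in> Ob C \<Longrightarrow> is_iso D (\<eta> A)"
  unfolding is_nat_iso_def by blast


lemma mfcomp_FO[simp]: "FO (mfcomp E F G) = FO F \<circ> FO G" by (simp add: mfcomp_def)
lemma mfcomp_FM[simp]: "FM (mfcomp E F G) = FM F \<circ> FM G" by (simp add: mfcomp_def)
lemma mfcomp_FT[simp]: "FT (mfcomp E F G) = (\<lambda>A B. Cmp E (FT F (FO G A) (FO G B)) (FM F (FT G A B)))" by (simp add: mfcomp_def)
lemma mfcomp_FU[simp]: "FU (mfcomp E F G) = Cmp E (FU F) (FM F (FU G))" by (simp add: mfcomp_def)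
lemma mfid_FO[simp]: "FO (mfid C) = id" by (simp add: mfid_def)
lemma mfid_FM[simp]: "FM (mfid C) = id" by (simp add: mfid_def)
lemma mfid_FT[simp]: "FT (mfid C) = (\<lambda>A B. Idt C (Tns C A B))" by (simp add: mfid_def)
lemma mfid_FU[simp]: "FU (mfid C) = Idt C (Unt C)" by (simp add: mfid_def)

lemma moncat_cat: "monoidal_category C \<Longrightarrow> category C"
  unfolding monoidal_category_def by blast
lemma mf_functor: "is_monoidal_functor C D F \<Longrightarrow> is_functor C D F"
  unfolding is_monoidal_functor_def by blast
lemma meq_mf: "is_monoidal_equivalence C D F \<Longrightarrow> is_monoidal_functor C D F"
  unfolding is_monoidal_equivalence_def by blast
lemma mnt_nt: "is_monoidal_nat_trans C D F G \<eta> \<Longrightarrow> is_nat_trans C D F G \<eta>"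
  unfolding is_monoidal_nat_trans_def by blast
lemma mni_ni: "is_monoidal_nat_iso C D F G \<eta> \<Longrightarrow> is_nat_iso C D F G \<eta>"
  unfolding is_monoidal_nat_iso_def is_nat_iso_def using mnt_nt by blast

locale fs =
  fixes \<Gamma> :: "('g,'x) monoid_scheme" and C :: "('o,'m,'z) moncat_scheme"
    and \<theta> :: "'g \<Rightarrow> 'g \<Rightarrow> 'o \<Rightarrow> 'm" and F :: "'g \<Rightarrow> ('o,'m,'o,'m,'w) monfnctr_scheme"
  assumes FS: "factor_set \<Gamma> C \<theta> F"
begin

lemma grp: "group \<Gamma>" using FS unfolding factor_set_def by blast
lemma mon: "monoid \<Gamma>" using grp by (rule group.is_monoid)
lemma mcat: "monoidal_category C" using FS unfolding factor_set_def by blast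
lemma cat[simp]: "category C" using mcat by (rule moncat_cat)

lemma mult_closed[simp]: "\<sigma> \<in> carrier \<Gamma> \<Longrightarrow> \<tau> \<in> carrier \<Gamma> \<Longrightarrow> \<sigma> \<otimes>\<^bsub>\<Gamma>\<^esub> \<tau> \<in> carrier \<Gamma>"
  using mon by (rule monoid.m_closed)
lemma one_closed[simp]: "\<one>\<^bsub>\<Gamma>\<^esub> \<in> carrier \<Gamma>"
  using mon by (rule monoid.one_closed)
lemma l_one[simp]: "\<sigma> \<in> carrier \<Gamma> \<Longrightarrow> \<one>\<^bsub>\<Gamma>\<^esub> \<otimes>\<^bsub>\<Gamma>\<^esub> \<sigma> = \<sigma>"
  using mon by (rule monoid.l_one)
lemma r_one[simp]: "\<sigma> \<in> carrier \<Gamma> \<Longrightarrow> \<sigma> \<otimes>\<^bsub>\<Gamma>\<^esub> \<one>\<^bsub>\<Gamma>\<^esub> = \<sigma>"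
  using mon by (rule monoid.r_one)
lemma m_assoc: "\<sigma> \<in> carrier \<Gamma> \<Longrightarrow> \<tau> \<in> carrier \<Gamma> \<Longrightarrow> \<rho> \<in> carrier \<Gamma> \<Longrightarrow>
   \<sigma> \<otimes>\<^bsub>\<Gamma>\<^esub> \<tau> \<otimes>\<^bsub>\<Gamma>\<^esub> \<rho> = \<sigma> \<otimes>\<^bsub>\<Gamma>\<^esub> (\<tau> \<otimes>\<^bsub>\<Gamma>\<^esub> \<rho>)"
  using mon by (rule monoid.m_assoc)

lemma F_meq: "\<sigma> \<in> carrier \<Gamma> \<Longrightarrow> is_monoidal_equivalence C C (F \<sigma>)"
  using FS unfolding factor_set_def by blast
lemma F_mf: "\<sigma> \<in> carrier \<Gamma> \<Longrightarrow> is_monoidal_functor C C (F \<sigma>)"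
  using F_meq by (rule meq_mf)
lemma F_fun[simp]: "\<sigma> \<in> carrier \<Gamma> \<Longrightarrow> is_functor C C (F \<sigma>)"
  using F_mf by (rule mf_functor)
lemma FO_Ob[simp]: "\<sigma> \<in> carrier \<Gamma> \<Longrightarrow> A \<in> Ob C \<Longrightarrow> FO (F \<sigma>) A \<in> Ob C"
  by (rule fun_Ob[OF F_fun])
lemma FM_Arr[simp]: "\<sigma> \<in> carrier \<Gamma> \<Longrightarrow> f \<in> Arr C \<Longrightarrow> FM (F \<sigma>) f \<in> Arr C"
  by (rule fun_Arr[OF F_fun])
lemma FM_Dom[simp]: "\<sigma> \<in> carrier \<Gamma> \<Longrightarrow> f \<in> Arr C \<Longrightarrow> Dom C (FM (F \<sigma>) f) = FO (F \<sigma>) (Dom C f)"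
  by (rule fun_Dom[OF F_fun])
lemma FM_Cod[simp]: "\<sigma> \<in> carrier \<Gamma> \<Longrightarrow> f \<in> Arr C \<Longrightarrow> Cod C (FM (F \<sigma>) f) = FO (F \<sigma>) (Cod C f)"
  by (rule fun_Cod[OF F_fun])
lemma FM_Idt[simp]: "\<sigma> \<in> carrier \<Gamma> \<Longrightarrow> A \<in> Ob C \<Longrightarrow> FM (F \<sigma>) (Idt C A) = Idt C (FO (F \<sigma>) A)"
  by (rule fun_Idt[OF F_fun])
lemma FM_Cmp: "\<sigma> \<in> carrier \<Gamma> \<Longrightarrow> f \<in> Arr C \<Longrightarrow> g \<in> Arr C \<Longrightarrow> Cod C f = Dom C g \<Longrightarrow>
   FM (F \<sigma>) (Cmp C g f) = Cmp C (FM (F \<sigma>) g) (FM (F \<sigma>) f)"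
  by (rule fun_Cmp[OF F_fun])
lemma FM_iso[simp]: "\<sigma> \<in> carrier \<Gamma> \<Longrightarrow> is_iso C f \<Longrightarrow> is_iso C (FM (F \<sigma>) f)"
  by (rule fun_iso[OF F_fun])
lemma FM_inv: "\<sigma> \<in> carrier \<Gamma> \<Longrightarrow> is_iso C f \<Longrightarrow> inv_arr C (FM (F \<sigma>) f) = FM (F \<sigma>) (inv_arr C f)"
  by (rule fun_inv[OF F_fun])

lemma th_mni: "\<sigma> \<in> carrier \<Gamma> \<Longrightarrow> \<tau> \<in> carrier \<Gamma> \<Longrightarrow>
   is_monoidal_nat_iso C C (mfcomp C (F \<sigma>) (F \<tau>)) (F (\<sigma> \<otimes>\<^bsub>\<Gamma>\<^esub> \<tau>)) (\<theta> \<sigma> \<tau>)"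
  using FS unfolding factor_set_def by blast
lemma th_ni: "\<sigma> \<in> carrier \<Gamma> \<Longrightarrow> \<tau> \<in> carrier \<Gamma> \<Longrightarrow>
   is_nat_iso C C (mfcomp C (F \<sigma>) (F \<tau>)) (F (\<sigma> \<otimes>\<^bsub>\<Gamma>\<^esub> \<tau>)) (\<theta> \<sigma> \<tau>)"
  using th_mni by (rule mni_ni)
lemma th_nt: "\<sigma> \<in> carrier \<Gamma> \<Longrightarrow> \<tau> \<in> carrier \<Gamma> \<Longrightarrow>
   is_nat_trans C C (mfcomp C (F \<sigma>) (F \<tau>)) (F (\<sigma> \<otimes>\<^bsub>\<Gamma>\<^esub> \<tau>)) (\<theta> \<sigma> \<tau>)"
  using th_ni by (rule ni_nt)

lemma th_Arr[simp]: "\<sigma> \<in> carrier \<Gamma> \<Longrightarrow> \<tau> \<in> carrier \<Gamma> \<Longrightarrow> A \<in> Ob C \<Longrightarrow> \<theta> \<sigma> \<tau> A \<in> Arr C"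
  using th_nt by (rule nt_Arr)
lemma th_Dom[simp]: "\<sigma> \<in> carrier \<Gamma> \<Longrightarrow> \<tau> \<in> carrier \<Gamma> \<Longrightarrow> A \<in> Ob C \<Longrightarrow> Dom C (\<theta> \<sigma> \<tau> A) = FO (F \<sigma>) (FO (F \<tau>) A)"
  using nt_Dom[OF th_nt] by simp
lemma th_Cod[simp]: "\<sigma> \<in> carrier \<Gamma> \<Longrightarrow> \<tau> \<in> carrier \<Gamma> \<Longrightarrow> A \<in> Ob C \<Longrightarrow> Cod C (\<theta> \<sigma> \<tau> A) = FO (F (\<sigma> \<otimes>\<^bsub>\<Gamma>\<^esub> \<tau>)) A"
  using nt_Cod[OF th_nt] by simp
lemma th_iso[simp]: "\<sigma> \<in> carrier \<Gamma> \<Longrightarrow> \<tau> \<in> carrier \<Gamma> \<Longrightarrow> A \<in> Ob C \<Longrightarrow> is_iso C (\<theta> \<sigma> \<tau> A)"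
  using th_ni by (rule ni_iso)
lemma th_nat: "\<sigma> \<in> carrier \<Gamma> \<Longrightarrow> \<tau> \<in> carrier \<Gamma> \<Longrightarrow> f \<in> Arr C \<Longrightarrow>
   Cmp C (\<theta> \<sigma> \<tau> (Cod C f)) (FM (F \<sigma>) (FM (F \<tau>) f)) = Cmp C (FM (F (\<sigma> \<otimes>\<^bsub>\<Gamma>\<^esub> \<tau>)) f) (\<theta> \<sigma> \<tau> (Dom C f))"
  using nt_nat[OF th_nt] by simp

lemma F1_eq: "mf_eq C (F \<one>\<^bsub>\<Gamma>\<^esub>) (mfid C)"
  using FS unfolding factor_set_def by blast
lemma F1_O[simp]: "A \<in> Ob C \<Longrightarrow> FO (F \<one>\<^bsub>\<Gamma>\<^esub>) A = A"
  using F1_eq unfolding mf_eq_def by simp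
lemma F1_M[simp]: "f \<in> Arr C \<Longrightarrow> FM (F \<one>\<^bsub>\<Gamma>\<^esub>) f = f"
  using F1_eq unfolding mf_eq_def by simp
lemma th_1l[simp]: "\<sigma> \<in> carrier \<Gamma> \<Longrightarrow> A \<in> Ob C \<Longrightarrow> \<theta> \<one>\<^bsub>\<Gamma>\<^esub> \<sigma> A = Idt C (FO (F \<sigma>) A)"
  using FS unfolding factor_set_def by blast
lemma th_1r[simp]: "\<sigma> \<in> carrier \<Gamma> \<Longrightarrow> A \<in> Ob C \<Longrightarrow> \<theta> \<sigma> \<one>\<^bsub>\<Gamma>\<^esub> A = Idt C (FO (F \<sigma>) A)"
  using FS unfolding factor_set_def by blast
lemma cocycle: "\<sigma> \<in> carrier \<Gamma> \<Longrightarrow> \<tau> \<in> carrier \<Gamma> \<Longrightarrow> \<gamma> \<in> carrier \<Gamma> \<Longrightarrow> A \<in> Ob C \<Longrightarrow>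
        Cmp C (\<theta> (\<sigma> \<otimes>\<^bsub>\<Gamma>\<^esub> \<tau>) \<gamma> A) (\<theta> \<sigma> \<tau> (FO (F \<gamma>) A)) =
        Cmp C (\<theta> \<sigma> (\<tau> \<otimes>\<^bsub>\<Gamma>\<^esub> \<gamma>) A) (FM (F \<sigma>) (\<theta> \<tau> \<gamma> A))"
  using FS unfolding factor_set_def by blast

abbreviation "XP \<equiv> crossed_product \<Gamma> C \<theta> F"

lemma xp_Ob[simp]: "Ob XP = Ob C" by (simp add: crossed_product_def)
lemma xp_Arr: "(A, B, u, \<sigma>) \<in> Arr XP \<longleftrightarrow> A \<in> Ob C \<and> B \<in> Ob C \<and> \<sigma> \<in> carrier \<Gamma> \<and>
    u \<in> Arr C \<and> Dom C u = FO (F \<sigma>) A \<and> Cod C u = B"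
  by (simp add: crossed_product_def hom_def)
lemma xp_Dom[simp]: "Dom XP (A, B, u, \<sigma>) = A" by (simp add: crossed_product_def)
lemma xp_Cod[simp]: "Cod XP (A, B, u, \<sigma>) = B" by (simp add: crossed_product_def)
lemma xp_Idt[simp]: "Idt XP A = (A, A, Idt C A, \<one>\<^bsub>\<Gamma>\<^esub>)" by (simp add: crossed_product_def)
lemma xp_Cmp[simp]: "Cmp XP (B', E, v, \<tau>) (A, B, u, \<sigma>) =
   (A, E, Cmp C v (Cmp C (FM (F \<tau>) u) (inv_arr C (\<theta> \<tau> \<sigma> A))), \<tau> \<otimes>\<^bsub>\<Gamma>\<^esub> \<sigma>)"
  by (simp add: crossed_product_def)

lemma xp_cat: "category XP"
proof -
  have 1: "\<forall>f\<in>Arr XP. Dom XP f \<in> Ob XP \<and> Cod XP f \<in> Ob XP"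
    by (auto simp: xp_Arr)
  have 2: "\<forall>A\<in>Ob XP. Idt XP A \<in> Defs.hom XP A A"
    by (auto simp: xp_Arr hom_def)
  have 3: "\<forall>f\<in>Arr XP. \<forall>g\<in>Arr XP. Cod XP f = Dom XP g \<longrightarrow>
        Cmp XP g f \<in> Defs.hom XP (Dom XP f) (Cod XP g)"
    by (auto simp: xp_Arr hom_def)
  have 4: "Cmp XP h (Cmp XP g f) = Cmp XP (Cmp XP h g) f"
    if "f \<in> Arr XP" "g \<in> Arr XP" "h \<in> Arr XP" "Cod XP f = Dom XP g" "Cod XP g = Dom XP h" for f g h
  proof -
    obtain A B u \<sigma> where f: "f = (A, B, u, \<sigma>)" by (cases f) auto
    obtain B1 E v \<tau> where g: "g = (B1, E, v, \<tau>)" by (cases g) auto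
    obtain E1 K w \<rho> where h: "h = (E1, K, w, \<rho>)" by (cases h) auto
    have a: "A \<in> Ob C" "B \<in> Ob C" "E \<in> Ob C" "K \<in> Ob C" "\<sigma> \<in> carrier \<Gamma>" "\<tau> \<in> carrier \<Gamma>" "\<rho> \<in> carrier \<Gamma>"
      "u \<in> Arr C" "Dom C u = FO (F \<sigma>) A" "Cod C u = B"
      "v \<in> Arr C" "Dom C v = FO (F \<tau>) B" "Cod C v = E"
      "w \<in> Arr C" "Dom C w = FO (F \<rho>) E" "Cod C w = K" "B1 = B" "E1 = E"
      using that f g h by (auto simp: xp_Arr)
    have cc: "Cmp C (\<theta> \<rho> (\<tau> \<otimes>\<^bsub>\<Gamma>\<^esub> \<sigma>) A) (FM (F \<rho>) (\<theta> \<tau> \<sigma> A)) =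
              Cmp C (\<theta> (\<rho> \<otimes>\<^bsub>\<Gamma>\<^esub> \<tau>) \<sigma> A) (\<theta> \<rho> \<tau> (FO (F \<sigma>) A))"
      using cocycle[of \<rho> \<tau> \<sigma> A] a by simp
    have ic: "Cmp C (FM (F \<rho>) (inv_arr C (\<theta> \<tau> \<sigma> A))) (inv_arr C (\<theta> \<rho> (\<tau> \<otimes>\<^bsub>\<Gamma>\<^esub> \<sigma>) A)) =
              Cmp C (inv_arr C (\<theta> \<rho> \<tau> (FO (F \<sigma>) A))) (inv_arr C (\<theta> (\<rho> \<otimes>\<^bsub>\<Gamma>\<^esub> \<tau>) \<sigma> A))"
    proof -
      have "Cmp C (FM (F \<rho>) (inv_arr C (\<theta> \<tau> \<sigma> A))) (inv_arr C (\<theta> \<rho> (\<tau> \<otimes>\<^bsub>\<Gamma>\<^esub> \<sigma>) A))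
          = inv_arr C (Cmp C (\<theta> \<rho> (\<tau> \<otimes>\<^bsub>\<Gamma>\<^esub> \<sigma>) A) (FM (F \<rho>) (\<theta> \<tau> \<sigma> A)))"
        using a by (simp add: inv_Cmp FM_inv[symmetric])
      also have "\<dots> = inv_arr C (Cmp C (\<theta> (\<rho> \<otimes>\<^bsub>\<Gamma>\<^esub> \<tau>) \<sigma> A) (\<theta> \<rho> \<tau> (FO (F \<sigma>) A)))"
        using cc by simp
      also have "\<dots> = Cmp C (inv_arr C (\<theta> \<rho> \<tau> (FO (F \<sigma>) A))) (inv_arr C (\<theta> (\<rho> \<otimes>\<^bsub>\<Gamma>\<^esub> \<tau>) \<sigma> A))"
        using a by (simp add: inv_Cmp)
      finally show ?thesis .
    qed
    have nt: "Cmp C (inv_arr C (\<theta> \<rho> \<tau> B)) (FM (F (\<rho> \<otimes>\<^bsub>\<Gamma>\<^esub> \<tau>)) u) =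
              Cmp C (FM (F \<rho>) (FM (F \<tau>) u)) (inv_arr C (\<theta> \<rho> \<tau> (FO (F \<sigma>) A)))"
    proof -
      have n: "Cmp C (\<theta> \<rho> \<tau> B) (FM (F \<rho>) (FM (F \<tau>) u)) = Cmp C (FM (F (\<rho> \<otimes>\<^bsub>\<Gamma>\<^esub> \<tau>)) u) (\<theta> \<rho> \<tau> (FO (F \<sigma>) A))"
        using th_nat[of \<rho> \<tau> u] a by simp
      have "Cmp C (inv_arr C (\<theta> \<rho> \<tau> B)) (FM (F (\<rho> \<otimes>\<^bsub>\<Gamma>\<^esub> \<tau>)) u) =
            Cmp C (inv_arr C (\<theta> \<rho> \<tau> B)) (Cmp C (Cmp C (FM (F (\<rho> \<otimes>\<^bsub>\<Gamma>\<^esub> \<tau>)) u) (\<theta> \<rho> \<tau> (FO (F \<sigma>) A))) (inv_arr C (\<theta> \<rho> \<tau> (FO (F \<sigma>) A))))"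
        using a by (simp add: cat_assoc)
      also have "\<dots> = Cmp C (inv_arr C (\<theta> \<rho> \<tau> B)) (Cmp C (Cmp C (\<theta> \<rho> \<tau> B) (FM (F \<rho>) (FM (F \<tau>) u))) (inv_arr C (\<theta> \<rho> \<tau> (FO (F \<sigma>) A))))"
        using n by simp
      also have "\<dots> = Cmp C (FM (F \<rho>) (FM (F \<tau>) u)) (inv_arr C (\<theta> \<rho> \<tau> (FO (F \<sigma>) A)))"
        using a by (simp add: cat_assoc)
      finally show ?thesis .
    qed
    have "Cmp C (FM (F \<rho>) (Cmp C v (Cmp C (FM (F \<tau>) u) (inv_arr C (\<theta> \<tau> \<sigma> A))))) (inv_arr C (\<theta> \<rho> (\<tau> \<otimes>\<^bsub>\<Gamma>\<^esub> \<sigma>) A))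
       = Cmp C (FM (F \<rho>) v) (Cmp C (FM (F \<rho>) (FM (F \<tau>) u)) (Cmp C (FM (F \<rho>) (inv_arr C (\<theta> \<tau> \<sigma> A))) (inv_arr C (\<theta> \<rho> (\<tau> \<otimes>\<^bsub>\<Gamma>\<^esub> \<sigma>) A))))"
      using a by (simp add: FM_Cmp cat_assoc)
    also have "\<dots> = Cmp C (FM (F \<rho>) v) (Cmp C (FM (F \<rho>) (FM (F \<tau>) u)) (Cmp C (inv_arr C (\<theta> \<rho> \<tau> (FO (F \<sigma>) A))) (inv_arr C (\<theta> (\<rho> \<otimes>\<^bsub>\<Gamma>\<^esub> \<tau>) \<sigma> A))))"
      using ic by simp
    also have "\<dots> = Cmp C (FM (F \<rho>) v) (Cmp C (Cmp C (FM (F \<rho>) (FM (F \<tau>) u)) (inv_arr C (\<theta> \<rho> \<tau> (FO (F \<sigma>) A)))) (inv_arr C (\<theta> (\<rho> \<otimes>\<^bsub>\<Gamma>\<^esub> \<tau>) \<sigma> A)))"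
      using a by (simp add: cat_assoc)
    also have "\<dots> = Cmp C (FM (F \<rho>) v) (Cmp C (Cmp C (inv_arr C (\<theta> \<rho> \<tau> B)) (FM (F (\<rho> \<otimes>\<^bsub>\<Gamma>\<^esub> \<tau>)) u)) (inv_arr C (\<theta> (\<rho> \<otimes>\<^bsub>\<Gamma>\<^esub> \<tau>) \<sigma> A)))"
      using nt by simp
    also have "\<dots> = Cmp C (Cmp C (FM (F \<rho>) v) (inv_arr C (\<theta> \<rho> \<tau> B))) (Cmp C (FM (F (\<rho> \<otimes>\<^bsub>\<Gamma>\<^esub> \<tau>)) u) (inv_arr C (\<theta> (\<rho> \<otimes>\<^bsub>\<Gamma>\<^esub> \<tau>) \<sigma> A)))"
      using a by (simp add: cat_assoc)
    finally have key: "Cmp C (FM (F \<rho>) (Cmp C v (Cmp C (FM (F \<tau>) u) (inv_arr C (\<theta> \<tau> \<sigma> A))))) (inv_arr C (\<theta> \<rho> (\<tau> \<otimes>\<^bsub>\<Gamma>\<^esub> \<sigma>) A))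
       = Cmp C (Cmp C (FM (F \<rho>) v) (inv_arr C (\<theta> \<rho> \<tau> B))) (Cmp C (FM (F (\<rho> \<otimes>\<^bsub>\<Gamma>\<^esub> \<tau>)) u) (inv_arr C (\<theta> (\<rho> \<otimes>\<^bsub>\<Gamma>\<^esub> \<tau>) \<sigma> A)))" .
    show ?thesis
      unfolding f g h using a
      by (simp add: m_assoc key cat_assoc)
  qed
  have 5: "Cmp XP (Idt XP (Cod XP f)) f = f \<and> Cmp XP f (Idt XP (Dom XP f)) = f" if "f \<in> Arr XP" for f
  proof -
    obtain A B u \<sigma> where f: "f = (A, B, u, \<sigma>)" by (cases f) auto
    have a: "A \<in> Ob C" "B \<in> Ob C" "\<sigma> \<in> carrier \<Gamma>"
      "u \<in> Arr C" "Dom C u = FO (F \<sigma>) A" "Cod C u = B"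
      using that f by (auto simp: xp_Arr)
    show ?thesis unfolding f using a by simp
  qed
  show ?thesis unfolding category_def using 1 2 3 4 5 by blast
qed

end


definition ff where
  "ff C D F \<longleftrightarrow> (\<forall>A\<in>Ob C. \<forall>B\<in>Ob C. \<forall>g. g \<in> Arr D \<and> Dom D g = FO F A \<and> Cod D g = FO F B \<longrightarrow>
     (\<exists>!f. f \<in> Arr C \<and> Dom C f = A \<and> Cod C f = B \<and> FM F f = g))"

definition es where
  "es C D F \<longleftrightarrow> (\<forall>Y\<in>Ob D. \<exists>A\<in>Ob C. \<exists>i. i \<in> Arr D \<and> Dom D i = FO F A \<and> Cod D i = Y \<and> is_iso D i)"

lemma ffD: "ff C D F \<Longrightarrow> A \<in> Ob C \<Longrightarrow> B \<in> Ob C \<Longrightarrow> g \<in> Arr D \<Longrightarrow> Dom D g = FO F A \<Longrightarrow> Cod D g = FO F B \<Longrightarrow>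
     (\<exists>!f. f \<in> Arr C \<and> Dom C f = A \<and> Cod C f = B \<and> FM F f = g)"
  unfolding ff_def by blast

lemma ff_faithful:
  assumes "ff C D F" "is_functor C D F" "f \<in> Arr C" "g \<in> Arr C" "Dom C f = Dom C g" "Cod C f = Cod C g"
    "FM F f = FM F g"
  shows "f = g"
  using ffD[OF assms(1), of "Dom C f" "Cod C f" "FM F f"] assms fun_cat1[OF assms(2)] by auto

lemma faithful_from_ni:
  assumes K: "is_functor D C K" and F: "is_functor C D F" and eta: "is_nat_iso C C (fcomp K F) fid \<eta>"
    and f: "f \<in> Arr C" and g: "g \<in> Arr C" "Dom C f = Dom C g" "Cod C f = Cod C g"
    and eq: "FM F f = FM F g"
  shows "f = g"
proof -
  have c: "category C" using F by (rule fun_cat1)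
  have nt: "is_nat_trans C C (fcomp K F) fid \<eta>" using eta by (rule ni_nt)
  have a: "Cmp C (\<eta> (Cod C f)) (FM K (FM F f)) = Cmp C f (\<eta> (Dom C f))"
    using nt_nat[OF nt f] by simp
  have b: "Cmp C (\<eta> (Cod C g)) (FM K (FM F g)) = Cmp C g (\<eta> (Dom C g))"
    using nt_nat[OF nt g(1)] by simp
  have "Cmp C f (\<eta> (Dom C f)) = Cmp C g (\<eta> (Dom C f))" using a b g eq by simp
  moreover have o: "Dom C f \<in> Ob C" using c f by simp
  moreover have "is_iso C (\<eta> (Dom C f))" using ni_iso[OF eta o] .
  moreover have "Dom C f = Cod C (\<eta> (Dom C f))" "Dom C g = Cod C (\<eta> (Dom C f))" using nt_Cod[OF nt o] g by simp_all
  ultimately show ?thesis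
    using iso_cancel_right[OF c, of "\<eta> (Dom C f)" f g] f g(1) by blast
qed

lemma equiv_ff_es:
  assumes E: "is_equivalence C D F"
  shows "ff C D F" "es C D F"
proof -
  have F: "is_functor C D F" using E unfolding is_equivalence_def by blast
  obtain K :: "('d,'e,'a,'b) fnctr" and \<eta> \<epsilon> where K: "is_functor D C K"
    and eta: "is_nat_iso C C (fcomp K F) fid \<eta>" and eps: "is_nat_iso D D (fcomp F K) fid \<epsilon>"
    using E unfolding is_equivalence_def by blast
  have c: "category C" using F by (rule fun_cat1)
  have d: "category D" using F by (rule fun_cat2)
  have nte: "is_nat_trans C C (fcomp K F) fid \<eta>" using eta by (rule ni_nt)
  have nte': "is_nat_trans D D (fcomp F K) fid \<epsilon>" using eps by (rule ni_nt)
  show "es C D F"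
    unfolding es_def
  proof
    fix Y assume Y: "Y \<in> Ob D"
    show "\<exists>A\<in>Ob C. \<exists>i. i \<in> Arr D \<and> Dom D i = FO F A \<and> Cod D i = Y \<and> is_iso D i"
      apply (rule bexI[where x="FO K Y"], rule exI[where x="\<epsilon> Y"])
      using Y K nt_Arr[OF nte' Y] nt_Dom[OF nte' Y] nt_Cod[OF nte' Y] ni_iso[OF eps Y] by auto
  qed
  show "ff C D F"
    unfolding ff_def
  proof (intro ballI allI impI)
    fix A B g assume A: "A \<in> Ob C" and B: "B \<in> Ob C" and g: "g \<in> Arr D \<and> Dom D g = FO F A \<and> Cod D g = FO F B"
    note eA = nt_Arr[OF nte A] nt_Dom[OF nte A] nt_Cod[OF nte A] ni_iso[OF eta A]
    note eB = nt_Arr[OF nte B] nt_Dom[OF nte B] nt_Cod[OF nte B] ni_iso[OF eta B]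
    define f where "f = Cmp C (\<eta> B) (Cmp C (FM K g) (inv_arr C (\<eta> A)))"
    have Kg: "FM K g \<in> Arr C" "Dom C (FM K g) = FO K (FO F A)" "Cod C (FM K g) = FO K (FO F B)"
      using g K by auto
    have f: "f \<in> Arr C" "Dom C f = A" "Cod C f = B"
      unfolding f_def using eA eB Kg c by auto
    have "Cmp C (\<eta> B) (FM K (FM F f)) = Cmp C f (\<eta> A)"
      using nt_nat[OF nte f(1)] f by simp
    also have "\<dots> = Cmp C (\<eta> B) (FM K g)"
      unfolding f_def using eA eB Kg c by (simp add: cat_assoc)
    finally have "Cmp C (\<eta> B) (FM K (FM F f)) = Cmp C (\<eta> B) (FM K g)" .
    moreover have "FM K (FM F f) \<in> Arr C" "Cod C (FM K (FM F f)) = Dom C (\<eta> B)"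
      using F K f eB by simp_all
    ultimately have "FM K (FM F f) = FM K g"
      using iso_cancel_left[OF c, of "\<eta> B" "FM K (FM F f)" "FM K g"] eB Kg by simp
    moreover have "FM F f \<in> Arr D" "Dom D (FM F f) = Dom D g" "Cod D (FM F f) = Cod D g"
      using F f g by simp_all
    ultimately have Ff: "FM F f = g"
      using faithful_from_ni[OF F K eps, of "FM F f" g] g by blast
    show "\<exists>!f. f \<in> Arr C \<and> Dom C f = A \<and> Cod C f = B \<and> FM F f = g"
    proof
      show "f \<in> Arr C \<and> Dom C f = A \<and> Cod C f = B \<and> FM F f = g" using f Ff by simp
      fix f' assume "f' \<in> Arr C \<and> Dom C f' = A \<and> Cod C f' = B \<and> FM F f' = g"
      then show "f' = f"
        using faithful_from_ni[OF K F eta, of f' f] f Ff by simp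
    qed
  qed
qed


lemma ff_es_equiv:
  assumes F: "is_functor C D F" and ff: "ff C D F" and es: "es C D F"
  shows "is_equivalence C D F"
proof -
  have c: "category C" using F by (rule fun_cat1)
  have d: "category D" using F by (rule fun_cat2)
  define P where "P Y p \<longleftrightarrow> fst p \<in> Ob C \<and> snd p \<in> Arr D \<and> Dom D (snd p) = FO F (fst p) \<and> Cod D (snd p) = Y \<and> is_iso D (snd p)" for Y p
  define ch where "ch Y = (SOME p. P Y p)" for Y
  have chP: "P Y (ch Y)" if "Y \<in> Ob D" for Y
  proof -
    have "\<exists>A\<in>Ob C. \<exists>i. i \<in> Arr D \<and> Dom D i = FO F A \<and> Cod D i = Y \<and> is_iso D i"
      using es that unfolding es_def by (rule bspec)
    then obtain A i where "A \<in> Ob C" "i \<in> Arr D \<and> Dom D i = FO F A \<and> Cod D i = Y \<and> is_iso D i"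
      by blast
    then have "P Y (A, i)" unfolding P_def by simp
    then show ?thesis unfolding ch_def by (rule someI)
  qed
  define K0 where "K0 Y = fst (ch Y)" for Y
  define iY where "iY Y = snd (ch Y)" for Y
  have K0: "K0 Y \<in> Ob C" "iY Y \<in> Arr D" "Dom D (iY Y) = FO F (K0 Y)" "Cod D (iY Y) = Y" "is_iso D (iY Y)"
    if "Y \<in> Ob D" for Y using chP[OF that] unfolding P_def K0_def iY_def by auto
  define pre where "pre A B g = (THE f. f \<in> Arr C \<and> Dom C f = A \<and> Cod C f = B \<and> FM F f = g)" for A B g
  have pre: "pre A B g \<in> Arr C" "Dom C (pre A B g) = A" "Cod C (pre A B g) = B" "FM F (pre A B g) = g"
    if "A \<in> Ob C" "B \<in> Ob C" "g \<in> Arr D" "Dom D g = FO F A" "Cod D g = FO F B" for A B g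
  proof -
    have "\<exists>!f. f \<in> Arr C \<and> Dom C f = A \<and> Cod C f = B \<and> FM F f = g"
      using ffD[OF ff that] .
    then have "pre A B g \<in> Arr C \<and> Dom C (pre A B g) = A \<and> Cod C (pre A B g) = B \<and> FM F (pre A B g) = g"
      unfolding pre_def by (rule theI')
    then show "pre A B g \<in> Arr C" "Dom C (pre A B g) = A" "Cod C (pre A B g) = B" "FM F (pre A B g) = g" by auto
  qed
  have pre_unique: "pre A B g = f" if "f \<in> Arr C" "Dom C f = A" "Cod C f = B" "FM F f = g" for A B g f
  proof -
    have "A \<in> Ob C" "B \<in> Ob C" using that c by auto
    moreover have "g \<in> Arr D" "Dom D g = FO F A" "Cod D g = FO F B" using that F by auto
    ultimately have ex1: "\<exists>!f. f \<in> Arr C \<and> Dom C f = A \<and> Cod C f = B \<and> FM F f = g"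
      using ffD[OF ff] by blast
    show ?thesis unfolding pre_def using that by (intro the1_equality[OF ex1]) simp
  qed
  define KM where "KM g = pre (K0 (Dom D g)) (K0 (Cod D g)) (Cmp D (inv_arr D (iY (Cod D g))) (Cmp D g (iY (Dom D g))))" for g
  define K :: "('d,'e,'a,'b) fnctr" where "K = \<lparr>FO = K0, FM = KM\<rparr>"
  have KM: "KM g \<in> Arr C" "Dom C (KM g) = K0 (Dom D g)" "Cod C (KM g) = K0 (Cod D g)"
    "FM F (KM g) = Cmp D (inv_arr D (iY (Cod D g))) (Cmp D g (iY (Dom D g)))" if "g \<in> Arr D" for g
  proof -
    have o: "Dom D g \<in> Ob D" "Cod D g \<in> Ob D" using d that by auto
    note a = K0[OF o(1)] K0[OF o(2)]
    have x: "Cmp D (inv_arr D (iY (Cod D g))) (Cmp D g (iY (Dom D g))) \<in> Arr D"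
       "Dom D (Cmp D (inv_arr D (iY (Cod D g))) (Cmp D g (iY (Dom D g)))) = FO F (K0 (Dom D g))"
       "Cod D (Cmp D (inv_arr D (iY (Cod D g))) (Cmp D g (iY (Dom D g)))) = FO F (K0 (Cod D g))"
      using a that d by simp_all
    note p = pre[OF a(1) a(6) x]
    show "KM g \<in> Arr C" "Dom C (KM g) = K0 (Dom D g)" "Cod C (KM g) = K0 (Cod D g)"
      "FM F (KM g) = Cmp D (inv_arr D (iY (Cod D g))) (Cmp D g (iY (Dom D g)))"
      unfolding KM_def by (fact p)+
  qed
  have Kf: "is_functor D C K"
    unfolding is_functor_def
  proof (intro conjI ballI impI)
    show "category D" by (fact d)
    show "category C" by (fact c)
    show "FO K Y \<in> Ob C" if "Y \<in> Ob D" for Y using K0[OF that] unfolding K_def by simp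
    show "FM K g \<in> Defs.hom C (FO K (Dom D g)) (FO K (Cod D g))" if "g \<in> Arr D" for g
      using KM[OF that] unfolding K_def hom_def by simp
    show "FM K (Idt D Y) = Idt C (FO K Y)" if Y: "Y \<in> Ob D" for Y
    proof -
      have "KM (Idt D Y) = pre (K0 Y) (K0 Y) (Cmp D (inv_arr D (iY Y)) (Cmp D (Idt D Y) (iY Y)))"
        unfolding KM_def using Y d by simp
      also have "\<dots> = Idt C (K0 Y)"
        apply (rule pre_unique) using K0[OF Y] c d F by auto
      finally show ?thesis unfolding K_def by simp
    qed
    show "FM K (Cmp D h g) = Cmp C (FM K h) (FM K g)" if g: "g \<in> Arr D" and h: "h \<in> Arr D" and gh: "Cod D g = Dom D h" for g h
    proof -
      have o: "Dom D g \<in> Ob D" "Cod D g \<in> Ob D" "Cod D h \<in> Ob D" using g h d by auto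
      note a = K0[OF o(1)] K0[OF o(2)] K0[OF o(3)]
      have "KM (Cmp D h g) = pre (K0 (Dom D g)) (K0 (Cod D h)) (Cmp D (inv_arr D (iY (Cod D h))) (Cmp D (Cmp D h g) (iY (Dom D g))))"
        unfolding KM_def using g h gh d by simp
      also have "\<dots> = Cmp C (KM h) (KM g)"
      proof (rule pre_unique)
        show "Cmp C (KM h) (KM g) \<in> Arr C" "Dom C (Cmp C (KM h) (KM g)) = K0 (Dom D g)" "Cod C (Cmp C (KM h) (KM g)) = K0 (Cod D h)"
          using KM[OF g] KM[OF h] gh c by auto
        have "FM F (Cmp C (KM h) (KM g)) = Cmp D (FM F (KM h)) (FM F (KM g))"
          using KM[OF g] KM[OF h] gh by (simp add: fun_Cmp[OF F])
        also have "\<dots> = Cmp D (inv_arr D (iY (Cod D h))) (Cmp D h (Cmp D (iY (Dom D h)) (Cmp D (inv_arr D (iY (Cod D g))) (Cmp D g (iY (Dom D g))))))"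
          using KM[OF g] KM[OF h] a g h gh d by (simp add: cat_assoc)
        also have "\<dots> = Cmp D (inv_arr D (iY (Cod D h))) (Cmp D (Cmp D h g) (iY (Dom D g)))"
          using a g h gh d by (simp add: cat_assoc)
        finally show "FM F (Cmp C (KM h) (KM g)) = Cmp D (inv_arr D (iY (Cod D h))) (Cmp D (Cmp D h g) (iY (Dom D g)))" .
      qed
      finally show ?thesis unfolding K_def by simp
    qed
  qed
  have eps: "is_nat_iso D D (fcomp F K) fid iY"
    unfolding is_nat_iso_def is_nat_trans_def
  proof (intro conjI ballI)
    show "is_functor D D (fcomp F K)" using Kf F by (rule fcomp_functor)
    show "is_functor D D fid" using d by (rule fid_functor)
    show "iY Y \<in> Defs.hom D (FO (fcomp F K) Y) (FO fid Y)" if "Y \<in> Ob D" for Y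
      using K0[OF that] unfolding K_def hom_def by simp
    show "is_iso D (iY Y)" if "Y \<in> Ob D" for Y using K0[OF that] by simp
    show "Cmp D (iY (Cod D g)) (FM (fcomp F K) g) = Cmp D (FM fid g) (iY (Dom D g))" if g: "g \<in> Arr D" for g
    proof -
      have o: "Dom D g \<in> Ob D" "Cod D g \<in> Ob D" using g d by auto
      note a = K0[OF o(1)] K0[OF o(2)]
      show ?thesis unfolding K_def using KM[OF g] a g d by (simp add: cat_assoc[symmetric])
    qed
  qed
  define eta where "eta A = pre (K0 (FO F A)) A (iY (FO F A))" for A
  have eta: "eta A \<in> Arr C" "Dom C (eta A) = K0 (FO F A)" "Cod C (eta A) = A" "FM F (eta A) = iY (FO F A)"
    if "A \<in> Ob C" for A
    unfolding eta_def using pre K0[of "FO F A"] F that by auto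
  define etai where "etai A = pre A (K0 (FO F A)) (inv_arr D (iY (FO F A)))" for A
  have etai: "etai A \<in> Arr C" "Dom C (etai A) = A" "Cod C (etai A) = K0 (FO F A)" "FM F (etai A) = inv_arr D (iY (FO F A))"
    if "A \<in> Ob C" for A
    unfolding etai_def using pre K0[of "FO F A"] F that d by auto
  have ni: "is_nat_iso C C (fcomp K F) fid eta"
    unfolding is_nat_iso_def is_nat_trans_def
  proof (intro conjI ballI)
    show "is_functor C C (fcomp K F)" using F Kf by (rule fcomp_functor)
    show "is_functor C C fid" using c by (rule fid_functor)
    show "eta A \<in> Defs.hom C (FO (fcomp K F) A) (FO fid A)" if "A \<in> Ob C" for A
      using eta[OF that] unfolding K_def hom_def by simp
    show "is_iso C (eta A)" if A: "A \<in> Ob C" for A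
    proof (rule iso_intro[OF c _ etai(1)[OF A]])
      note a = eta[OF A] etai[OF A] K0[of "FO F A"]
      have o: "FO F A \<in> Ob D" using F A by simp
      show "eta A \<in> Arr C" "Dom C (etai A) = Cod C (eta A)" "Cod C (etai A) = Dom C (eta A)" using a by simp_all
      have o2: "K0 (FO F A) \<in> Ob C" using a(9) o by blast
      have e1: "FM F (Cmp C (etai A) (eta A)) = FM F (Idt C (K0 (FO F A)))"
        using a o o2 c d F by (simp add: fun_Cmp[OF F])
      have e2: "FM F (Cmp C (eta A) (etai A)) = FM F (Idt C A)"
        using a o A c d F by (simp add: fun_Cmp[OF F])
      show "Cmp C (etai A) (eta A) = Idt C (Dom C (eta A))"
        using ff_faithful[OF ff F _ _ _ _ e1] a o2 c by simp
      show "Cmp C (eta A) (etai A) = Idt C (Cod C (eta A))"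
        using ff_faithful[OF ff F _ _ _ _ e2] a A c by simp
    qed
    show "Cmp C (eta (Cod C f)) (FM (fcomp K F) f) = Cmp C (FM fid f) (eta (Dom C f))" if f: "f \<in> Arr C" for f
    proof -
      have o: "Dom C f \<in> Ob C" "Cod C f \<in> Ob C" "FO F (Dom C f) \<in> Ob D" "FO F (Cod C f) \<in> Ob D"
        using f c F by auto
      note a = eta[OF o(1)] eta[OF o(2)] K0[OF o(3)] K0[OF o(4)]
      have Ff: "FM F f \<in> Arr D" "Dom D (FM F f) = FO F (Dom C f)" "Cod D (FM F f) = FO F (Cod C f)"
        using F f by auto
      note b = KM[OF Ff(1)]
      have "FM F (Cmp C (eta (Cod C f)) (KM (FM F f))) = FM F (Cmp C f (eta (Dom C f)))"
        using a b Ff f d by (simp add: fun_Cmp[OF F] cat_assoc[symmetric])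
      then have "Cmp C (eta (Cod C f)) (KM (FM F f)) = Cmp C f (eta (Dom C f))"
        using ff_faithful[OF ff F, of "Cmp C (eta (Cod C f)) (KM (FM F f))" "Cmp C f (eta (Dom C f))"] a b Ff f c
        by simp
      then show ?thesis unfolding K_def by simp
    qed
  qed
  show ?thesis unfolding is_equivalence_def using F Kf ni eps by blast
qed

lemma ff_comp: assumes G: "is_functor C D G" and F: "is_functor D E F" and g: "ff C D G" and f: "ff D E F"
  shows "ff C E (fcomp F G)"
  unfolding ff_def
proof (intro ballI allI impI)
  fix A B h assume A: "A \<in> Ob C" and B: "B \<in> Ob C" and h: "h \<in> Arr E \<and> Dom E h = FO (fcomp F G) A \<and> Cod E h = FO (fcomp F G) B"
  obtain k where k: "k \<in> Arr D" "Dom D k = FO G A" "Cod D k = FO G B" "FM F k = h"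
    using ffD[OF f, of "FO G A" "FO G B" h] A B G h by auto
  obtain l where l: "l \<in> Arr C" "Dom C l = A" "Cod C l = B" "FM G l = k"
    using ffD[OF g A B, of k] k by auto
  show "\<exists>!f. f \<in> Arr C \<and> Dom C f = A \<and> Cod C f = B \<and> FM (fcomp F G) f = h"
  proof
    show "l \<in> Arr C \<and> Dom C l = A \<and> Cod C l = B \<and> FM (fcomp F G) l = h" using l k by simp
    fix l' assume l': "l' \<in> Arr C \<and> Dom C l' = A \<and> Cod C l' = B \<and> FM (fcomp F G) l' = h"
    have "FM G l' = FM G l"
      using ff_faithful[OF f F, of "FM G l'" "FM G l"] l l' G k by simp
    then show "l' = l" using ff_faithful[OF g G, of l' l] l l' by simp
  qed
qed

lemma es_comp: assumes G: "is_functor C D G" and F: "is_functor D E F" and g: "es C D G" and f: "es D E F"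
  shows "es C E (fcomp F G)"
  unfolding es_def
proof
  fix Y assume Y: "Y \<in> Ob E"
  obtain B i where B: "B \<in> Ob D" and i: "i \<in> Arr E" "Dom E i = FO F B" "Cod E i = Y" "is_iso E i"
    using f Y unfolding es_def by blast
  obtain A j where A: "A \<in> Ob C" and j: "j \<in> Arr D" "Dom D j = FO G A" "Cod D j = B" "is_iso D j"
    using g B unfolding es_def by blast
  have e: "category E" using F by (rule fun_cat2)
  show "\<exists>A\<in>Ob C. \<exists>i. i \<in> Arr E \<and> Dom E i = FO (fcomp F G) A \<and> Cod E i = Y \<and> is_iso E i"
    apply (rule bexI[OF _ A], rule exI[where x="Cmp E i (FM F j)"])
    using i j F e by simp
qed

lemma ff_id: "category C \<Longrightarrow> ff C C F \<Longrightarrow> True" by simp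


section \<open>Monoidal categories\<close>

context fixes C :: "('o,'m,'z) moncat_scheme" assumes mc: "monoidal_category C"
begin
lemma mc_cat[simp]: "category C" using mc by (rule moncat_cat)
lemma mc_Unt[simp]: "Unt C \<in> Ob C" using mc unfolding monoidal_category_def by (elim conjE) assumption
lemma mc_Tns[simp]: "A \<in> Ob C \<Longrightarrow> B \<in> Ob C \<Longrightarrow> Tns C A B \<in> Ob C"
  using mc unfolding monoidal_category_def by (elim conjE) blast
lemma mc_TnsA_hom: "f \<in> Arr C \<Longrightarrow> g \<in> Arr C \<Longrightarrow> TnsA C f g \<in> Defs.hom C (Tns C (Dom C f) (Dom C g)) (Tns C (Cod C f) (Cod C g))"
  using mc unfolding monoidal_category_def by (elim conjE) blast
lemma mc_TnsA[simp]: "f \<in> Arr C \<Longrightarrow> g \<in> Arr C \<Longrightarrow> TnsA C f g \<in> Arr C"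
  using mc_TnsA_hom by (simp add: hom_def)
lemma mc_TnsA_Dom[simp]: "f \<in> Arr C \<Longrightarrow> g \<in> Arr C \<Longrightarrow> Dom C (TnsA C f g) = Tns C (Dom C f) (Dom C g)"
  using mc_TnsA_hom by (simp add: hom_def)
lemma mc_TnsA_Cod[simp]: "f \<in> Arr C \<Longrightarrow> g \<in> Arr C \<Longrightarrow> Cod C (TnsA C f g) = Tns C (Cod C f) (Cod C g)"
  using mc_TnsA_hom by (simp add: hom_def)
lemma mc_TnsA_Idt[simp]: "A \<in> Ob C \<Longrightarrow> B \<in> Ob C \<Longrightarrow> TnsA C (Idt C A) (Idt C B) = Idt C (Tns C A B)"
  using mc unfolding monoidal_category_def by (elim conjE) blast
lemma mc_interchange: "f \<in> Arr C \<Longrightarrow> g \<in> Arr C \<Longrightarrow> f' \<in> Arr C \<Longrightarrow> g' \<in> Arr C \<Longrightarrow>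
        Cod C f = Dom C g \<Longrightarrow> Cod C f' = Dom C g' \<Longrightarrow>
        TnsA C (Cmp C g f) (Cmp C g' f') = Cmp C (TnsA C g g') (TnsA C f f')"
  using mc unfolding monoidal_category_def by (elim conjE) blast
lemma mc_Asc_hom: "A \<in> Ob C \<Longrightarrow> B \<in> Ob C \<Longrightarrow> E \<in> Ob C \<Longrightarrow>
        Asc C A B E \<in> Defs.hom C (Tns C (Tns C A B) E) (Tns C A (Tns C B E)) \<and> is_iso C (Asc C A B E)"
  using mc unfolding monoidal_category_def by (elim conjE) blast
lemma mc_LU_hom: "A \<in> Ob C \<Longrightarrow> LU C A \<in> Defs.hom C (Tns C (Unt C) A) A \<and> is_iso C (LU C A)"
  using mc unfolding monoidal_category_def by (elim conjE) blast
lemma mc_RU_hom: "A \<in> Ob C \<Longrightarrow> RU C A \<in> Defs.hom C (Tns C A (Unt C)) A \<and> is_iso C (RU C A)"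
  using mc unfolding monoidal_category_def by (elim conjE) blast
lemma mc_Asc[simp]: "A \<in> Ob C \<Longrightarrow> B \<in> Ob C \<Longrightarrow> E \<in> Ob C \<Longrightarrow> Asc C A B E \<in> Arr C"
  "A \<in> Ob C \<Longrightarrow> B \<in> Ob C \<Longrightarrow> E \<in> Ob C \<Longrightarrow> Dom C (Asc C A B E) = Tns C (Tns C A B) E"
  "A \<in> Ob C \<Longrightarrow> B \<in> Ob C \<Longrightarrow> E \<in> Ob C \<Longrightarrow> Cod C (Asc C A B E) = Tns C A (Tns C B E)"
  "A \<in> Ob C \<Longrightarrow> B \<in> Ob C \<Longrightarrow> E \<in> Ob C \<Longrightarrow> is_iso C (Asc C A B E)"
  using mc_Asc_hom by (simp_all add: hom_def)
lemma mc_LU[simp]: "A \<in> Ob C \<Longrightarrow> LU C A \<in> Arr C" "A \<in> Ob C \<Longrightarrow> Dom C (LU C A) = Tns C (Unt C) A"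
  "A \<in> Ob C \<Longrightarrow> Cod C (LU C A) = A" "A \<in> Ob C \<Longrightarrow> is_iso C (LU C A)"
  using mc_LU_hom by (simp_all add: hom_def)
lemma mc_RU[simp]: "A \<in> Ob C \<Longrightarrow> RU C A \<in> Arr C" "A \<in> Ob C \<Longrightarrow> Dom C (RU C A) = Tns C A (Unt C)"
  "A \<in> Ob C \<Longrightarrow> Cod C (RU C A) = A" "A \<in> Ob C \<Longrightarrow> is_iso C (RU C A)"
  using mc_RU_hom by (simp_all add: hom_def)

lemma mc_TnsA_iso[simp]: "is_iso C f \<Longrightarrow> is_iso C g \<Longrightarrow> is_iso C (TnsA C f g)"
  by (rule iso_intro[where g="TnsA C (inv_arr C f) (inv_arr C g)"]) (simp_all add: mc_interchange[symmetric])
lemma mc_TnsA_inv: "is_iso C f \<Longrightarrow> is_iso C g \<Longrightarrow> inv_arr C (TnsA C f g) = TnsA C (inv_arr C f) (inv_arr C g)"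
  by (rule inv_unique) (simp_all add: mc_interchange[symmetric])
end


section \<open>Monoidal functors\<close>

context fixes C :: "('o,'m,'z) moncat_scheme" and D :: "('p,'n,'y) moncat_scheme"
   and F :: "('o,'m,'p,'n,'w) monfnctr_scheme"
  assumes mf: "is_monoidal_functor C D F"
begin
lemma mf_mc1[simp]: "monoidal_category C" using mf unfolding is_monoidal_functor_def by (elim conjE)
lemma mf_mc2[simp]: "monoidal_category D" using mf unfolding is_monoidal_functor_def by (elim conjE)
lemma mf_fun[simp]: "is_functor C D F" using mf by (rule mf_functor)
lemma mf_FT_hom: "A \<in> Ob C \<Longrightarrow> B \<in> Ob C \<Longrightarrow> FT F A B \<in> Defs.hom D (FO F (Tns C A B)) (Tns D (FO F A) (FO F B)) \<and> is_iso D (FT F A B)"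
  using mf unfolding is_monoidal_functor_def by (elim conjE) blast
lemma mf_FT[simp]: "A \<in> Ob C \<Longrightarrow> B \<in> Ob C \<Longrightarrow> FT F A B \<in> Arr D"
  "A \<in> Ob C \<Longrightarrow> B \<in> Ob C \<Longrightarrow> Dom D (FT F A B) = FO F (Tns C A B)"
  "A \<in> Ob C \<Longrightarrow> B \<in> Ob C \<Longrightarrow> Cod D (FT F A B) = Tns D (FO F A) (FO F B)"
  "A \<in> Ob C \<Longrightarrow> B \<in> Ob C \<Longrightarrow> is_iso D (FT F A B)"
  using mf_FT_hom by (simp_all add: hom_def)
lemma mf_FU_hom: "FU F \<in> Defs.hom D (FO F (Unt C)) (Unt D) \<and> is_iso D (FU F)"
  using mf unfolding is_monoidal_functor_def by (elim conjE) blast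
lemma mf_FU[simp]: "FU F \<in> Arr D" "Dom D (FU F) = FO F (Unt C)" "Cod D (FU F) = Unt D" "is_iso D (FU F)"
  using mf_FU_hom by (simp_all add: hom_def)
lemma mf_FT_nat: "f \<in> Arr C \<Longrightarrow> g \<in> Arr C \<Longrightarrow>
        Cmp D (FT F (Cod C f) (Cod C g)) (FM F (TnsA C f g)) =
        Cmp D (TnsA D (FM F f) (FM F g)) (FT F (Dom C f) (Dom C g))"
  using mf unfolding is_monoidal_functor_def by (elim conjE) blast
lemma mf_hex: "A \<in> Ob C \<Longrightarrow> B \<in> Ob C \<Longrightarrow> E \<in> Ob C \<Longrightarrow>
        Cmp D (Asc D (FO F A) (FO F B) (FO F E))
          (Cmp D (TnsA D (FT F A B) (Idt D (FO F E))) (FT F (Tns C A B) E)) =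
        Cmp D (TnsA D (Idt D (FO F A)) (FT F B E))
          (Cmp D (FT F A (Tns C B E)) (FM F (Asc C A B E)))"
  using mf unfolding is_monoidal_functor_def by (elim conjE) blast
lemma mf_lu: "A \<in> Ob C \<Longrightarrow> Cmp D (LU D (FO F A)) (Cmp D (TnsA D (FU F) (Idt D (FO F A))) (FT F (Unt C) A))
        = FM F (LU C A)"
  using mf unfolding is_monoidal_functor_def by (elim conjE) blast
lemma mf_ru: "A \<in> Ob C \<Longrightarrow> Cmp D (RU D (FO F A)) (Cmp D (TnsA D (Idt D (FO F A)) (FU F)) (FT F A (Unt C)))
        = FM F (RU C A)"
  using mf unfolding is_monoidal_functor_def by (elim conjE) blast
end


lemmas fun_simps = fun_Ob fun_Arr fun_Dom fun_Cod fun_Idt fun_iso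
lemmas mc_simps = mc_cat mc_Unt mc_Tns mc_TnsA mc_TnsA_Dom mc_TnsA_Cod mc_TnsA_Idt mc_Asc mc_LU mc_RU mc_TnsA_iso
lemmas mf_simps = mf_mc1 mf_mc2 mf_fun mf_FT mf_FU

lemma rew2:
  assumes "category C" "Cmp C g f = Cmp C g' f'" "f \<in> Arr C" "g \<in> Arr C" "Cod C f = Dom C g"
    "f' \<in> Arr C" "g' \<in> Arr C" "Cod C f' = Dom C g'"
    "x \<in> Arr C" "Cod C x = Dom C f"
  shows "Cmp C g (Cmp C f x) = Cmp C g' (Cmp C f' x)"
proof -
  have "Dom C f' = Dom C f"
    using cat_Cmp_Dom[of C f g] cat_Cmp_Dom[of C f' g'] assms by simp
  then show ?thesis using assms by (simp add: cat_assoc[symmetric])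
qed

lemma rew1:
  assumes "category C" "Cmp C g f = h" "f \<in> Arr C" "g \<in> Arr C" "Cod C f = Dom C g"
    "x \<in> Arr C" "Cod C x = Dom C f"
  shows "Cmp C g (Cmp C f x) = Cmp C h x"
  using assms by (simp add: cat_assoc[symmetric])

lemma mc_ich_l: "monoidal_category C \<Longrightarrow> f \<in> Arr C \<Longrightarrow> g \<in> Arr C \<Longrightarrow> Cod C f = Dom C g \<Longrightarrow> X \<in> Ob C \<Longrightarrow>
   TnsA C (Cmp C g f) (Idt C X) = Cmp C (TnsA C g (Idt C X)) (TnsA C f (Idt C X))"
  using mc_interchange[of C f g "Idt C X" "Idt C X"] by simp
lemma mc_ich_r: "monoidal_category C \<Longrightarrow> f \<in> Arr C \<Longrightarrow> g \<in> Arr C \<Longrightarrow> Cod C f = Dom C g \<Longrightarrow> X \<in> Ob C \<Longrightarrow>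
   TnsA C (Idt C X) (Cmp C g f) = Cmp C (TnsA C (Idt C X) g) (TnsA C (Idt C X) f)"
  using mc_interchange[of C "Idt C X" "Idt C X" f g] by simp

lemma is_functor_cong: "FO F1 = FO F2 \<Longrightarrow> FM F1 = FM F2 \<Longrightarrow> is_functor C D F1 = is_functor C D F2"
  unfolding is_functor_def by simp

lemma mfcomp_functor: "is_functor C D G \<Longrightarrow> is_functor D E F \<Longrightarrow> is_functor C E (mfcomp E F G)"
  using fcomp_functor[of C D G E F] is_functor_cong[of "mfcomp E F G" "fcomp F G" C E] by simp

lemma mfcomp_mf:
  assumes mG: "is_monoidal_functor C D G" and mF: "is_monoidal_functor D E F"
  shows "is_monoidal_functor C E (mfcomp E F G)"
proof -
  note mcC = mf_mc1[OF mG] and mcD = mf_mc2[OF mG] and mcE = mf_mc2[OF mF]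
  note Gf = mf_fun[OF mG] and Ff = mf_fun[OF mF]
  note s[simp] = mc_simps[OF mcC] mc_simps[OF mcD] mc_simps[OF mcE] fun_simps[OF Gf] fun_simps[OF Ff]
     mf_FT[OF mG] mf_FU[OF mG] mf_FT[OF mF] mf_FU[OF mF]
  have cD: "category D" and cE: "category E" by simp_all
  note nf = cat_assoc fun_Cmp[OF Gf] fun_Cmp[OF Ff] mc_interchange[OF mcC] mc_interchange[OF mcD] mc_interchange[OF mcE]
     mc_ich_l[OF mcD] mc_ich_r[OF mcD] mc_ich_l[OF mcE] mc_ich_r[OF mcE]
  let ?H = "mfcomp E F G"
  show ?thesis
    unfolding is_monoidal_functor_def
  proof (intro conjI ballI)
    show "monoidal_category C" by (fact mcC)
    show "monoidal_category E" by (fact mcE)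
    show "is_functor C E ?H" using Gf Ff by (rule mfcomp_functor)
    fix A B assume A: "A \<in> Ob C" and B: "B \<in> Ob C"
    show "FT ?H A B \<in> Defs.hom E (FO ?H (Tns C A B)) (Tns E (FO ?H A) (FO ?H B))"
      using A B by (simp add: hom_def)
    show "is_iso E (FT ?H A B)" using A B by simp
  next
    show "FU ?H \<in> Defs.hom E (FO ?H (Unt C)) (Unt E)" by (simp add: hom_def)
    show "is_iso E (FU ?H)" by simp
  next
    fix f g assume f: "f \<in> Arr C" and g: "g \<in> Arr C"
    have n1: "Cmp D (FT G (Cod C f) (Cod C g)) (FM G (TnsA C f g)) = Cmp D (TnsA D (FM G f) (FM G g)) (FT G (Dom C f) (Dom C g))"
      using mf_FT_nat[OF mG f g] .
    have n2: "Cmp E (FT F (FO G (Cod C f)) (FO G (Cod C g))) (FM F (TnsA D (FM G f) (FM G g))) =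
              Cmp E (TnsA E (FM F (FM G f)) (FM F (FM G g))) (FT F (FO G (Dom C f)) (FO G (Dom C g)))"
      using mf_FT_nat[OF mF, of "FM G f" "FM G g"] f g by simp
    have n1': "Cmp E (FM F (FT G (Cod C f) (Cod C g))) (FM F (FM G (TnsA C f g))) = Cmp E (FM F (TnsA D (FM G f) (FM G g))) (FM F (FT G (Dom C f) (Dom C g)))"
      using arg_cong[OF n1, of "FM F"] f g by (simp add: nf)
    show "Cmp E (FT ?H (Cod C f) (Cod C g)) (FM ?H (TnsA C f g)) =
          Cmp E (TnsA E (FM ?H f) (FM ?H g)) (FT ?H (Dom C f) (Dom C g))"
      using f g n2 by (simp add: nf rew2[OF cE n1'] n1' rew2[OF cE n2] n2)
  next
    fix A B K assume A: "A \<in> Ob C" and B: "B \<in> Ob C" and K: "K \<in> Ob C"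
    have hG: "Cmp D (Asc D (FO G A) (FO G B) (FO G K)) (Cmp D (TnsA D (FT G A B) (Idt D (FO G K))) (FT G (Tns C A B) K)) =
        Cmp D (TnsA D (Idt D (FO G A)) (FT G B K)) (Cmp D (FT G A (Tns C B K)) (FM G (Asc C A B K)))"
      using mf_hex[OF mG A B K] .
    have hF: "Cmp E (Asc E (FO F (FO G A)) (FO F (FO G B)) (FO F (FO G K))) (Cmp E (TnsA E (FT F (FO G A) (FO G B)) (Idt E (FO F (FO G K)))) (FT F (Tns D (FO G A) (FO G B)) (FO G K))) =
        Cmp E (TnsA E (Idt E (FO F (FO G A))) (FT F (FO G B) (FO G K))) (Cmp E (FT F (FO G A) (Tns D (FO G B) (FO G K))) (FM F (Asc D (FO G A) (FO G B) (FO G K))))"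
      using mf_hex[OF mF, of "FO G A" "FO G B" "FO G K"] A B K by simp
    have hG': "Cmp E (FM F (Asc D (FO G A) (FO G B) (FO G K))) (Cmp E (FM F (TnsA D (FT G A B) (Idt D (FO G K)))) (FM F (FT G (Tns C A B) K))) =
        Cmp E (FM F (TnsA D (Idt D (FO G A)) (FT G B K))) (Cmp E (FM F (FT G A (Tns C B K))) (FM F (FM G (Asc C A B K))))"
      using arg_cong[OF hG, of "FM F"] A B K by (simp add: nf)
    have nA: "Cmp E (FT F (Tns D (FO G A) (FO G B)) (FO G K)) (FM F (TnsA D (FT G A B) (Idt D (FO G K)))) =
       Cmp E (TnsA E (FM F (FT G A B)) (Idt E (FO F (FO G K)))) (FT F (FO G (Tns C A B)) (FO G K))"
      using mf_FT_nat[OF mF, of "FT G A B" "Idt D (FO G K)"] A B K by simp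
    have nB: "Cmp E (FT F (FO G A) (Tns D (FO G B) (FO G K))) (FM F (TnsA D (Idt D (FO G A)) (FT G B K))) =
       Cmp E (TnsA E (Idt E (FO F (FO G A))) (FM F (FT G B K))) (FT F (FO G A) (FO G (Tns C B K)))"
      using mf_FT_nat[OF mF, of "Idt D (FO G A)" "FT G B K"] A B K by simp
    have "Cmp E (Asc E (FO ?H A) (FO ?H B) (FO ?H K)) (Cmp E (TnsA E (FT ?H A B) (Idt E (FO ?H K))) (FT ?H (Tns C A B) K))
      = Cmp E (Asc E (FO F (FO G A)) (FO F (FO G B)) (FO F (FO G K))) (Cmp E (TnsA E (FT F (FO G A) (FO G B)) (Idt E (FO F (FO G K))))
          (Cmp E (FT F (Tns D (FO G A) (FO G B)) (FO G K)) (Cmp E (FM F (TnsA D (FT G A B) (Idt D (FO G K)))) (FM F (FT G (Tns C A B) K)))))"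
      using A B K by (simp add: nf rew2[OF cE nA[symmetric]] nA[symmetric])
    also have "\<dots> = Cmp E (TnsA E (Idt E (FO F (FO G A))) (FT F (FO G B) (FO G K))) (Cmp E (FT F (FO G A) (Tns D (FO G B) (FO G K)))
          (Cmp E (FM F (Asc D (FO G A) (FO G B) (FO G K))) (Cmp E (FM F (TnsA D (FT G A B) (Idt D (FO G K)))) (FM F (FT G (Tns C A B) K)))))"
      using A B K by (simp add: cat_assoc[symmetric] hF)
    also have "\<dots> = Cmp E (TnsA E (Idt E (FO F (FO G A))) (FT F (FO G B) (FO G K))) (Cmp E (FT F (FO G A) (Tns D (FO G B) (FO G K)))
          (Cmp E (FM F (TnsA D (Idt D (FO G A)) (FT G B K))) (Cmp E (FM F (FT G A (Tns C B K))) (FM F (FM G (Asc C A B K))))))"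
      using A B K by (simp only: hG')
    also have "\<dots> = Cmp E (TnsA E (Idt E (FO ?H A)) (FT ?H B K)) (Cmp E (FT ?H A (Tns C B K)) (FM ?H (Asc C A B K)))"
      using A B K by (simp add: nf rew2[OF cE nB] nB)
    finally show "Cmp E (Asc E (FO ?H A) (FO ?H B) (FO ?H K)) (Cmp E (TnsA E (FT ?H A B) (Idt E (FO ?H K))) (FT ?H (Tns C A B) K)) =
        Cmp E (TnsA E (Idt E (FO ?H A)) (FT ?H B K)) (Cmp E (FT ?H A (Tns C B K)) (FM ?H (Asc C A B K)))" .
  next
    fix A assume A: "A \<in> Ob C"
    have lG: "Cmp D (LU D (FO G A)) (Cmp D (TnsA D (FU G) (Idt D (FO G A))) (FT G (Unt C) A)) = FM G (LU C A)"
      using mf_lu[OF mG A] .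
    have lF: "Cmp E (LU E (FO F (FO G A))) (Cmp E (TnsA E (FU F) (Idt E (FO F (FO G A)))) (FT F (Unt D) (FO G A))) = FM F (LU D (FO G A))"
      using mf_lu[OF mF, of "FO G A"] A by simp
    have lG': "Cmp E (FM F (LU D (FO G A))) (Cmp E (FM F (TnsA D (FU G) (Idt D (FO G A)))) (FM F (FT G (Unt C) A))) = FM F (FM G (LU C A))"
      using arg_cong[OF lG, of "FM F"] A by (simp add: nf)
    have n: "Cmp E (FT F (Unt D) (FO G A)) (FM F (TnsA D (FU G) (Idt D (FO G A)))) =
       Cmp E (TnsA E (FM F (FU G)) (Idt E (FO F (FO G A)))) (FT F (FO G (Unt C)) (FO G A))"
      using mf_FT_nat[OF mF, of "FU G" "Idt D (FO G A)"] A by simp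
    have "Cmp E (LU E (FO ?H A)) (Cmp E (TnsA E (FU ?H) (Idt E (FO ?H A))) (FT ?H (Unt C) A))
       = Cmp E (LU E (FO F (FO G A))) (Cmp E (TnsA E (FU F) (Idt E (FO F (FO G A)))) (Cmp E (FT F (Unt D) (FO G A))
           (Cmp E (FM F (TnsA D (FU G) (Idt D (FO G A)))) (FM F (FT G (Unt C) A)))))"
      using A by (simp add: nf rew2[OF cE n[symmetric]] n[symmetric])
    also have "\<dots> = Cmp E (FM F (LU D (FO G A))) (Cmp E (FM F (TnsA D (FU G) (Idt D (FO G A)))) (FM F (FT G (Unt C) A)))"
      using A by (simp add: cat_assoc[symmetric] lF)
    also have "\<dots> = FM ?H (LU C A)" using lG' by simp
    finally show "Cmp E (LU E (FO ?H A)) (Cmp E (TnsA E (FU ?H) (Idt E (FO ?H A))) (FT ?H (Unt C) A)) = FM ?H (LU C A)" .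
  next
    fix A assume A: "A \<in> Ob C"
    have lG: "Cmp D (RU D (FO G A)) (Cmp D (TnsA D (Idt D (FO G A)) (FU G)) (FT G A (Unt C))) = FM G (RU C A)"
      using mf_ru[OF mG A] .
    have lF: "Cmp E (RU E (FO F (FO G A))) (Cmp E (TnsA E (Idt E (FO F (FO G A))) (FU F)) (FT F (FO G A) (Unt D))) = FM F (RU D (FO G A))"
      using mf_ru[OF mF, of "FO G A"] A by simp
    have lG': "Cmp E (FM F (RU D (FO G A))) (Cmp E (FM F (TnsA D (Idt D (FO G A)) (FU G))) (FM F (FT G A (Unt C)))) = FM F (FM G (RU C A))"
      using arg_cong[OF lG, of "FM F"] A by (simp add: nf)
    have n: "Cmp E (FT F (FO G A) (Unt D)) (FM F (TnsA D (Idt D (FO G A)) (FU G))) =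
       Cmp E (TnsA E (Idt E (FO F (FO G A))) (FM F (FU G))) (FT F (FO G A) (FO G (Unt C)))"
      using mf_FT_nat[OF mF, of "Idt D (FO G A)" "FU G"] A by simp
    have "Cmp E (RU E (FO ?H A)) (Cmp E (TnsA E (Idt E (FO ?H A)) (FU ?H)) (FT ?H A (Unt C)))
       = Cmp E (RU E (FO F (FO G A))) (Cmp E (TnsA E (Idt E (FO F (FO G A))) (FU F)) (Cmp E (FT F (FO G A) (Unt D))
           (Cmp E (FM F (TnsA D (Idt D (FO G A)) (FU G))) (FM F (FT G A (Unt C))))))"
      using A by (simp add: nf rew2[OF cE n[symmetric]] n[symmetric])
    also have "\<dots> = Cmp E (FM F (RU D (FO G A))) (Cmp E (FM F (TnsA D (Idt D (FO G A)) (FU G))) (FM F (FT G A (Unt C))))"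
      using A by (simp add: cat_assoc[symmetric] lF)
    also have "\<dots> = FM ?H (RU C A)" using lG' by simp
    finally show "Cmp E (RU E (FO ?H A)) (Cmp E (TnsA E (Idt E (FO ?H A)) (FU ?H)) (FT ?H A (Unt C))) = FM ?H (RU C A)" .
  qed
qed


lemma mfid_mf: assumes mc: "monoidal_category C" shows "is_monoidal_functor C C (mfid C)"
proof -
  note s[simp] = mc_simps[OF mc]
  have f: "is_functor C C (mfid C)"
    using fid_functor[of C] is_functor_cong[of "mfid C" fid C C] by simp
  show ?thesis
    unfolding is_monoidal_functor_def
  proof (intro conjI ballI)
    show "monoidal_category C" by (fact mc)
    show "monoidal_category C" by (fact mc)
    show "is_functor C C (mfid C)" by (fact f)
    fix A B assume "A \<in> Ob C" "B \<in> Ob C"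
    then show "FT (mfid C) A B \<in> Defs.hom C (FO (mfid C) (Tns C A B)) (Tns C (FO (mfid C) A) (FO (mfid C) B))"
      "is_iso C (FT (mfid C) A B)" by (simp_all add: hom_def)
  next
    show "FU (mfid C) \<in> Defs.hom C (FO (mfid C) (Unt C)) (Unt C)" "is_iso C (FU (mfid C))" by (simp_all add: hom_def)
  next
    fix f g assume "f \<in> Arr C" "g \<in> Arr C"
    then show "Cmp C (FT (mfid C) (Cod C f) (Cod C g)) (FM (mfid C) (TnsA C f g)) =
        Cmp C (TnsA C (FM (mfid C) f) (FM (mfid C) g)) (FT (mfid C) (Dom C f) (Dom C g))" by simp
  next
    fix A B K assume "A \<in> Ob C" "B \<in> Ob C" "K \<in> Ob C"
    then show "Cmp C (Asc C (FO (mfid C) A) (FO (mfid C) B) (FO (mfid C) K))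
          (Cmp C (TnsA C (FT (mfid C) A B) (Idt C (FO (mfid C) K))) (FT (mfid C) (Tns C A B) K)) =
        Cmp C (TnsA C (Idt C (FO (mfid C) A)) (FT (mfid C) B K))
          (Cmp C (FT (mfid C) A (Tns C B K)) (FM (mfid C) (Asc C A B K)))" by simp
  next
    fix A assume "A \<in> Ob C"
    then show "Cmp C (LU C (FO (mfid C) A)) (Cmp C (TnsA C (FU (mfid C)) (Idt C (FO (mfid C) A))) (FT (mfid C) (Unt C) A))
        = FM (mfid C) (LU C A)" by simp
  next
    fix A assume "A \<in> Ob C"
    then show "Cmp C (RU C (FO (mfid C) A)) (Cmp C (TnsA C (Idt C (FO (mfid C) A)) (FU (mfid C))) (FT (mfid C) A (Unt C)))
        = FM (mfid C) (RU C A)" by simp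
  qed
qed

section \<open>Monoidal natural transformations\<close>

context fixes C :: "('o,'m,'z) moncat_scheme" and D :: "('p,'n,'y) moncat_scheme"
   and F :: "('o,'m,'p,'n,'w) monfnctr_scheme" and G :: "('o,'m,'p,'n,'v) monfnctr_scheme" and \<eta>
  assumes mnt: "is_monoidal_nat_trans C D F G \<eta>"
begin
lemma mnt_mf1: "is_monoidal_functor C D F" using mnt unfolding is_monoidal_nat_trans_def by (elim conjE)
lemma mnt_mf2: "is_monoidal_functor C D G" using mnt unfolding is_monoidal_nat_trans_def by (elim conjE)
lemma mnt_nt': "is_nat_trans C D F G \<eta>" using mnt by (rule mnt_nt)
lemma mnt_FT: "A \<in> Ob C \<Longrightarrow> B \<in> Ob C \<Longrightarrow>
        Cmp D (FT G A B) (\<eta> (Tns C A B)) = Cmp D (TnsA D (\<eta> A) (\<eta> B)) (FT F A B)"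
  using mnt unfolding is_monoidal_nat_trans_def by (elim conjE) blast
lemma mnt_FU: "Cmp D (FU G) (\<eta> (Unt C)) = FU F"
  using mnt unfolding is_monoidal_nat_trans_def by (elim conjE)
end

lemmas nt_simps = nt_Arr nt_Dom nt_Cod

lemma mnt_intro:
  assumes "is_monoidal_functor C D F" "is_monoidal_functor C D G" "is_nat_trans C D F G \<eta>"
   "\<And>A B. A \<in> Ob C \<Longrightarrow> B \<in> Ob C \<Longrightarrow> Cmp D (FT G A B) (\<eta> (Tns C A B)) = Cmp D (TnsA D (\<eta> A) (\<eta> B)) (FT F A B)"
   "Cmp D (FU G) (\<eta> (Unt C)) = FU F"
  shows "is_monoidal_nat_trans C D F G \<eta>"
  unfolding is_monoidal_nat_trans_def using assms by blast

lemma nt_intro: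
  assumes "is_functor C D F" "is_functor C D G"
   "\<And>A. A \<in> Ob C \<Longrightarrow> \<eta> A \<in> Arr D \<and> Dom D (\<eta> A) = FO F A \<and> Cod D (\<eta> A) = FO G A"
   "\<And>f. f \<in> Arr C \<Longrightarrow> Cmp D (\<eta> (Cod C f)) (FM F f) = Cmp D (FM G f) (\<eta> (Dom C f))"
  shows "is_nat_trans C D F G \<eta>"
  unfolding is_nat_trans_def hom_def using assms by blast

lemma mni_intro: "is_monoidal_nat_trans C D F G \<eta> \<Longrightarrow> (\<And>A. A \<in> Ob C \<Longrightarrow> is_iso D (\<eta> A)) \<Longrightarrow> is_monoidal_nat_iso C D F G \<eta>"
  unfolding is_monoidal_nat_iso_def by blast
lemma mni_mnt: "is_monoidal_nat_iso C D F G \<eta> \<Longrightarrow> is_monoidal_nat_trans C D F G \<eta>"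
  unfolding is_monoidal_nat_iso_def by blast
lemma mni_iso: "is_monoidal_nat_iso C D F G \<eta> \<Longrightarrow> A \<in> Ob C \<Longrightarrow> is_iso D (\<eta> A)"
  unfolding is_monoidal_nat_iso_def by blast

lemma mnt_vcomp:
  assumes e1: "is_monoidal_nat_trans C D F G \<eta>" and e2: "is_monoidal_nat_trans C D G K \<epsilon>"
  shows "is_monoidal_nat_trans C D F K (\<lambda>A. Cmp D (\<epsilon> A) (\<eta> A))"
proof -
  note mF = mnt_mf1[OF e1] and mG = mnt_mf2[OF e1] and mK = mnt_mf2[OF e2]
  note n1 = mnt_nt'[OF e1] and n2 = mnt_nt'[OF e2]
  note mcC = mf_mc1[OF mF] and mcD = mf_mc2[OF mF]
  have cD: "category D" using mcD by simp
  note s[simp] = mc_simps[OF mcC] mc_simps[OF mcD] fun_simps[OF mf_fun[OF mF]] fun_simps[OF mf_fun[OF mG]] fun_simps[OF mf_fun[OF mK]]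
    mf_FT[OF mF] mf_FU[OF mF] mf_FT[OF mG] mf_FU[OF mG] mf_FT[OF mK] mf_FU[OF mK] nt_simps[OF n1] nt_simps[OF n2]
  note nf = cat_assoc mc_interchange[OF mcD]
  show ?thesis
  proof (rule mnt_intro[OF mF mK nt_intro[OF mf_fun[OF mF] mf_fun[OF mK]]])
    fix A assume "A \<in> Ob C" then show "Cmp D (\<epsilon> A) (\<eta> A) \<in> Arr D \<and> Dom D (Cmp D (\<epsilon> A) (\<eta> A)) = FO F A \<and> Cod D (Cmp D (\<epsilon> A) (\<eta> A)) = FO K A"
      by simp
  next
    fix f assume f: "f \<in> Arr C"
    have a: "Cmp D (\<eta> (Cod C f)) (FM F f) = Cmp D (FM G f) (\<eta> (Dom C f))" using nt_nat[OF n1 f] .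
    have b: "Cmp D (\<epsilon> (Cod C f)) (FM G f) = Cmp D (FM K f) (\<epsilon> (Dom C f))" using nt_nat[OF n2 f] .
    show "Cmp D (Cmp D (\<epsilon> (Cod C f)) (\<eta> (Cod C f))) (FM F f) = Cmp D (FM K f) (Cmp D (\<epsilon> (Dom C f)) (\<eta> (Dom C f)))"
      using f by (simp add: nf rew2[OF cD a] a rew2[OF cD b] b)
  next
    fix A B assume A: "A \<in> Ob C" and B: "B \<in> Ob C"
    have a: "Cmp D (FT G A B) (\<eta> (Tns C A B)) = Cmp D (TnsA D (\<eta> A) (\<eta> B)) (FT F A B)" using mnt_FT[OF e1 A B] .
    have b: "Cmp D (FT K A B) (\<epsilon> (Tns C A B)) = Cmp D (TnsA D (\<epsilon> A) (\<epsilon> B)) (FT G A B)" using mnt_FT[OF e2 A B] .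
    show "Cmp D (FT K A B) (Cmp D (\<epsilon> (Tns C A B)) (\<eta> (Tns C A B))) = Cmp D (TnsA D (Cmp D (\<epsilon> A) (\<eta> A)) (Cmp D (\<epsilon> B) (\<eta> B))) (FT F A B)"
      using A B by (simp add: nf rew2[OF cD a] a rew2[OF cD b] b)
  next
    have a: "Cmp D (FU G) (\<eta> (Unt C)) = FU F" using mnt_FU[OF e1] .
    have b: "Cmp D (FU K) (\<epsilon> (Unt C)) = FU G" using mnt_FU[OF e2] .
    show "Cmp D (FU K) (Cmp D (\<epsilon> (Unt C)) (\<eta> (Unt C))) = FU F"
      by (simp add: cat_assoc[symmetric] a b)
  qed
qed

lemma mni_vcomp:
  assumes e1: "is_monoidal_nat_iso C D F G \<eta>" and e2: "is_monoidal_nat_iso C D G K \<epsilon>"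
  shows "is_monoidal_nat_iso C D F K (\<lambda>A. Cmp D (\<epsilon> A) (\<eta> A))"
proof (rule mni_intro[OF mnt_vcomp[OF mni_mnt[OF e1] mni_mnt[OF e2]]])
  fix A assume A: "A \<in> Ob C"
  note n1 = mnt_nt'[OF mni_mnt[OF e1]] and n2 = mnt_nt'[OF mni_mnt[OF e2]]
  have "category D" using fun_cat2[OF nt_functor1[OF n1]] .
  then show "is_iso D (Cmp D (\<epsilon> A) (\<eta> A))"
    using mni_iso[OF e1 A] mni_iso[OF e2 A] nt_simps[OF n1 A] nt_simps[OF n2 A] by simp
qed

lemma mnt_whiskerL:
  assumes mK: "is_monoidal_functor D E K" and e: "is_monoidal_nat_trans C D F G \<eta>"
  shows "is_monoidal_nat_trans C E (mfcomp E K F) (mfcomp E K G) (\<lambda>A. FM K (\<eta> A))"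
proof -
  note mF = mnt_mf1[OF e] and mG = mnt_mf2[OF e]
  note n = mnt_nt'[OF e]
  note mcC = mf_mc1[OF mF] and mcD = mf_mc2[OF mF] and mcE = mf_mc2[OF mK]
  have cE: "category E" using mcE by simp
  note Kf = mf_fun[OF mK]
  note s[simp] = mc_simps[OF mcC] mc_simps[OF mcD] mc_simps[OF mcE] fun_simps[OF mf_fun[OF mF]] fun_simps[OF mf_fun[OF mG]] fun_simps[OF Kf]
    mf_FT[OF mF] mf_FU[OF mF] mf_FT[OF mG] mf_FU[OF mG] mf_FT[OF mK] mf_FU[OF mK] nt_simps[OF n]
  note nf = cat_assoc mc_interchange[OF mcD] fun_Cmp[OF Kf]
  show ?thesis
  proof (rule mnt_intro[OF mfcomp_mf[OF mF mK] mfcomp_mf[OF mG mK] nt_intro[OF mfcomp_functor[OF mf_fun[OF mF] Kf] mfcomp_functor[OF mf_fun[OF mG] Kf]]])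
    fix A assume "A \<in> Ob C" then show "FM K (\<eta> A) \<in> Arr E \<and> Dom E (FM K (\<eta> A)) = FO (mfcomp E K F) A \<and> Cod E (FM K (\<eta> A)) = FO (mfcomp E K G) A"
      by simp
  next
    fix f assume f: "f \<in> Arr C"
    have a: "Cmp D (\<eta> (Cod C f)) (FM F f) = Cmp D (FM G f) (\<eta> (Dom C f))" using nt_nat[OF n f] .
    have a': "Cmp E (FM K (\<eta> (Cod C f))) (FM K (FM F f)) = Cmp E (FM K (FM G f)) (FM K (\<eta> (Dom C f)))"
      using arg_cong[OF a, of "FM K"] f by (simp add: nf)
    show "Cmp E (FM K (\<eta> (Cod C f))) (FM (mfcomp E K F) f) = Cmp E (FM (mfcomp E K G) f) (FM K (\<eta> (Dom C f)))"
      using a' by simp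
  next
    fix A B assume A: "A \<in> Ob C" and B: "B \<in> Ob C"
    have a: "Cmp D (FT G A B) (\<eta> (Tns C A B)) = Cmp D (TnsA D (\<eta> A) (\<eta> B)) (FT F A B)" using mnt_FT[OF e A B] .
    have a': "Cmp E (FM K (FT G A B)) (FM K (\<eta> (Tns C A B))) = Cmp E (FM K (TnsA D (\<eta> A) (\<eta> B))) (FM K (FT F A B))"
      using arg_cong[OF a, of "FM K"] A B by (simp add: nf)
    have b: "Cmp E (FT K (FO G A) (FO G B)) (FM K (TnsA D (\<eta> A) (\<eta> B))) = Cmp E (TnsA E (FM K (\<eta> A)) (FM K (\<eta> B))) (FT K (FO F A) (FO F B))"
      using mf_FT_nat[OF mK, of "\<eta> A" "\<eta> B"] A B by simp
    show "Cmp E (FT (mfcomp E K G) A B) (FM K (\<eta> (Tns C A B))) = Cmp E (TnsA E (FM K (\<eta> A)) (FM K (\<eta> B))) (FT (mfcomp E K F) A B)"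
      using A B by (simp add: nf rew2[OF cE a'] a' rew2[OF cE b] b)
  next
    have a: "Cmp D (FU G) (\<eta> (Unt C)) = FU F" using mnt_FU[OF e] .
    have a': "Cmp E (FM K (FU G)) (FM K (\<eta> (Unt C))) = FM K (FU F)"
      using arg_cong[OF a, of "FM K"] by (simp add: nf)
    show "Cmp E (FU (mfcomp E K G)) (FM K (\<eta> (Unt C))) = FU (mfcomp E K F)"
      by (simp add: cat_assoc a')
  qed
qed

lemma mnt_whiskerR:
  assumes mK: "is_monoidal_functor B C K" and e: "is_monoidal_nat_trans C D F G \<eta>"
  shows "is_monoidal_nat_trans B D (mfcomp D F K) (mfcomp D G K) (\<lambda>A. \<eta> (FO K A))"
proof -
  note mF = mnt_mf1[OF e] and mG = mnt_mf2[OF e]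
  note n = mnt_nt'[OF e]
  note mcB = mf_mc1[OF mK] and mcC = mf_mc1[OF mF] and mcD = mf_mc2[OF mF]
  have cD: "category D" using mcD by simp
  note Kf = mf_fun[OF mK]
  note s[simp] = mc_simps[OF mcB] mc_simps[OF mcC] mc_simps[OF mcD] fun_simps[OF mf_fun[OF mF]] fun_simps[OF mf_fun[OF mG]] fun_simps[OF Kf]
    mf_FT[OF mF] mf_FU[OF mF] mf_FT[OF mG] mf_FU[OF mG] mf_FT[OF mK] mf_FU[OF mK] nt_simps[OF n]
  note nf = cat_assoc mc_interchange[OF mcD]
  show ?thesis
  proof (rule mnt_intro[OF mfcomp_mf[OF mK mF] mfcomp_mf[OF mK mG] nt_intro[OF mfcomp_functor[OF Kf mf_fun[OF mF]] mfcomp_functor[OF Kf mf_fun[OF mG]]]])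
    fix A assume "A \<in> Ob B" then show "\<eta> (FO K A) \<in> Arr D \<and> Dom D (\<eta> (FO K A)) = FO (mfcomp D F K) A \<and> Cod D (\<eta> (FO K A)) = FO (mfcomp D G K) A"
      by simp
  next
    fix f assume f: "f \<in> Arr B"
    have a: "Cmp D (\<eta> (Cod C (FM K f))) (FM F (FM K f)) = Cmp D (FM G (FM K f)) (\<eta> (Dom C (FM K f)))"
      using nt_nat[OF n, of "FM K f"] f by simp
    show "Cmp D (\<eta> (FO K (Cod B f))) (FM (mfcomp D F K) f) = Cmp D (FM (mfcomp D G K) f) (\<eta> (FO K (Dom B f)))"
      using a f by simp
  next
    fix A B' assume A: "A \<in> Ob B" and B: "B' \<in> Ob B"
    have a: "Cmp D (FT G (FO K A) (FO K B')) (\<eta> (Tns C (FO K A) (FO K B'))) = Cmp D (TnsA D (\<eta> (FO K A)) (\<eta> (FO K B'))) (FT F (FO K A) (FO K B'))"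
      using mnt_FT[OF e, of "FO K A" "FO K B'"] A B by simp
    have b0: "Cmp D (\<eta> (Cod C (FT K A B'))) (FM F (FT K A B')) = Cmp D (FM G (FT K A B')) (\<eta> (Dom C (FT K A B')))"
      using nt_nat[OF n, of "FT K A B'"] A B by simp
    have b: "Cmp D (\<eta> (Tns C (FO K A) (FO K B'))) (FM F (FT K A B')) = Cmp D (FM G (FT K A B')) (\<eta> (FO K (Tns B A B')))"
      using b0 A B by simp
    show "Cmp D (FT (mfcomp D G K) A B') (\<eta> (FO K (Tns B A B'))) = Cmp D (TnsA D (\<eta> (FO K A)) (\<eta> (FO K B'))) (FT (mfcomp D F K) A B')"
      using A B by (simp add: nf rew2[OF cD b[symmetric]] b[symmetric] rew2[OF cD a] a)
  next
    have a: "Cmp D (FU G) (\<eta> (Unt C)) = FU F" using mnt_FU[OF e] .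
    have b0: "Cmp D (\<eta> (Cod C (FU K))) (FM F (FU K)) = Cmp D (FM G (FU K)) (\<eta> (Dom C (FU K)))"
      using nt_nat[OF n, of "FU K"] by simp
    have b: "Cmp D (\<eta> (Unt C)) (FM F (FU K)) = Cmp D (FM G (FU K)) (\<eta> (FO K (Unt B)))"
      using b0 by simp
    show "Cmp D (FU (mfcomp D G K)) (\<eta> (FO K (Unt B))) = FU (mfcomp D F K)"
      by (simp add: nf rew2[OF cD b[symmetric]] b[symmetric] rew1[OF cD a] a)
  qed
qed


lemma iso_solve_r: "category C \<Longrightarrow> is_iso C h \<Longrightarrow> a \<in> Arr C \<Longrightarrow> Dom C a = Cod C h \<Longrightarrow> Cmp C a h = b \<Longrightarrow>
  Cmp C b (inv_arr C h) = a"
  by (auto simp: cat_assoc)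
lemma iso_solve_l: "category C \<Longrightarrow> is_iso C h \<Longrightarrow> a \<in> Arr C \<Longrightarrow> Cod C a = Dom C h \<Longrightarrow> Cmp C h a = b \<Longrightarrow>
  Cmp C (inv_arr C h) b = a"
  by auto

lemma mni_inv:
  assumes e: "is_monoidal_nat_iso C D F G \<eta>"
  shows "is_monoidal_nat_iso C D G F (\<lambda>A. inv_arr D (\<eta> A))"
proof -
  note e1 = mni_mnt[OF e]
  note mF = mnt_mf1[OF e1] and mG = mnt_mf2[OF e1]
  note n = mnt_nt'[OF e1]
  note mcC = mf_mc1[OF mF] and mcD = mf_mc2[OF mF]
  have cD: "category D" using mcD by simp
  note s[simp] = mc_simps[OF mcC] mc_simps[OF mcD] fun_simps[OF mf_fun[OF mF]] fun_simps[OF mf_fun[OF mG]]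
    mf_FT[OF mF] mf_FU[OF mF] mf_FT[OF mG] mf_FU[OF mG] nt_simps[OF n] mni_iso[OF e]
  note nf = cat_assoc mc_interchange[OF mcD]
  show ?thesis
  proof (rule mni_intro[OF mnt_intro[OF mG mF nt_intro[OF mf_fun[OF mG] mf_fun[OF mF]]]])
    fix A assume "A \<in> Ob C" then show "inv_arr D (\<eta> A) \<in> Arr D \<and> Dom D (inv_arr D (\<eta> A)) = FO G A \<and> Cod D (inv_arr D (\<eta> A)) = FO F A"
      by simp
    show "is_iso D (inv_arr D (\<eta> A))" using \<open>A \<in> Ob C\<close> by simp
  next
    fix f assume f: "f \<in> Arr C"
    have a: "Cmp D (\<eta> (Cod C f)) (FM F f) = Cmp D (FM G f) (\<eta> (Dom C f))" using nt_nat[OF n f] .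
    have b: "FM G f = Cmp D (Cmp D (\<eta> (Cod C f)) (FM F f)) (inv_arr D (\<eta> (Dom C f)))"
      using iso_solve_r[OF cD _ _ _ a[symmetric]] f by simp
    show "Cmp D (inv_arr D (\<eta> (Cod C f))) (FM G f) = Cmp D (FM F f) (inv_arr D (\<eta> (Dom C f)))"
      apply (subst b) using f by (simp add: cat_assoc)
  next
    fix A B assume A: "A \<in> Ob C" and B: "B \<in> Ob C"
    have a: "Cmp D (FT G A B) (\<eta> (Tns C A B)) = Cmp D (TnsA D (\<eta> A) (\<eta> B)) (FT F A B)" using mnt_FT[OF e1 A B] .
    have b: "FT G A B = Cmp D (Cmp D (TnsA D (\<eta> A) (\<eta> B)) (FT F A B)) (inv_arr D (\<eta> (Tns C A B)))"
      using iso_solve_r[OF cD _ _ _ a] A B by simp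
    show "Cmp D (FT F A B) (inv_arr D (\<eta> (Tns C A B))) = Cmp D (TnsA D (inv_arr D (\<eta> A)) (inv_arr D (\<eta> B))) (FT G A B)"
      apply (subst b) using A B by (simp add: cat_assoc mc_TnsA_inv[OF mcD, symmetric])
  next
    have a: "Cmp D (FU G) (\<eta> (Unt C)) = FU F" using mnt_FU[OF e1] .
    show "Cmp D (FU F) (inv_arr D (\<eta> (Unt C))) = FU G"
      using iso_solve_r[OF cD _ _ _ a] by simp
  qed
qed

lemma mni_id:
  assumes mF: "is_monoidal_functor C D F"
  shows "is_monoidal_nat_iso C D F F (\<lambda>A. Idt D (FO F A))"
proof -
  note mcC = mf_mc1[OF mF] and mcD = mf_mc2[OF mF]
  note s[simp] = mc_simps[OF mcC] mc_simps[OF mcD] fun_simps[OF mf_fun[OF mF]] mf_FT[OF mF] mf_FU[OF mF]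
  show ?thesis
  proof (rule mni_intro[OF mnt_intro[OF mF mF nt_intro[OF mf_fun[OF mF] mf_fun[OF mF]]]])
    fix A assume "A \<in> Ob C" then show "Idt D (FO F A) \<in> Arr D \<and> Dom D (Idt D (FO F A)) = FO F A \<and> Cod D (Idt D (FO F A)) = FO F A"
      by simp
    show "is_iso D (Idt D (FO F A))" using \<open>A \<in> Ob C\<close> by simp
  next
    fix f assume f: "f \<in> Arr C"
    then show "Cmp D (Idt D (FO F (Cod C f))) (FM F f) = Cmp D (FM F f) (Idt D (FO F (Dom C f)))" by simp
  next
    fix A B assume A: "A \<in> Ob C" and B: "B \<in> Ob C"
    then show "Cmp D (FT F A B) (Idt D (FO F (Tns C A B))) = Cmp D (TnsA D (Idt D (FO F A)) (Idt D (FO F B))) (FT F A B)"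
      by simp
  next
    show "Cmp D (FU F) (Idt D (FO F (Unt C))) = FU F" by simp
  qed
qed

lemma mf_eqD: "mf_eq C F G \<Longrightarrow> A \<in> Ob C \<Longrightarrow> FO F A = FO G A"
  "mf_eq C F G \<Longrightarrow> f \<in> Arr C \<Longrightarrow> FM F f = FM G f"
  "mf_eq C F G \<Longrightarrow> A \<in> Ob C \<Longrightarrow> B \<in> Ob C \<Longrightarrow> FT F A B = FT G A B"
  "mf_eq C F G \<Longrightarrow> FU F = FU G"
  unfolding mf_eq_def by blast+

lemma mnt_cong:
  assumes e: "is_monoidal_nat_trans C D F G \<eta>" and q1: "mf_eq C F F'" and q2: "mf_eq C G G'"
    and mF': "is_monoidal_functor C D F'" and mG': "is_monoidal_functor C D G'"
  shows "is_monoidal_nat_trans C D F' G' \<eta>"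
proof -
  note mF = mnt_mf1[OF e] and mG = mnt_mf2[OF e]
  note n = mnt_nt'[OF e]
  note mcC = mf_mc1[OF mF]
  note s[simp] = mc_simps[OF mcC] nt_simps[OF n]
  show ?thesis
  proof (rule mnt_intro[OF mF' mG' nt_intro[OF mf_fun[OF mF'] mf_fun[OF mG']]])
    fix A assume "A \<in> Ob C" then show "\<eta> A \<in> Arr D \<and> Dom D (\<eta> A) = FO F' A \<and> Cod D (\<eta> A) = FO G' A"
      using mf_eqD[OF q1] mf_eqD[OF q2] by simp
  next
    fix f assume f: "f \<in> Arr C"
    then show "Cmp D (\<eta> (Cod C f)) (FM F' f) = Cmp D (FM G' f) (\<eta> (Dom C f))"
      using nt_nat[OF n f] mf_eqD[OF q1] mf_eqD[OF q2] by simp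
  next
    fix A B assume A: "A \<in> Ob C" and B: "B \<in> Ob C"
    then show "Cmp D (FT G' A B) (\<eta> (Tns C A B)) = Cmp D (TnsA D (\<eta> A) (\<eta> B)) (FT F' A B)"
      using mnt_FT[OF e A B] mf_eqD[OF q1] mf_eqD[OF q2] by simp
  next
    show "Cmp D (FU G') (\<eta> (Unt C)) = FU F'"
      using mnt_FU[OF e] mf_eqD[OF q1] mf_eqD[OF q2] by simp
  qed
qed

lemma mni_cong:
  assumes e: "is_monoidal_nat_iso C D F G \<eta>" and q1: "mf_eq C F F'" and q2: "mf_eq C G G'"
    and mF': "is_monoidal_functor C D F'" and mG': "is_monoidal_functor C D G'"
  shows "is_monoidal_nat_iso C D F' G' \<eta>"
  using mni_intro[OF mnt_cong[OF mni_mnt[OF e] q1 q2 mF' mG']] mni_iso[OF e] by blast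

lemma mf_eq_refl: "mf_eq C F F" unfolding mf_eq_def by simp
lemma mf_eq_sym: "mf_eq C F G \<Longrightarrow> mf_eq C G F" unfolding mf_eq_def by simp
lemma mf_eq_trans: "mf_eq C F G \<Longrightarrow> mf_eq C G K \<Longrightarrow> mf_eq C F K" unfolding mf_eq_def by simp

lemma mf_eq_assoc:
  assumes mK: "is_monoidal_functor C D K" and mG: "is_monoidal_functor D E G" and mF: "is_monoidal_functor E X F"
  shows "mf_eq C (mfcomp X (mfcomp X F G) K) (mfcomp X F (mfcomp E G K))"
proof -
  note s[simp] = mc_simps[OF mf_mc1[OF mK]] mc_simps[OF mf_mc1[OF mG]] mc_simps[OF mf_mc1[OF mF]] mc_simps[OF mf_mc2[OF mF]]
     fun_simps[OF mf_fun[OF mK]] fun_simps[OF mf_fun[OF mG]] fun_simps[OF mf_fun[OF mF]]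
     mf_FT[OF mK] mf_FU[OF mK] mf_FT[OF mG] mf_FU[OF mG] mf_FT[OF mF] mf_FU[OF mF]
  show ?thesis unfolding mf_eq_def
    by (simp add: fun_Cmp[OF mf_fun[OF mF]] cat_assoc)
qed

lemma mf_eq_idl:
  assumes mF: "is_monoidal_functor C D F"
  shows "mf_eq C (mfcomp D (mfid D) F) F"
proof -
  note s[simp] = mc_simps[OF mf_mc1[OF mF]] mc_simps[OF mf_mc2[OF mF]] fun_simps[OF mf_fun[OF mF]] mf_FT[OF mF] mf_FU[OF mF]
  show ?thesis unfolding mf_eq_def by simp
qed

lemma mf_eq_idr:
  assumes mF: "is_monoidal_functor C D F"
  shows "mf_eq C (mfcomp D F (mfid C)) F"
proof -
  note s[simp] = mc_simps[OF mf_mc1[OF mF]] mc_simps[OF mf_mc2[OF mF]] fun_simps[OF mf_fun[OF mF]] mf_FT[OF mF] mf_FU[OF mF]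
  show ?thesis unfolding mf_eq_def by simp
qed

lemma mf_eq_compL:
  assumes mF: "is_monoidal_functor C D F" and q: "mf_eq D G G'"
  shows "mf_eq C (mfcomp E G F) (mfcomp E G' F)"
  unfolding mf_eq_def using mf_eqD[OF q] fun_simps[OF mf_fun[OF mF]] mf_FT[OF mF] mf_FU[OF mF]
    mc_simps[OF mf_mc1[OF mF]] by simp

lemma mf_eq_compR:
  assumes G: "is_functor D E G" and q: "mf_eq C F F'"
  shows "mf_eq C (mfcomp E G F) (mfcomp E G F')"
  unfolding mf_eq_def using mf_eqD[OF q] by simp

lemma ff_cong: "FO F1 = FO F2 \<Longrightarrow> FM F1 = FM F2 \<Longrightarrow> ff C D F1 = ff C D F2"
  unfolding ff_def by simp
lemma es_cong: "FO F1 = FO F2 \<Longrightarrow> FM F1 = FM F2 \<Longrightarrow> es C D F1 = es C D F2"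
  unfolding es_def by simp

lemma equiv_mfcomp:
  assumes G: "is_equivalence C D G" and F: "is_equivalence D E F"
  shows "is_equivalence C E (mfcomp E F G)"
proof -
  have Gf: "is_functor C D G" and Ff: "is_functor D E F" using G F unfolding is_equivalence_def by blast+
  have "ff C E (fcomp F G)" using ff_comp[OF Gf Ff equiv_ff_es(1)[OF G] equiv_ff_es(1)[OF F]] .
  moreover have "ff C E (mfcomp E F G) = ff C E (fcomp F G)" by (rule ff_cong) simp_all
  ultimately have ff: "ff C E (mfcomp E F G)" by simp
  have "es C E (fcomp F G)" using es_comp[OF Gf Ff equiv_ff_es(2)[OF G] equiv_ff_es(2)[OF F]] .
  moreover have "es C E (mfcomp E F G) = es C E (fcomp F G)" by (rule es_cong) simp_all
  ultimately have es: "es C E (mfcomp E F G)" by simp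
  show ?thesis using ff_es_equiv[OF mfcomp_functor[OF Gf Ff] ff es] .
qed

lemma equiv_mfid:
  assumes c: "category C"
  shows "is_equivalence C C (mfid C)"
proof -
  have f: "is_functor C C (mfid C)" using fid_functor[OF c] is_functor_cong[of "mfid C" fid C C] by simp
  have ff: "ff C C (mfid C)" unfolding ff_def using c by auto
  have es: "es C C (mfid C)" unfolding es_def
  proof
    fix Y assume "Y \<in> Ob C"
    then show "\<exists>A\<in>Ob C. \<exists>i. i \<in> Arr C \<and> Dom C i = FO (mfid C) A \<and> Cod C i = Y \<and> is_iso C i"
      using c by (intro bexI[of _ Y] exI[of _ "Idt C Y"]) auto
  qed
  show ?thesis using ff_es_equiv[OF f ff es] .
qed


context fs begin
lemma xp_ArrE:
  assumes "f \<in> Arr XP"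
  obtains A B u \<sigma> where "f = (A, B, u, \<sigma>)" "A \<in> Ob C" "B \<in> Ob C" "\<sigma> \<in> carrier \<Gamma>"
    "u \<in> Arr C" "Dom C u = FO (F \<sigma>) A" "Cod C u = B"
proof -
  obtain A B u \<sigma> where f: "f = (A, B, u, \<sigma>)" by (cases f) auto
  then show ?thesis using that assms by (simp add: xp_Arr)
qed

lemma xp_iso:
  assumes u: "is_iso C u" "Dom C u = A" "Cod C u = B"
  shows "is_iso XP (A, B, u, \<one>\<^bsub>\<Gamma>\<^esub>)"
proof -
  have c: "category XP" by (rule xp_cat)
  have A: "A \<in> Ob C" "B \<in> Ob C" using u cat_Dom_Ob[OF cat, of u] cat_Cod_Ob[OF cat, of u] by auto
  show ?thesis
    apply (rule iso_intro[OF c, where g="(B, A, inv_arr C u, \<one>\<^bsub>\<Gamma>\<^esub>)"])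
    using u A by (simp_all add: xp_Arr)
qed
end

locale fs_map = S: fs \<Gamma> C \<theta> F + T: fs \<Gamma> C' \<theta>' F'
  for \<Gamma> :: "('g,'x) monoid_scheme" and C :: "('o,'m,'z) moncat_scheme" and \<theta> and F :: "'g \<Rightarrow> ('o,'m,'o,'m,'w) monfnctr_scheme"
    and C' :: "('p,'n,'y) moncat_scheme" and \<theta>' and F' :: "'g \<Rightarrow> ('p,'n,'p,'n,'v) monfnctr_scheme" +
  fixes G :: "('o,'m,'p,'n,'u) fnctr_scheme" and \<phi> :: "'g \<Rightarrow> 'o \<Rightarrow> 'n"
  assumes Gf: "is_functor C C' G"
    and phi_Arr[simp]: "\<sigma> \<in> carrier \<Gamma> \<Longrightarrow> A \<in> Ob C \<Longrightarrow> \<phi> \<sigma> A \<in> Arr C'"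
    and phi_Dom[simp]: "\<sigma> \<in> carrier \<Gamma> \<Longrightarrow> A \<in> Ob C \<Longrightarrow> Dom C' (\<phi> \<sigma> A) = FO (F' \<sigma>) (FO G A)"
    and phi_Cod[simp]: "\<sigma> \<in> carrier \<Gamma> \<Longrightarrow> A \<in> Ob C \<Longrightarrow> Cod C' (\<phi> \<sigma> A) = FO G (FO (F \<sigma>) A)"
    and phi_nat: "\<sigma> \<in> carrier \<Gamma> \<Longrightarrow> f \<in> Arr C \<Longrightarrow>
       Cmp C' (\<phi> \<sigma> (Cod C f)) (FM (F' \<sigma>) (FM G f)) = Cmp C' (FM G (FM (F \<sigma>) f)) (\<phi> \<sigma> (Dom C f))"
    and phi_compat: "\<tau> \<in> carrier \<Gamma> \<Longrightarrow> \<sigma> \<in> carrier \<Gamma> \<Longrightarrow> A \<in> Ob C \<Longrightarrow>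
       Cmp C' (\<phi> (\<tau> \<otimes>\<^bsub>\<Gamma>\<^esub> \<sigma>) A) (\<theta>' \<tau> \<sigma> (FO G A)) =
       Cmp C' (FM G (\<theta> \<tau> \<sigma> A)) (Cmp C' (\<phi> \<tau> (FO (F \<sigma>) A)) (FM (F' \<tau>) (\<phi> \<sigma> A)))"
    and phi_one: "A \<in> Ob C \<Longrightarrow> \<phi> \<one>\<^bsub>\<Gamma>\<^esub> A = Idt C' (FO G A)"
begin

definition xpmap :: "('o, 'o \<times> 'o \<times> 'm \<times> 'g, 'p, 'p \<times> 'p \<times> 'n \<times> 'g) fnctr" where
  "xpmap = \<lparr>FO = FO G, FM = (\<lambda>(A, B, u, \<sigma>). (FO G A, FO G B, Cmp C' (FM G u) (\<phi> \<sigma> A), \<sigma>))\<rparr>"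

lemma xpmap_FO[simp]: "FO xpmap = FO G" by (simp add: xpmap_def)
lemma xpmap_FM[simp]: "FM xpmap (A, B, u, \<sigma>) = (FO G A, FO G B, Cmp C' (FM G u) (\<phi> \<sigma> A), \<sigma>)"
  by (simp add: xpmap_def)

lemmas Gs[simp] = fun_simps[OF Gf]

lemma xpmap_functor: "is_functor S.XP T.XP xpmap"
  unfolding is_functor_def
proof (intro conjI ballI impI)
  show "category S.XP" by (rule S.xp_cat)
  show "category T.XP" by (rule T.xp_cat)
  show "FO xpmap A \<in> Ob T.XP" if "A \<in> Ob S.XP" for A using that by simp
  show "FM xpmap f \<in> Defs.hom T.XP (FO xpmap (Dom S.XP f)) (FO xpmap (Cod S.XP f))" if f: "f \<in> Arr S.XP" for f
  proof -
    obtain A B u \<sigma> where "f = (A, B, u, \<sigma>)" "A \<in> Ob C" "B \<in> Ob C" "\<sigma> \<in> carrier \<Gamma>"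
      "u \<in> Arr C" "Dom C u = FO (F \<sigma>) A" "Cod C u = B" using S.xp_ArrE[OF f] by blast
    then show ?thesis by (simp add: hom_def T.xp_Arr)
  qed
  show "FM xpmap (Idt S.XP A) = Idt T.XP (FO xpmap A)" if "A \<in> Ob S.XP" for A
    using that by (simp add: phi_one)
  show "FM xpmap (Cmp S.XP g f) = Cmp T.XP (FM xpmap g) (FM xpmap f)"
    if f: "f \<in> Arr S.XP" and g: "g \<in> Arr S.XP" and fg: "Cod S.XP f = Dom S.XP g" for f g
  proof -
    obtain A B u \<sigma> where f': "f = (A, B, u, \<sigma>)" "A \<in> Ob C" "B \<in> Ob C" "\<sigma> \<in> carrier \<Gamma>"
      "u \<in> Arr C" "Dom C u = FO (F \<sigma>) A" "Cod C u = B" using S.xp_ArrE[OF f] by blast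
    obtain B' E v \<tau> where g': "g = (B', E, v, \<tau>)" "B' \<in> Ob C" "E \<in> Ob C" "\<tau> \<in> carrier \<Gamma>"
      "v \<in> Arr C" "Dom C v = FO (F \<tau>) B'" "Cod C v = E" using S.xp_ArrE[OF g] by blast
    have BB: "B' = B" using fg f' g' by simp
    note a = f'(2-7) g'(3-7)[unfolded BB]
    have cC': "category C'" by simp
    have comp: "Cmp C' (\<phi> (\<tau> \<otimes>\<^bsub>\<Gamma>\<^esub> \<sigma>) A) (\<theta>' \<tau> \<sigma> (FO G A)) =
       Cmp C' (FM G (\<theta> \<tau> \<sigma> A)) (Cmp C' (\<phi> \<tau> (FO (F \<sigma>) A)) (FM (F' \<tau>) (\<phi> \<sigma> A)))"
      using phi_compat a by simp
    have k1: "\<phi> (\<tau> \<otimes>\<^bsub>\<Gamma>\<^esub> \<sigma>) A = Cmp C' (Cmp C' (FM G (\<theta> \<tau> \<sigma> A)) (Cmp C' (\<phi> \<tau> (FO (F \<sigma>) A)) (FM (F' \<tau>) (\<phi> \<sigma> A)))) (inv_arr C' (\<theta>' \<tau> \<sigma> (FO G A)))"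
      using iso_solve_r[OF cC' _ _ _ comp] a by simp
    have k2: "Cmp C' (FM G (inv_arr C (\<theta> \<tau> \<sigma> A))) (\<phi> (\<tau> \<otimes>\<^bsub>\<Gamma>\<^esub> \<sigma>) A) =
       Cmp C' (\<phi> \<tau> (FO (F \<sigma>) A)) (Cmp C' (FM (F' \<tau>) (\<phi> \<sigma> A)) (inv_arr C' (\<theta>' \<tau> \<sigma> (FO G A))))"
      apply (subst k1) using a by (simp add: cat_assoc fun_inv[OF Gf, symmetric])
    have n: "Cmp C' (\<phi> \<tau> B) (FM (F' \<tau>) (FM G u)) = Cmp C' (FM G (FM (F \<tau>) u)) (\<phi> \<tau> (FO (F \<sigma>) A))"
      using phi_nat[of \<tau> u] a by simp
    show ?thesis
      unfolding f' g' BB using a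
      by (simp add: fun_Cmp[OF Gf] T.FM_Cmp cat_assoc k2 rew2[OF cC' n] n)
  qed
qed

lemma xpmap_ff:
  assumes ffG: "ff C C' G" and phi_iso: "\<And>\<sigma> A. \<sigma> \<in> carrier \<Gamma> \<Longrightarrow> A \<in> Ob C \<Longrightarrow> is_iso C' (\<phi> \<sigma> A)"
  shows "ff S.XP T.XP xpmap"
  unfolding ff_def
proof (intro ballI allI impI)
  fix A B g assume A: "A \<in> Ob S.XP" and B: "B \<in> Ob S.XP"
    and g: "g \<in> Arr T.XP \<and> Dom T.XP g = FO xpmap A \<and> Cod T.XP g = FO xpmap B"
  obtain A' B' v \<sigma> where g': "g = (A', B', v, \<sigma>)" "A' \<in> Ob C'" "B' \<in> Ob C'" "\<sigma> \<in> carrier \<Gamma>"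
    "v \<in> Arr C'" "Dom C' v = FO (F' \<sigma>) A'" "Cod C' v = B'" using T.xp_ArrE g by blast
  have AB: "A' = FO G A" "B' = FO G B" using g g' by simp_all
  have A: "A \<in> Ob C" and B: "B \<in> Ob C" using A B by simp_all
  have cC': "category C'" by simp
  define w where "w = Cmp C' v (inv_arr C' (\<phi> \<sigma> A))"
  have w: "w \<in> Arr C'" "Dom C' w = FO G (FO (F \<sigma>) A)" "Cod C' w = FO G B"
    unfolding w_def using g' AB A phi_iso[of \<sigma> A] by simp_all
  obtain u where u: "u \<in> Arr C" "Dom C u = FO (F \<sigma>) A" "Cod C u = B" "FM G u = w"
    using ffD[OF ffG _ B w] A g' by auto
  have wv: "Cmp C' w (\<phi> \<sigma> A) = v" unfolding w_def using g' AB A phi_iso[of \<sigma> A] by (simp add: cat_assoc)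
  show "\<exists>!f. f \<in> Arr S.XP \<and> Dom S.XP f = A \<and> Cod S.XP f = B \<and> FM xpmap f = g"
  proof
    show "(A, B, u, \<sigma>) \<in> Arr S.XP \<and> Dom S.XP (A, B, u, \<sigma>) = A \<and> Cod S.XP (A, B, u, \<sigma>) = B \<and> FM xpmap (A, B, u, \<sigma>) = g"
      using u A B g' AB wv by (simp add: S.xp_Arr)
    fix f assume f: "f \<in> Arr S.XP \<and> Dom S.XP f = A \<and> Cod S.XP f = B \<and> FM xpmap f = g"
    obtain A1 B1 u1 \<sigma>1 where f': "f = (A1, B1, u1, \<sigma>1)" "A1 \<in> Ob C" "B1 \<in> Ob C" "\<sigma>1 \<in> carrier \<Gamma>"
      "u1 \<in> Arr C" "Dom C u1 = FO (F \<sigma>1) A1" "Cod C u1 = B1" using S.xp_ArrE f by blast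
    have e: "A1 = A" "B1 = B" "\<sigma>1 = \<sigma>" "Cmp C' (FM G u1) (\<phi> \<sigma> A) = v" using f f' g' by auto
    have "Cmp C' (FM G u1) (\<phi> \<sigma> A) = Cmp C' (FM G u) (\<phi> \<sigma> A)" by (simp only: e(4) wv u(4))
    moreover have "FM G u1 \<in> Arr C'" "FM G u \<in> Arr C'" "Dom C' (FM G u1) = Cod C' (\<phi> \<sigma> A)" "Dom C' (FM G u) = Cod C' (\<phi> \<sigma> A)"
      using f' e u(1-3) g' A by simp_all
    ultimately have "FM G u1 = FM G u"
      using iso_cancel_right[OF cC' phi_iso[of \<sigma> A], of "FM G u1" "FM G u"] g' A by blast
    then have "u1 = u" using ff_faithful[OF ffG Gf, of u1 u] f' e u by simp
    then show "f = (A, B, u, \<sigma>)" using f' e by simp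
  qed
qed

lemma xpmap_es:
  assumes esG: "es C C' G"
  shows "es S.XP T.XP xpmap"
  unfolding es_def
proof
  fix Y assume Y: "Y \<in> Ob T.XP"
  then have "Y \<in> Ob C'" by simp
  then obtain A i where A: "A \<in> Ob C" and i: "i \<in> Arr C'" "Dom C' i = FO G A" "Cod C' i = Y" "is_iso C' i"
    using esG unfolding es_def by blast
  show "\<exists>A\<in>Ob S.XP. \<exists>i. i \<in> Arr T.XP \<and> Dom T.XP i = FO xpmap A \<and> Cod T.XP i = Y \<and> is_iso T.XP i"
    apply (rule bexI[where x=A], rule exI[where x="(FO G A, Y, i, \<one>\<^bsub>\<Gamma>\<^esub>)"])
    using A i Y T.xp_iso[of i "FO G A" Y] by (simp_all add: T.xp_Arr)
qed

lemma xpmap_graded_equivalence: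
  assumes ffG: "ff C C' G" and esG: "es C C' G"
    and phi_iso: "\<And>\<sigma> A. \<sigma> \<in> carrier \<Gamma> \<Longrightarrow> A \<in> Ob C \<Longrightarrow> is_iso C' (\<phi> \<sigma> A)"
  shows "graded_equivalence S.XP xp_grade T.XP xp_grade xpmap"
  unfolding graded_equivalence_def
proof
  show "is_equivalence S.XP T.XP xpmap"
    using ff_es_equiv[OF xpmap_functor xpmap_ff[OF ffG phi_iso] xpmap_es[OF esG]] .
  show "\<forall>f\<in>Arr S.XP. xp_grade (FM xpmap f) = xp_grade f"
  proof
    fix f assume "f \<in> Arr S.XP"
    then obtain A B u \<sigma> where "f = (A, B, u, \<sigma>)" by (rule S.xp_ArrE)
    then show "xp_grade (FM xpmap f) = xp_grade f" by (simp add: xp_grade_def)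
  qed
qed

end


lemma mni_whiskerL:
  assumes mK: "is_monoidal_functor D E K" and e: "is_monoidal_nat_iso C D F G \<eta>"
  shows "is_monoidal_nat_iso C E (mfcomp E K F) (mfcomp E K G) (\<lambda>A. FM K (\<eta> A))"
  by (rule mni_intro[OF mnt_whiskerL[OF mK mni_mnt[OF e]]])
     (rule fun_iso[OF mf_fun[OF mK] mni_iso[OF e]])

lemma mni_whiskerR:
  assumes mK: "is_monoidal_functor B C K" and e: "is_monoidal_nat_iso C D F G \<eta>"
  shows "is_monoidal_nat_iso B D (mfcomp D F K) (mfcomp D G K) (\<lambda>A. \<eta> (FO K A))"
  by (rule mni_intro[OF mnt_whiskerR[OF mK mni_mnt[OF e]]])
     (rule mni_iso[OF e fun_Ob[OF mf_fun[OF mK]]])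

lemma mni_ext:
  assumes e: "is_monoidal_nat_iso C D F G \<eta>" and q: "\<And>A. A \<in> Ob C \<Longrightarrow> \<eta> A = \<eta>' A"
  shows "is_monoidal_nat_iso C D F G \<eta>'"
proof -
  note e1 = mni_mnt[OF e]
  note mF = mnt_mf1[OF e1] and mG = mnt_mf2[OF e1] and n = mnt_nt'[OF e1]
  note mcC = mf_mc1[OF mF]
  note s[simp] = mc_simps[OF mcC]
  show ?thesis
  proof (rule mni_intro[OF mnt_intro[OF mF mG nt_intro[OF mf_fun[OF mF] mf_fun[OF mG]]]])
    fix A assume A: "A \<in> Ob C"
    show "\<eta>' A \<in> Arr D \<and> Dom D (\<eta>' A) = FO F A \<and> Cod D (\<eta>' A) = FO G A" using nt_simps[OF n A] q[OF A] by simp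
    show "is_iso D (\<eta>' A)" using mni_iso[OF e A] q[OF A] by simp
  next
    fix f assume f: "f \<in> Arr C"
    then show "Cmp D (\<eta>' (Cod C f)) (FM F f) = Cmp D (FM G f) (\<eta>' (Dom C f))"
      using nt_nat[OF n f] q[of "Cod C f"] q[of "Dom C f"] by simp
  next
    fix A B assume "A \<in> Ob C" "B \<in> Ob C"
    then show "Cmp D (FT G A B) (\<eta>' (Tns C A B)) = Cmp D (TnsA D (\<eta>' A) (\<eta>' B)) (FT F A B)"
      using mnt_FT[OF e1] q by simp
  next
    show "Cmp D (FU G) (\<eta>' (Unt C)) = FU F" using mnt_FU[OF e1] q[of "Unt C"] by simp
  qed
qed

locale main = fs \<Gamma> C \<theta> F
  for \<Gamma> :: "'g monoid" and C :: "('o,'m) moncat" and \<theta> :: "'g \<Rightarrow> 'g \<Rightarrow> 'o \<Rightarrow> 'm"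
    and F :: "'g \<Rightarrow> ('o,'m,'o,'m) monfnctr" +
  fixes C' :: "('o2,'m2) moncat" and G :: "('o,'m,'o2,'m2) monfnctr" and H :: "('o2,'m2,'o,'m) monfnctr"
    and \<alpha> :: "'o2 \<Rightarrow> 'm2" and \<beta> :: "'o \<Rightarrow> 'm"
  assumes mG: "is_monoidal_functor C C' G" and eqG: "is_equivalence C C' G"
    and mH: "is_monoidal_functor C' C H" and eqH: "is_equivalence C' C H"
    and aI: "is_monoidal_nat_iso C' C' (mfcomp C' G H) (mfid C') \<alpha>"
    and bI: "is_monoidal_nat_iso C C (mfcomp C H G) (mfid C) \<beta>"
begin

lemma mcC': "monoidal_category C'" using mf_mc2[OF mG] .
lemma cC'[simp]: "category C'" using mcC' by simp
lemma Gf: "is_functor C C' G" using mf_fun[OF mG] .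
lemma Hf: "is_functor C' C H" using mf_fun[OF mH] .
lemmas s1[simp] = mc_simps[OF mcC'] mc_simps[OF mcat] fun_simps[OF Gf] fun_simps[OF Hf]
lemma aN: "is_nat_trans C' C' (mfcomp C' G H) (mfid C') \<alpha>" using mnt_nt'[OF mni_mnt[OF aI]] .
lemma bN: "is_nat_trans C C (mfcomp C H G) (mfid C) \<beta>" using mnt_nt'[OF mni_mnt[OF bI]] .
lemmas s2[simp] = nt_simps[OF aN] nt_simps[OF bN] mni_iso[OF aI] mni_iso[OF bI]

lemma a_nat: "f \<in> Arr C' \<Longrightarrow> Cmp C' (\<alpha> (Cod C' f)) (FM G (FM H f)) = Cmp C' f (\<alpha> (Dom C' f))"
  using nt_nat[OF aN] by simp
lemma b_nat: "f \<in> Arr C \<Longrightarrow> Cmp C (\<beta> (Cod C f)) (FM H (FM G f)) = Cmp C f (\<beta> (Dom C f))"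
  using nt_nat[OF bN] by simp

lemma GHa: "X \<in> Ob C' \<Longrightarrow> FM G (FM H (\<alpha> X)) = \<alpha> (FO G (FO H X))"
proof -
  assume X: "X \<in> Ob C'"
  have "Cmp C' (\<alpha> X) (FM G (FM H (\<alpha> X))) = Cmp C' (\<alpha> X) (\<alpha> (FO G (FO H X)))"
    using a_nat[of "\<alpha> X"] X by simp
  then show ?thesis using iso_cancel_left[OF cC', of "\<alpha> X" "FM G (FM H (\<alpha> X))" "\<alpha> (FO G (FO H X))"] X by simp
qed

lemma HGb: "A \<in> Ob C \<Longrightarrow> FM H (FM G (\<beta> A)) = \<beta> (FO H (FO G A))"
proof -
  assume A: "A \<in> Ob C"
  have "Cmp C (\<beta> A) (FM H (FM G (\<beta> A))) = Cmp C (\<beta> A) (\<beta> (FO H (FO G A)))"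
    using b_nat[of "\<beta> A"] A by simp
  then show ?thesis using iso_cancel_left[OF cat, of "\<beta> A" "FM H (FM G (\<beta> A))" "\<beta> (FO H (FO G A))"] A by simp
qed

definition e where "e X = Cmp C' (\<alpha> X) (Cmp C' (FM G (\<beta> (FO H X))) (inv_arr C' (\<alpha> (FO G (FO H X)))))"

lemma mGH: "is_monoidal_functor C' C' (mfcomp C' G H)" using mfcomp_mf[OF mH mG] .
lemma mHG: "is_monoidal_functor C C (mfcomp C H G)" using mfcomp_mf[OF mG mH] .

lemma e_mni: "is_monoidal_nat_iso C' C' (mfcomp C' G H) (mfid C') e"
proof -
  let ?GH = "mfcomp C' G H"
  let ?M = "mfcomp C' G (mfcomp C (mfcomp C H G) H)"
  note p1 = mni_whiskerR[OF mGH mni_inv[OF aI]]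
  note p2 = mni_whiskerL[OF mG mni_whiskerR[OF mH bI]]
  have mM: "is_monoidal_functor C' C' ?M" using mfcomp_mf[OF mfcomp_mf[OF mH mHG] mG] .
  have q1: "mf_eq C' (mfcomp C' (mfid C') ?GH) ?GH" using mf_eq_idl[OF mGH] .
  have q2: "mf_eq C' (mfcomp C' ?GH ?GH) ?M"
    unfolding mf_eq_def using mf_FT[OF mG] mf_FU[OF mG] mf_FT[OF mH] mf_FU[OF mH]
    by (simp add: fun_Cmp[OF Gf] fun_Cmp[OF Hf] cat_assoc)
  have q3: "mf_eq C' (mfcomp C' G (mfcomp C (mfid C) H)) ?GH"
    unfolding mf_eq_def using mf_FT[OF mG] mf_FU[OF mG] mf_FT[OF mH] mf_FU[OF mH]
    by (simp add: fun_Cmp[OF Gf] fun_Cmp[OF Hf] cat_assoc)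
  have p1': "is_monoidal_nat_iso C' C' ?GH ?M (\<lambda>X. inv_arr C' (\<alpha> (FO ?GH X)))"
    using mni_cong[OF p1 q1 q2 mGH mM] .
  have p2': "is_monoidal_nat_iso C' C' ?M ?GH (\<lambda>X. FM G (\<beta> (FO H X)))"
    using mni_cong[OF p2 mf_eq_refl q3 mM mGH] .
  show ?thesis
    using mni_ext[OF mni_vcomp[OF mni_vcomp[OF p1' p2'] aI]] unfolding e_def by simp
qed

lemma eN: "is_nat_trans C' C' (mfcomp C' G H) (mfid C') e" using mnt_nt'[OF mni_mnt[OF e_mni]] .
lemmas s3[simp] = nt_simps[OF eN] mni_iso[OF e_mni]
lemma e_nat: "f \<in> Arr C' \<Longrightarrow> Cmp C' (e (Cod C' f)) (FM G (FM H f)) = Cmp C' f (e (Dom C' f))"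
  using nt_nat[OF eN] by simp

lemma T1: "A \<in> Ob C \<Longrightarrow> e (FO G A) = FM G (\<beta> A)"
proof -
  assume A: "A \<in> Ob C"
  have n: "Cmp C' (\<alpha> (FO G A)) (FM G (FM H (FM G (\<beta> A)))) = Cmp C' (FM G (\<beta> A)) (\<alpha> (FO G (FO H (FO G A))))"
    using a_nat[of "FM G (\<beta> A)"] A by simp
  have "FM G (\<beta> (FO H (FO G A))) = FM G (FM H (FM G (\<beta> A)))" using HGb[OF A] by simp
  then show ?thesis unfolding e_def using A by (simp add: rew2[OF cC' n] n)
qed

lemma T2: "X \<in> Ob C' \<Longrightarrow> FM H (e X) = \<beta> (FO H X)"
proof -
  assume X: "X \<in> Ob C'"
  have n: "Cmp C (FM H (\<alpha> X)) (\<beta> (FO H (FO G (FO H X)))) = Cmp C (\<beta> (FO H X)) (FM H (\<alpha> (FO G (FO H X))))"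
    using b_nat[of "FM H (\<alpha> X)"] X by (simp add: GHa)
  have i: "Cmp C (FM H (\<alpha> (FO G (FO H X)))) (FM H (inv_arr C' (\<alpha> (FO G (FO H X))))) = Idt C (FO H (FO G (FO H X)))"
    using X by (simp add: fun_Cmp[OF Hf, symmetric])
  have "FM H (e X) = Cmp C (FM H (\<alpha> X)) (Cmp C (\<beta> (FO H (FO G (FO H X)))) (FM H (inv_arr C' (\<alpha> (FO G (FO H X))))))"
    unfolding e_def using X by (simp add: fun_Cmp[OF Hf] HGb)
  also have "\<dots> = Cmp C (\<beta> (FO H X)) (Cmp C (FM H (\<alpha> (FO G (FO H X)))) (FM H (inv_arr C' (\<alpha> (FO G (FO H X))))))"
    using X by (simp add: rew2[OF cat n])
  also have "\<dots> = \<beta> (FO H X)" using X by (simp add: i)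
  finally show ?thesis .
qed


lemma F1_T[simp]: "A \<in> Ob C \<Longrightarrow> B \<in> Ob C \<Longrightarrow> FT (F \<one>\<^bsub>\<Gamma>\<^esub>) A B = Idt C (Tns C A B)"
  using mf_eqD(3)[OF F1_eq] by simp
lemma F1_U[simp]: "FU (F \<one>\<^bsub>\<Gamma>\<^esub>) = Idt C (Unt C)"
  using mf_eqD(4)[OF F1_eq] by simp

lemma F_equiv: "\<sigma> \<in> carrier \<Gamma> \<Longrightarrow> is_equivalence C C (F \<sigma>)"
  using F_meq unfolding is_monoidal_equivalence_def by blast

lemmas Fs[simp] = mf_FT[OF F_mf] mf_FU[OF F_mf]
lemmas GHs[simp] = mf_FT[OF mG] mf_FU[OF mG] mf_FT[OF mH] mf_FU[OF mH]

definition Dm where "Dm \<sigma> = mfcomp C' G (mfcomp C (F \<sigma>) H)"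
definition Fp where "Fp \<sigma> = (if \<sigma> = \<one>\<^bsub>\<Gamma>\<^esub> then mfid C' else Dm \<sigma>)"
definition c where "c \<sigma> X = (if \<sigma> = \<one>\<^bsub>\<Gamma>\<^esub> then inv_arr C' (e X) else Idt C' (FO (Dm \<sigma>) X))"

lemma Dm_FO[simp]: "FO (Dm \<sigma>) X = FO G (FO (F \<sigma>) (FO H X))" by (simp add: Dm_def)
lemma Dm_FM[simp]: "FM (Dm \<sigma>) f = FM G (FM (F \<sigma>) (FM H f))" by (simp add: Dm_def)

lemma Dm_mf: assumes "\<sigma> \<in> carrier \<Gamma>" shows "is_monoidal_functor C' C' (Dm \<sigma>)"
  unfolding Dm_def by (rule mfcomp_mf[OF mfcomp_mf[OF mH F_mf[OF assms]] mG])
lemma Dm_equiv: assumes "\<sigma> \<in> carrier \<Gamma>" shows "is_equivalence C' C' (Dm \<sigma>)"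
  unfolding Dm_def by (rule equiv_mfcomp[OF equiv_mfcomp[OF eqH F_equiv[OF assms]] eqG])

lemma Fp_one[simp]: "Fp \<one>\<^bsub>\<Gamma>\<^esub> = mfid C'" by (simp add: Fp_def)
lemma Fp_ne: "\<sigma> \<noteq> \<one>\<^bsub>\<Gamma>\<^esub> \<Longrightarrow> Fp \<sigma> = Dm \<sigma>" by (simp add: Fp_def)
lemma Fp_mf: "\<sigma> \<in> carrier \<Gamma> \<Longrightarrow> is_monoidal_functor C' C' (Fp \<sigma>)"
  unfolding Fp_def using mfid_mf[OF mcC'] Dm_mf by simp
lemma Fp_meq: "\<sigma> \<in> carrier \<Gamma> \<Longrightarrow> is_monoidal_equivalence C' C' (Fp \<sigma>)"
  unfolding is_monoidal_equivalence_def Fp_def using mfid_mf[OF mcC'] Dm_mf Dm_equiv equiv_mfid[OF cC'] by simp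
lemma Fp_fun: "\<sigma> \<in> carrier \<Gamma> \<Longrightarrow> is_functor C' C' (Fp \<sigma>)" using mf_fun[OF Fp_mf] .

lemma Fp_O[simp]: "\<sigma> \<in> carrier \<Gamma> \<Longrightarrow> X \<in> Ob C' \<Longrightarrow> FO (Fp \<sigma>) X \<in> Ob C'" by (rule fun_Ob[OF Fp_fun])
lemma Fp_A[simp]: "\<sigma> \<in> carrier \<Gamma> \<Longrightarrow> f \<in> Arr C' \<Longrightarrow> FM (Fp \<sigma>) f \<in> Arr C'" by (rule fun_Arr[OF Fp_fun])
lemma Fp_D[simp]: "\<sigma> \<in> carrier \<Gamma> \<Longrightarrow> f \<in> Arr C' \<Longrightarrow> Dom C' (FM (Fp \<sigma>) f) = FO (Fp \<sigma>) (Dom C' f)" by (rule fun_Dom[OF Fp_fun])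
lemma Fp_C[simp]: "\<sigma> \<in> carrier \<Gamma> \<Longrightarrow> f \<in> Arr C' \<Longrightarrow> Cod C' (FM (Fp \<sigma>) f) = FO (Fp \<sigma>) (Cod C' f)" by (rule fun_Cod[OF Fp_fun])
lemma Fp_I[simp]: "\<sigma> \<in> carrier \<Gamma> \<Longrightarrow> X \<in> Ob C' \<Longrightarrow> FM (Fp \<sigma>) (Idt C' X) = Idt C' (FO (Fp \<sigma>) X)" by (rule fun_Idt[OF Fp_fun])
lemma Fp_iso[simp]: "\<sigma> \<in> carrier \<Gamma> \<Longrightarrow> is_iso C' f \<Longrightarrow> is_iso C' (FM (Fp \<sigma>) f)" by (rule fun_iso[OF Fp_fun])
lemma Fp_inv: "\<sigma> \<in> carrier \<Gamma> \<Longrightarrow> is_iso C' f \<Longrightarrow> inv_arr C' (FM (Fp \<sigma>) f) = FM (Fp \<sigma>) (inv_arr C' f)"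
  by (rule fun_inv[OF Fp_fun])
lemma Fp_Cmp: "\<sigma> \<in> carrier \<Gamma> \<Longrightarrow> f \<in> Arr C' \<Longrightarrow> g \<in> Arr C' \<Longrightarrow> Cod C' f = Dom C' g \<Longrightarrow>
   FM (Fp \<sigma>) (Cmp C' g f) = Cmp C' (FM (Fp \<sigma>) g) (FM (Fp \<sigma>) f)" by (rule fun_Cmp[OF Fp_fun])

lemma GH_Dm1: "mf_eq C' (mfcomp C' G H) (Dm \<one>\<^bsub>\<Gamma>\<^esub>)"
  unfolding mf_eq_def Dm_def by simp

lemma c_mni: "\<sigma> \<in> carrier \<Gamma> \<Longrightarrow> is_monoidal_nat_iso C' C' (Fp \<sigma>) (Dm \<sigma>) (c \<sigma>)"
proof (cases "\<sigma> = \<one>\<^bsub>\<Gamma>\<^esub>")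
  case True
  have m: "is_monoidal_nat_iso C' C' (mfid C') (Dm \<one>\<^bsub>\<Gamma>\<^esub>) (\<lambda>X. inv_arr C' (e X))"
    using mni_cong[OF mni_inv[OF e_mni] mf_eq_refl GH_Dm1 mfid_mf[OF mcC'] Dm_mf[OF one_closed]] .
  have "is_monoidal_nat_iso C' C' (mfid C') (Dm \<one>\<^bsub>\<Gamma>\<^esub>) (c \<one>\<^bsub>\<Gamma>\<^esub>)"
    by (rule mni_ext[OF m]) (simp add: c_def)
  then show ?thesis using True by simp
next
  case False
  assume s: "\<sigma> \<in> carrier \<Gamma>"
  have m: "is_monoidal_nat_iso C' C' (Dm \<sigma>) (Dm \<sigma>) (\<lambda>X. Idt C' (FO (Dm \<sigma>) X))"
    using mni_id[OF Dm_mf[OF s]] .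
  have "is_monoidal_nat_iso C' C' (Dm \<sigma>) (Dm \<sigma>) (c \<sigma>)"
    by (rule mni_ext[OF m]) (simp add: c_def False del: Dm_FO)
  then show ?thesis using False by (simp add: Fp_ne)
qed

lemma cN: "\<sigma> \<in> carrier \<Gamma> \<Longrightarrow> is_nat_trans C' C' (Fp \<sigma>) (Dm \<sigma>) (c \<sigma>)" using mnt_nt'[OF mni_mnt[OF c_mni]] .
lemma c_A[simp]: "\<sigma> \<in> carrier \<Gamma> \<Longrightarrow> X \<in> Ob C' \<Longrightarrow> c \<sigma> X \<in> Arr C'" by (rule nt_Arr[OF cN])
lemma c_D[simp]: "\<sigma> \<in> carrier \<Gamma> \<Longrightarrow> X \<in> Ob C' \<Longrightarrow> Dom C' (c \<sigma> X) = FO (Fp \<sigma>) X" by (rule nt_Dom[OF cN])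
lemma c_C[simp]: "\<sigma> \<in> carrier \<Gamma> \<Longrightarrow> X \<in> Ob C' \<Longrightarrow> Cod C' (c \<sigma> X) = FO G (FO (F \<sigma>) (FO H X))"
  using nt_Cod[OF cN] by simp
lemma c_iso[simp]: "\<sigma> \<in> carrier \<Gamma> \<Longrightarrow> X \<in> Ob C' \<Longrightarrow> is_iso C' (c \<sigma> X)" by (rule mni_iso[OF c_mni])
lemma c_nat: "\<sigma> \<in> carrier \<Gamma> \<Longrightarrow> f \<in> Arr C' \<Longrightarrow>
   Cmp C' (c \<sigma> (Cod C' f)) (FM (Fp \<sigma>) f) = Cmp C' (FM G (FM (F \<sigma>) (FM H f))) (c \<sigma> (Dom C' f))"
  using nt_nat[OF cN] by simp
lemma c_one: "X \<in> Ob C' \<Longrightarrow> c \<one>\<^bsub>\<Gamma>\<^esub> X = inv_arr C' (e X)" by (simp add: c_def)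

definition tt where "tt \<sigma> \<tau> X = Cmp C' (FM G (\<theta> \<sigma> \<tau> (FO H X))) (FM G (FM (F \<sigma>) (\<beta> (FO (F \<tau>) (FO H X)))))"

lemma tt_mni: "\<sigma> \<in> carrier \<Gamma> \<Longrightarrow> \<tau> \<in> carrier \<Gamma> \<Longrightarrow>
   is_monoidal_nat_iso C' C' (mfcomp C' (Dm \<sigma>) (Dm \<tau>)) (Dm (\<sigma> \<otimes>\<^bsub>\<Gamma>\<^esub> \<tau>)) (tt \<sigma> \<tau>)"
proof -
  assume s: "\<sigma> \<in> carrier \<Gamma>" and t: "\<tau> \<in> carrier \<Gamma>"
  note mFs = F_mf[OF s] and mFt = F_mf[OF t]
  have mK: "is_monoidal_functor C' C (mfcomp C (F \<tau>) H)" by (rule mfcomp_mf[OF mH mFt])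
  note q1 = mni_whiskerL[OF mG mni_whiskerL[OF mFs mni_whiskerR[OF mK bI]]]
  note q2 = mni_whiskerL[OF mG mni_whiskerR[OF mH th_mni[OF s t]]]
  let ?S1 = "mfcomp C' G (mfcomp C (F \<sigma>) (mfcomp C (mfcomp C H G) (mfcomp C (F \<tau>) H)))"
  let ?T1 = "mfcomp C' G (mfcomp C (F \<sigma>) (mfcomp C (mfid C) (mfcomp C (F \<tau>) H)))"
  let ?S2 = "mfcomp C' G (mfcomp C (mfcomp C (F \<sigma>) (F \<tau>)) H)"
  have m1: "is_monoidal_functor C' C' (mfcomp C' (Dm \<sigma>) (Dm \<tau>))" by (rule mfcomp_mf[OF Dm_mf[OF t] Dm_mf[OF s]])
  have m2: "is_monoidal_functor C' C' ?S2" by (rule mfcomp_mf[OF mfcomp_mf[OF mH mfcomp_mf[OF mFt mFs]] mG])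
  have e1: "mf_eq C' (mfcomp C' (Dm \<sigma>) (Dm \<tau>)) ?S1"
    unfolding mf_eq_def Dm_def using s t
    by (simp add: fun_Cmp[OF Gf] fun_Cmp[OF Hf] FM_Cmp cat_assoc)
  have e2: "mf_eq C' ?T1 ?S2"
    unfolding mf_eq_def using s t
    by (simp add: fun_Cmp[OF Gf] fun_Cmp[OF Hf] FM_Cmp cat_assoc)
  have q1': "is_monoidal_nat_iso C' C' (mfcomp C' (Dm \<sigma>) (Dm \<tau>)) ?S2 (\<lambda>X. FM G (FM (F \<sigma>) (\<beta> (FO (mfcomp C (F \<tau>) H) X))))"
    using mni_cong[OF q1 mf_eq_sym[OF e1] e2 m1 m2] .
  have q2': "is_monoidal_nat_iso C' C' ?S2 (Dm (\<sigma> \<otimes>\<^bsub>\<Gamma>\<^esub> \<tau>)) (\<lambda>X. FM G (\<theta> \<sigma> \<tau> (FO H X)))"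
    using q2 unfolding Dm_def by simp
  show ?thesis using mni_ext[OF mni_vcomp[OF q1' q2']] unfolding tt_def by simp
qed

lemma ttN: "\<sigma> \<in> carrier \<Gamma> \<Longrightarrow> \<tau> \<in> carrier \<Gamma> \<Longrightarrow> is_nat_trans C' C' (mfcomp C' (Dm \<sigma>) (Dm \<tau>)) (Dm (\<sigma> \<otimes>\<^bsub>\<Gamma>\<^esub> \<tau>)) (tt \<sigma> \<tau>)"
  using mnt_nt'[OF mni_mnt[OF tt_mni]] .
lemma tt_nat: "\<sigma> \<in> carrier \<Gamma> \<Longrightarrow> \<tau> \<in> carrier \<Gamma> \<Longrightarrow> f \<in> Arr C' \<Longrightarrow>
   Cmp C' (tt \<sigma> \<tau> (Cod C' f)) (FM G (FM (F \<sigma>) (FM H (FM G (FM (F \<tau>) (FM H f)))))) =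
   Cmp C' (FM G (FM (F (\<sigma> \<otimes>\<^bsub>\<Gamma>\<^esub> \<tau>)) (FM H f))) (tt \<sigma> \<tau> (Dom C' f))"
  using nt_nat[OF ttN] by simp

definition thp where "thp \<sigma> \<tau> X = Cmp C' (inv_arr C' (c (\<sigma> \<otimes>\<^bsub>\<Gamma>\<^esub> \<tau>) X))
   (Cmp C' (tt \<sigma> \<tau> X) (Cmp C' (FM (Dm \<sigma>) (c \<tau> X)) (c \<sigma> (FO (Fp \<tau>) X))))"

lemma thp_mni: "\<sigma> \<in> carrier \<Gamma> \<Longrightarrow> \<tau> \<in> carrier \<Gamma> \<Longrightarrow>
   is_monoidal_nat_iso C' C' (mfcomp C' (Fp \<sigma>) (Fp \<tau>)) (Fp (\<sigma> \<otimes>\<^bsub>\<Gamma>\<^esub> \<tau>)) (thp \<sigma> \<tau>)"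
proof -
  assume s: "\<sigma> \<in> carrier \<Gamma>" and t: "\<tau> \<in> carrier \<Gamma>"
  note p1 = mni_whiskerR[OF Fp_mf[OF t] c_mni[OF s]]
  note p2 = mni_whiskerL[OF Dm_mf[OF s] c_mni[OF t]]
  note p3 = tt_mni[OF s t]
  note p4 = mni_inv[OF c_mni[OF mult_closed[OF s t]]]
  show ?thesis using mni_ext[OF mni_vcomp[OF mni_vcomp[OF mni_vcomp[OF p1 p2] p3] p4]]
    unfolding thp_def by (simp del: Dm_FM)
qed


lemma tt_A[simp]: "\<sigma> \<in> carrier \<Gamma> \<Longrightarrow> \<tau> \<in> carrier \<Gamma> \<Longrightarrow> X \<in> Ob C' \<Longrightarrow> tt \<sigma> \<tau> X \<in> Arr C'"
  by (rule nt_Arr[OF ttN])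
lemma tt_D[simp]: "\<sigma> \<in> carrier \<Gamma> \<Longrightarrow> \<tau> \<in> carrier \<Gamma> \<Longrightarrow> X \<in> Ob C' \<Longrightarrow>
   Dom C' (tt \<sigma> \<tau> X) = FO G (FO (F \<sigma>) (FO H (FO G (FO (F \<tau>) (FO H X)))))"
  using nt_Dom[OF ttN] by simp
lemma tt_C[simp]: "\<sigma> \<in> carrier \<Gamma> \<Longrightarrow> \<tau> \<in> carrier \<Gamma> \<Longrightarrow> X \<in> Ob C' \<Longrightarrow>
   Cod C' (tt \<sigma> \<tau> X) = FO G (FO (F (\<sigma> \<otimes>\<^bsub>\<Gamma>\<^esub> \<tau>)) (FO H X))"
  using nt_Cod[OF ttN] by simp
lemma tt_iso[simp]: "\<sigma> \<in> carrier \<Gamma> \<Longrightarrow> \<tau> \<in> carrier \<Gamma> \<Longrightarrow> X \<in> Ob C' \<Longrightarrow> is_iso C' (tt \<sigma> \<tau> X)"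
  by (rule mni_iso[OF tt_mni])

lemma thp_unit1: "\<tau> \<in> carrier \<Gamma> \<Longrightarrow> X \<in> Ob C' \<Longrightarrow> thp \<one>\<^bsub>\<Gamma>\<^esub> \<tau> X = Idt C' (FO (Fp \<tau>) X)"
proof -
  assume t: "\<tau> \<in> carrier \<Gamma>" and X: "X \<in> Ob C'"
  have tt1: "tt \<one>\<^bsub>\<Gamma>\<^esub> \<tau> X = e (FO G (FO (F \<tau>) (FO H X)))"
    unfolding tt_def using t X by (simp add: T1)
  have n: "Cmp C' (e (FO G (FO (F \<tau>) (FO H X)))) (FM G (FM H (c \<tau> X))) = Cmp C' (c \<tau> X) (e (FO (Fp \<tau>) X))"
    using e_nat[of "c \<tau> X"] t X by simp
  show ?thesis unfolding thp_def using t X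
    by (simp add: tt1 c_one cat_assoc rew2[OF cC' n] n)
qed

lemma thp_unit2: "\<tau> \<in> carrier \<Gamma> \<Longrightarrow> X \<in> Ob C' \<Longrightarrow> thp \<tau> \<one>\<^bsub>\<Gamma>\<^esub> X = Idt C' (FO (Fp \<tau>) X)"
proof -
  assume t: "\<tau> \<in> carrier \<Gamma>" and X: "X \<in> Ob C'"
  have tt1: "tt \<tau> \<one>\<^bsub>\<Gamma>\<^esub> X = FM G (FM (F \<tau>) (\<beta> (FO H X)))"
    unfolding tt_def using t X by simp
  have h: "FM H (c \<one>\<^bsub>\<Gamma>\<^esub> X) = inv_arr C (\<beta> (FO H X))"
    using X by (simp add: c_one fun_inv[OF Hf, symmetric] T2)
  have i: "Cmp C' (FM G (FM (F \<tau>) (\<beta> (FO H X)))) (FM G (FM (F \<tau>) (inv_arr C (\<beta> (FO H X))))) = Idt C' (FO G (FO (F \<tau>) (FO H X)))"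
    using t X by (simp add: fun_Cmp[OF Gf, symmetric] FM_Cmp[symmetric])
  show ?thesis unfolding thp_def using t X
    by (simp add: tt1 h cat_assoc rew1[OF cC' i] i)
qed


lemma tt_cocycle:
  assumes s: "\<sigma> \<in> carrier \<Gamma>" and t: "\<tau> \<in> carrier \<Gamma>" and g: "\<gamma> \<in> carrier \<Gamma>" and X: "X \<in> Ob C'"
  shows "Cmp C' (tt (\<sigma> \<otimes>\<^bsub>\<Gamma>\<^esub> \<tau>) \<gamma> X) (tt \<sigma> \<tau> (FO G (FO (F \<gamma>) (FO H X)))) =
         Cmp C' (tt \<sigma> (\<tau> \<otimes>\<^bsub>\<Gamma>\<^esub> \<gamma>) X) (FM G (FM (F \<sigma>) (FM H (tt \<tau> \<gamma> X))))"
proof -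
  define Y where "Y = FO H X"
  define Z where "Z = FO (F \<gamma>) Y"
  have Y: "Y \<in> Ob C" and Z: "Z \<in> Ob C" using X g unfolding Y_def Z_def by simp_all
  have n1: "Cmp C' (FM G (FM (F (\<sigma> \<otimes>\<^bsub>\<Gamma>\<^esub> \<tau>)) (\<beta> Z))) (FM G (\<theta> \<sigma> \<tau> (FO H (FO G Z)))) =
            Cmp C' (FM G (\<theta> \<sigma> \<tau> Z)) (FM G (FM (F \<sigma>) (FM (F \<tau>) (\<beta> Z))))"
    using arg_cong[OF th_nat[OF s t, of "\<beta> Z"], of "FM G"] s t Z by (simp add: fun_Cmp[OF Gf])
  have n2: "Cmp C' (FM G (\<theta> (\<sigma> \<otimes>\<^bsub>\<Gamma>\<^esub> \<tau>) \<gamma> Y)) (FM G (\<theta> \<sigma> \<tau> Z)) =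
            Cmp C' (FM G (\<theta> \<sigma> (\<tau> \<otimes>\<^bsub>\<Gamma>\<^esub> \<gamma>) Y)) (FM G (FM (F \<sigma>) (\<theta> \<tau> \<gamma> Y)))"
    using arg_cong[OF cocycle[OF s t g Y], of "FM G"] s t g Y unfolding Z_def by (simp add: fun_Cmp[OF Gf])
  have n3: "Cmp C' (FM G (FM (F \<sigma>) (\<beta> (FO (F (\<tau> \<otimes>\<^bsub>\<Gamma>\<^esub> \<gamma>)) Y)))) (FM G (FM (F \<sigma>) (FM H (FM G (\<theta> \<tau> \<gamma> Y))))) =
            Cmp C' (FM G (FM (F \<sigma>) (\<theta> \<tau> \<gamma> Y))) (FM G (FM (F \<sigma>) (\<beta> (FO (F \<tau>) Z))))"
    using arg_cong[OF b_nat[of "\<theta> \<tau> \<gamma> Y"], of "\<lambda>x. FM G (FM (F \<sigma>) x)"] s t g Y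
    unfolding Z_def by (simp add: fun_Cmp[OF Gf] FM_Cmp)
  have n4: "Cmp C' (FM G (FM (F \<sigma>) (\<beta> (FO (F \<tau>) Z)))) (FM G (FM (F \<sigma>) (FM H (FM G (FM (F \<tau>) (\<beta> Z)))))) =
            Cmp C' (FM G (FM (F \<sigma>) (FM (F \<tau>) (\<beta> Z)))) (FM G (FM (F \<sigma>) (\<beta> (FO (F \<tau>) (FO H (FO G Z))))))"
    using arg_cong[OF b_nat[of "FM (F \<tau>) (\<beta> Z)"], of "\<lambda>x. FM G (FM (F \<sigma>) x)"] s t g Z
    by (simp add: fun_Cmp[OF Gf] FM_Cmp)
  show ?thesis unfolding tt_def Y_def[symmetric] Z_def[symmetric] using s t g X Y Z
    by (simp add: fun_Cmp[OF Gf] fun_Cmp[OF Hf] FM_Cmp cat_assoc rew2[OF cC' n1] n1 rew2[OF cC' n2] n2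
        rew2[OF cC' n3] n3 rew2[OF cC' n4] n4 Y_def[symmetric] Z_def[symmetric])
qed


lemma c_nat2: "\<sigma> \<in> carrier \<Gamma> \<Longrightarrow> f \<in> Arr C' \<Longrightarrow> Cod C' f = Y \<Longrightarrow> x \<in> Arr C' \<Longrightarrow> Cod C' x = FO (Fp \<sigma>) (Dom C' f) \<Longrightarrow>
   Cmp C' (c \<sigma> Y) (Cmp C' (FM (Fp \<sigma>) f) x) = Cmp C' (FM G (FM (F \<sigma>) (FM H f))) (Cmp C' (c \<sigma> (Dom C' f)) x)"
proof -
  assume a: "\<sigma> \<in> carrier \<Gamma>" "f \<in> Arr C'" "Cod C' f = Y" "x \<in> Arr C'" "Cod C' x = FO (Fp \<sigma>) (Dom C' f)"
  have Y: "Y \<in> Ob C'" using cat_Cod_Ob[OF cC' a(2)] a(3) by simp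
  have n: "Cmp C' (c \<sigma> Y) (FM (Fp \<sigma>) f) = Cmp C' (FM G (FM (F \<sigma>) (FM H f))) (c \<sigma> (Dom C' f))"
    using c_nat[OF a(1,2)] a(3) by simp
  show ?thesis using rew2[OF cC' n] a Y by simp
qed
lemma c_nat1: "\<sigma> \<in> carrier \<Gamma> \<Longrightarrow> f \<in> Arr C' \<Longrightarrow> Cod C' f = Y \<Longrightarrow>
   Cmp C' (c \<sigma> Y) (FM (Fp \<sigma>) f) = Cmp C' (FM G (FM (F \<sigma>) (FM H f))) (c \<sigma> (Dom C' f))"
  using c_nat[of \<sigma> f] by simp

lemma thp_cocycle:
  assumes s: "\<sigma> \<in> carrier \<Gamma>" and t: "\<tau> \<in> carrier \<Gamma>" and g: "\<gamma> \<in> carrier \<Gamma>" and X: "X \<in> Ob C'"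
  shows "Cmp C' (thp (\<sigma> \<otimes>\<^bsub>\<Gamma>\<^esub> \<tau>) \<gamma> X) (thp \<sigma> \<tau> (FO (Fp \<gamma>) X)) =
         Cmp C' (thp \<sigma> (\<tau> \<otimes>\<^bsub>\<Gamma>\<^esub> \<gamma>) X) (FM (Fp \<sigma>) (thp \<tau> \<gamma> X))"
proof -
  have n5: "Cmp C' (FM G (FM (F (\<sigma> \<otimes>\<^bsub>\<Gamma>\<^esub> \<tau>)) (FM H (c \<gamma> X)))) (tt \<sigma> \<tau> (FO (Fp \<gamma>) X)) =
            Cmp C' (tt \<sigma> \<tau> (FO G (FO (F \<gamma>) (FO H X)))) (FM G (FM (F \<sigma>) (FM H (FM G (FM (F \<tau>) (FM H (c \<gamma> X)))))))"
    using tt_nat[OF s t, of "c \<gamma> X"] g X by simp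
  have n6: "Cmp C' (tt (\<sigma> \<otimes>\<^bsub>\<Gamma>\<^esub> \<tau>) \<gamma> X) (tt \<sigma> \<tau> (FO G (FO (F \<gamma>) (FO H X)))) =
         Cmp C' (tt \<sigma> (\<tau> \<otimes>\<^bsub>\<Gamma>\<^esub> \<gamma>) X) (FM G (FM (F \<sigma>) (FM H (tt \<tau> \<gamma> X))))"
    by (rule tt_cocycle[OF s t g X])
  show ?thesis unfolding thp_def using s t g X
    by (simp add: fun_Cmp[OF Gf] fun_Cmp[OF Hf] FM_Cmp Fp_Cmp cat_assoc
        rew2[OF cC' n5] n5 rew2[OF cC' n6] n6 c_nat2 c_nat1
        fun_inv[OF Gf, symmetric] fun_inv[OF Hf, symmetric] FM_inv[symmetric] m_assoc)
qed


lemma fsC': "factor_set \<Gamma> C' thp Fp"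
  unfolding factor_set_def
proof (intro conjI ballI)
  show "group \<Gamma>" by (rule grp)
  show "monoidal_category C'" by (rule mcC')
  show "is_monoidal_equivalence C' C' (Fp \<sigma>)" if "\<sigma> \<in> carrier \<Gamma>" for \<sigma> using Fp_meq[OF that] .
  show "is_monoidal_nat_iso C' C' (mfcomp C' (Fp \<sigma>) (Fp \<tau>)) (Fp (\<sigma> \<otimes>\<^bsub>\<Gamma>\<^esub> \<tau>)) (thp \<sigma> \<tau>)"
    if "\<sigma> \<in> carrier \<Gamma>" "\<tau> \<in> carrier \<Gamma>" for \<sigma> \<tau> using thp_mni[OF that] .
  show "mf_eq C' (Fp \<one>\<^bsub>\<Gamma>\<^esub>) (mfid C')" by (simp add: mf_eq_refl)
  show "thp \<one>\<^bsub>\<Gamma>\<^esub> \<sigma> A = Idt C' (FO (Fp \<sigma>) A)" if "\<sigma> \<in> carrier \<Gamma>" "A \<in> Ob C'" for \<sigma> A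
    using thp_unit1[OF that] .
  show "thp \<sigma> \<one>\<^bsub>\<Gamma>\<^esub> A = Idt C' (FO (Fp \<sigma>) A)" if "\<sigma> \<in> carrier \<Gamma>" "A \<in> Ob C'" for \<sigma> A
    using thp_unit2[OF that] .
  show "Cmp C' (thp (\<sigma> \<otimes>\<^bsub>\<Gamma>\<^esub> \<tau>) \<gamma> A) (thp \<sigma> \<tau> (FO (Fp \<gamma>) A)) =
        Cmp C' (thp \<sigma> (\<tau> \<otimes>\<^bsub>\<Gamma>\<^esub> \<gamma>) A) (FM (Fp \<sigma>) (thp \<tau> \<gamma> A))"
    if "\<sigma> \<in> carrier \<Gamma>" "\<tau> \<in> carrier \<Gamma>" "\<gamma> \<in> carrier \<Gamma>" "A \<in> Ob C'" for \<sigma> \<tau> \<gamma> A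
    using thp_cocycle[OF that] .
qed

definition phi where "phi \<sigma> A = Cmp C' (FM G (FM (F \<sigma>) (\<beta> A))) (c \<sigma> (FO G A))"

lemma phi_A[simp]: "\<sigma> \<in> carrier \<Gamma> \<Longrightarrow> A \<in> Ob C \<Longrightarrow> phi \<sigma> A \<in> Arr C'" unfolding phi_def by simp
lemma phi_D[simp]: "\<sigma> \<in> carrier \<Gamma> \<Longrightarrow> A \<in> Ob C \<Longrightarrow> Dom C' (phi \<sigma> A) = FO (Fp \<sigma>) (FO G A)" unfolding phi_def by simp
lemma phi_C[simp]: "\<sigma> \<in> carrier \<Gamma> \<Longrightarrow> A \<in> Ob C \<Longrightarrow> Cod C' (phi \<sigma> A) = FO G (FO (F \<sigma>) A)" unfolding phi_def by simp
lemma phi_iso[simp]: "\<sigma> \<in> carrier \<Gamma> \<Longrightarrow> A \<in> Ob C \<Longrightarrow> is_iso C' (phi \<sigma> A)" unfolding phi_def by simp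

lemma phi_nat': "\<sigma> \<in> carrier \<Gamma> \<Longrightarrow> f \<in> Arr C \<Longrightarrow>
       Cmp C' (phi \<sigma> (Cod C f)) (FM (Fp \<sigma>) (FM G f)) = Cmp C' (FM G (FM (F \<sigma>) f)) (phi \<sigma> (Dom C f))"
proof -
  assume s: "\<sigma> \<in> carrier \<Gamma>" and f: "f \<in> Arr C"
  have n: "Cmp C' (FM G (FM (F \<sigma>) (\<beta> (Cod C f)))) (FM G (FM (F \<sigma>) (FM H (FM G f)))) =
           Cmp C' (FM G (FM (F \<sigma>) f)) (FM G (FM (F \<sigma>) (\<beta> (Dom C f))))"
    using arg_cong[OF b_nat[OF f], of "\<lambda>x. FM G (FM (F \<sigma>) x)"] s f by (simp add: fun_Cmp[OF Gf] FM_Cmp)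
  show ?thesis unfolding phi_def using s f
    by (simp add: cat_assoc c_nat1 rew2[OF cC' n] n)
qed

lemma phi_compat': "\<tau> \<in> carrier \<Gamma> \<Longrightarrow> \<sigma> \<in> carrier \<Gamma> \<Longrightarrow> A \<in> Ob C \<Longrightarrow>
       Cmp C' (phi (\<tau> \<otimes>\<^bsub>\<Gamma>\<^esub> \<sigma>) A) (thp \<tau> \<sigma> (FO G A)) =
       Cmp C' (FM G (\<theta> \<tau> \<sigma> A)) (Cmp C' (phi \<tau> (FO (F \<sigma>) A)) (FM (Fp \<tau>) (phi \<sigma> A)))"
proof -
  assume t: "\<tau> \<in> carrier \<Gamma>" and s: "\<sigma> \<in> carrier \<Gamma>" and A: "A \<in> Ob C"
  have n7: "Cmp C' (FM G (FM (F \<tau>) (\<beta> (FO (F \<sigma>) A)))) (FM G (FM (F \<tau>) (FM H (FM G (FM (F \<sigma>) (\<beta> A)))))) =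
            Cmp C' (FM G (FM (F \<tau>) (FM (F \<sigma>) (\<beta> A)))) (FM G (FM (F \<tau>) (\<beta> (FO (F \<sigma>) (FO H (FO G A))))))"
    using arg_cong[OF b_nat[of "FM (F \<sigma>) (\<beta> A)"], of "\<lambda>x. FM G (FM (F \<tau>) x)"] s t A
    by (simp add: fun_Cmp[OF Gf] FM_Cmp)
  have n8: "Cmp C' (FM G (\<theta> \<tau> \<sigma> A)) (FM G (FM (F \<tau>) (FM (F \<sigma>) (\<beta> A)))) =
            Cmp C' (FM G (FM (F (\<tau> \<otimes>\<^bsub>\<Gamma>\<^esub> \<sigma>)) (\<beta> A))) (FM G (\<theta> \<tau> \<sigma> (FO H (FO G A))))"
    using arg_cong[OF th_nat[OF t s, of "\<beta> A"], of "FM G"] s t A by (simp add: fun_Cmp[OF Gf])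
  show ?thesis unfolding phi_def thp_def tt_def using s t A
    by (simp add: fun_Cmp[OF Gf] fun_Cmp[OF Hf] FM_Cmp Fp_Cmp cat_assoc c_nat2 c_nat1
        rew2[OF cC' n7] n7 rew2[OF cC' n8] n8)
qed

lemma phi_one': "A \<in> Ob C \<Longrightarrow> phi \<one>\<^bsub>\<Gamma>\<^esub> A = Idt C' (FO G A)"
  unfolding phi_def by (simp add: c_one T1)

lemma final:
  "\<exists>(\<theta>' :: 'g \<Rightarrow> 'g \<Rightarrow> 'o2 \<Rightarrow> 'm2) (F' :: 'g \<Rightarrow> ('o2,'m2,'o2,'m2) monfnctr)
           (\<Phi> :: ('o, 'o \<times> 'o \<times> 'm \<times> 'g, 'o2, 'o2 \<times> 'o2 \<times> 'm2 \<times> 'g) fnctr).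
           factor_set \<Gamma> C' \<theta>' F' \<and>
           graded_equivalence (crossed_product \<Gamma> C \<theta> F) xp_grade
                              (crossed_product \<Gamma> C' \<theta>' F') xp_grade \<Phi>"
proof -
  interpret M: fs_map \<Gamma> C \<theta> F C' thp Fp G phi
  proof (unfold_locales)
    show "factor_set \<Gamma> C' thp Fp" by (rule fsC')
    show "is_functor C C' G" by (rule Gf)
  qed (simp_all add: phi_nat' phi_compat' phi_one')
  have "graded_equivalence (crossed_product \<Gamma> C \<theta> F) xp_grade (crossed_product \<Gamma> C' thp Fp) xp_grade M.xpmap"
    using M.xpmap_graded_equivalence[OF equiv_ff_es[OF eqG]] by simp
  then show ?thesis using fsC' by blast
qed

end

theorem proposition2p1:
  fixes \<Gamma> :: "'g monoid"
    and C :: "('o,'m) moncat" and C' :: "('o2,'m2) moncat"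
    and G :: "('o,'m,'o2,'m2) monfnctr" and H :: "('o2,'m2,'o,'m) monfnctr"
    and \<alpha> :: "'o2 \<Rightarrow> 'm2" and \<beta> :: "'o \<Rightarrow> 'm"
    and \<theta> :: "'g \<Rightarrow> 'g \<Rightarrow> 'o \<Rightarrow> 'm" and F :: "'g \<Rightarrow> ('o,'m,'o,'m) monfnctr"
  assumes "group \<Gamma>"
    and "monoidal_category C" and "monoidal_category C'"
    and "is_monoidal_equivalence C C' G" and "is_monoidal_equivalence C' C H"
    and "is_monoidal_nat_iso C' C' (mfcomp C' G H) (mfid C') \<alpha>"
    and "is_monoidal_nat_iso C C (mfcomp C H G) (mfid C) \<beta>"
    and "factor_set \<Gamma> C \<theta> F"
  shows "\<exists>(\<theta>' :: 'g \<Rightarrow> 'g \<Rightarrow> 'o2 \<Rightarrow> 'm2) (F' :: 'g \<Rightarrow> ('o2,'m2,'o2,'m2) monfnctr)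
           (\<Phi> :: ('o, 'o \<times> 'o \<times> 'm \<times> 'g, 'o2, 'o2 \<times> 'o2 \<times> 'm2 \<times> 'g) fnctr).
           factor_set \<Gamma> C' \<theta>' F' \<and>
           graded_equivalence (crossed_product \<Gamma> C \<theta> F) xp_grade
                              (crossed_product \<Gamma> C' \<theta>' F') xp_grade \<Phi>"
proof -
  interpret main \<Gamma> C \<theta> F C' G H \<alpha> \<beta>
  proof (unfold_locales)
    show "factor_set \<Gamma> C \<theta> F" by fact
    show "is_monoidal_functor C C' G" using assms(4) by (rule meq_mf)
    show "is_equivalence C C' G" using assms(4) unfolding is_monoidal_equivalence_def by blast
    show "is_monoidal_functor C' C H" using assms(5) by (rule meq_mf)
    show "is_equivalence C' C H" using assms(5) unfolding is_monoidal_equivalence_def by blast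
  qed fact+
  show ?thesis by (rule final)
qed


end
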